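(* Let $\mathcal{X},\mathcal{U}$, $K$, $f$, $g$, $h$, $L_f$, $\mu_f$, $\mu_g$, $\mu_{h^*}$ and the algorithm RandProx with stochastic operators $\mathcal{R}^t$ and constants $\omega\ge 0$, $\omega_{\mathrm{ran}}\ge 0$, $\zeta\in[0,1]$ be as described in the context. Suppose that $\mu_f>0$ or $\mu_g>0$, and that $\mu_{h^*}>0$. Suppose that $0<\gamma<\frac{2}{L_f}$, $\tau>0$, and $\gamma\tau\big((1-\zeta)\|K\|^2+\omega_{\mathrm{ran}}\big)\le 1$. For every $t\ge 0$ define $$\Psi^t:=\frac{1}{\gamma}\|x^t-x^\star\|^2+(1+\omega)\Big(\frac{1}{\tau}+2\mu_{h^*}\Big)\|u^t-u^\star\|^2,$$ where $x^\star$ and $u^\star$ are the unique solutions of the primal and dual problems, respectively. Then for every $t\ge 0$, $\mathbb{E}[\Psi^t]\le c^t\Psi^0$, where $$c:=\max\left(\frac{(1-\gamma\mu_f)^2}{1+\gamma\mu_g},\ \frac{(\gamma L_f-1)^2}{1+\gamma\mu_g},\ 1-\frac{2\tau\mu_{h^*}}{(1+\omega)(1+2\tau\mu_{h^*})}\right)<1.$$ Moreover, $(x^t)_{t\in\mathbb{N}}$ and $(\hat{x}^t)_{t\in\mathbb{N}}$ both converge to $x^\star$ and $(u^t)_{t\in\mathbb{N}}$ converges to $u^\star$, almost surely.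
   Context: $\mathcal{X},\mathcal{U}$ are finite-dimensional real Hilbert spaces, $K:\mathcal{X}\to\mathcal{U}$ is a nonzero linear operator with adjoint $K^*$ and operator norm $\|K\|$. $f:\mathcal{X}\to\mathbb{R}$ is convex and $L_f$-smooth ($\nabla f$ is $L_f$-Lipschitz, $L_f>0$); $g:\mathcal{X}\to\mathbb{R}\cup\{+\infty\}$ and $h:\mathcal{U}\to\mathbb{R}\cup\{+\infty\}$ are proper closed convex; $h^*$ is the convex conjugate of $h$. A convex function $\phi$ is $\mu_\phi$-strongly convex ($\mu_\phi\ge 0$) if $\phi-\frac{\mu_\phi}{2}\|\cdot\|^2$ is convex; $\mu_f,\mu_g,\mu_{h^*}\ge 0$ denote such constants for $f,g,h^*$. $\mathrm{prox}_{\gamma\phi}(x):=\arg\min_{x'}\big(\gamma\phi(x')+\frac12\|x'-x\|^2\big)$. Primal problem: minimize $f(x)+g(x)+h(Kx)$ over $x\in\mathcal{X}$; dual problem: minimize $(f+g)^*(-K^*u)+h^*(u)$ over $u\in\mathcal{U}$. It is assumed that there exists $(x^\star,u^\star)$ with $0\in\nabla f(x^\star)+\partial g(x^\star)+K^*u^\star$ and $0\in -Kx^\star+\partial h^*(u^\star)$ (then $x^\star$ solves the primal and $u^\star$ the dual problem). Algorithm RandProx: inputs $x^0\in\mathcal{X}$, $u^0\in\mathcal{U}$, $\gamma>0$, $\tau>0$, $\omega\ge0$; $v^0:=K^*u^0$; for $t=0,1,\dots$: $\hat{x}^t:=\mathrm{prox}_{\gamma g}(x^t-\gamma\nabla f(x^t)-\gamma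 v^t)$; $u^{t+1}:=u^t+\frac{1}{1+\omega}\mathcal{R}^t\big(\mathrm{prox}_{\tau h^*}(u^t+\tau K\hat{x}^t)-u^t\big)$; $v^{t+1}:=K^*u^{t+1}$; $x^{t+1}:=\hat{x}^t-\gamma(1+\omega)(v^{t+1}-v^t)$. Here $\mathcal{F}_t$ is the $\sigma$-algebra generated by $(x^0,u^0),\dots,(x^t,u^t)$, $r^t:=\mathrm{prox}_{\tau h^*}(u^t+\tau K\hat{x}^t)-u^t$, and $\mathcal{R}^t(r^t)$ is a $\mathcal{U}$-valued random variable (a stochastic estimate of $r^t$) satisfying, for every $t\ge0$: $\mathbb{E}[\mathcal{R}^t(r^t)\mid\mathcal{F}_t]=r^t$, $\mathbb{E}[\|\mathcal{R}^t(r^t)-r^t\|^2\mid\mathcal{F}_t]\le\omega\|r^t\|^2$, and $\mathbb{E}[\|K^*(\mathcal{R}^t(r^t)-r^t)\|^2\mid\mathcal{F}_t]\le\omega_{\mathrm{ran}}\|r^t\|^2-\zeta\|K^*r^t\|^2$, for given constants $\omega_{\mathrm{ran}}\ge0$, $\zeta\in[0,1]$. *)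

theory Defs
  imports "HOL-Analysis.Analysis" "HOL-Probability.Probability"
begin

definition proper_fun :: "('a \<Rightarrow> ereal) \<Rightarrow> bool" where
  "proper_fun \<phi> \<longleftrightarrow> (\<forall>x. \<phi> x \<noteq> -\<infinity>) \<and> (\<exists>x. \<phi> x \<noteq> \<infinity>)"

text \<open>closed = lower semicontinuous = closed epigraph\<close>
definition closed_fun :: "('a::topological_space \<Rightarrow> ereal) \<Rightarrow> bool" where
  "closed_fun \<phi> \<longleftrightarrow> closed {(x, t::real). \<phi> x \<le> ereal t}"

definition convex_fun :: "('a::real_vector \<Rightarrow> ereal) \<Rightarrow> bool" where
  "convex_fun \<phi> \<longleftrightarrow> (\<forall>x y a. 0 < a \<and> a < 1 \<longrightarrow>
      \<phi> ((1 - a) *\<^sub>R x + a *\<^sub>R y) \<le> ereal (1 - a) * \<phi> x + ereal a * \<phi> y)"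

definition strongly_convex_fun :: "real \<Rightarrow> ('a::real_normed_vector \<Rightarrow> ereal) \<Rightarrow> bool" where
  "strongly_convex_fun \<mu> \<phi> \<longleftrightarrow> convex_fun (\<lambda>x. \<phi> x - ereal (\<mu> / 2 * (norm x)\<^sup>2))"

definition conjugate :: "('a::real_inner \<Rightarrow> ereal) \<Rightarrow> 'a \<Rightarrow> ereal" where
  "conjugate \<phi> y = (SUP x. ereal (x \<bullet> y) - \<phi> x)"

definition subdiff :: "('a::real_inner \<Rightarrow> ereal) \<Rightarrow> 'a \<Rightarrow> 'a set" where
  "subdiff \<phi> x = {s. \<phi> x < \<infinity> \<and> (\<forall>y. \<phi> x + ereal (s \<bullet> (y - x)) \<le> \<phi> y)}"

definition prox :: "real \<Rightarrow> ('a::real_inner \<Rightarrow> ereal) \<Rightarrow> 'a \<Rightarrow> 'a" where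
  "prox \<gamma> \<phi> x = (THE p. \<forall>y. ereal \<gamma> * \<phi> p + ereal ((norm (p - x))\<^sup>2 / 2)
                               \<le> ereal \<gamma> * \<phi> y + ereal ((norm (y - x))\<^sup>2 / 2))"

definition cond_exp_vec_eq :: "'s measure \<Rightarrow> 's measure \<Rightarrow> ('s \<Rightarrow> 'a::euclidean_space) \<Rightarrow> ('s \<Rightarrow> 'a) \<Rightarrow> bool" where
  "cond_exp_vec_eq M F X Y \<longleftrightarrow> integrable M X \<and>
     (\<forall>b\<in>Basis. AE s in M. real_cond_exp M F (\<lambda>s. X s \<bullet> b) s = Y s \<bullet> b)"

definition gen_filtration :: "'s measure \<Rightarrow> (nat \<Rightarrow> 's \<Rightarrow> 'b::topological_space) \<Rightarrow> nat \<Rightarrow> 's measure" where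
  "gen_filtration M Z t = sigma (space M)
     (\<Union>i\<in>{..t}. {Z i -` B \<inter> space M | B. B \<in> sets borel})"

end

theory Submission
  imports Defs
begin

lemma grad_ineq:
  fixes f :: "'a::real_inner \<Rightarrow> real"
  assumes cvx: "convex_on UNIV f" and d: "\<And>y. (f has_derivative (\<lambda>d. G y \<bullet> d)) (at y)"
  shows "f y + G y \<bullet> (z - y) \<le> f z"
proof -
  define v where "v = z - y"
  define \<theta> where "\<theta> = (\<lambda>a::real. f (y + a *\<^sub>R v))"
  have l: "((\<lambda>a. y + a *\<^sub>R v) has_derivative (\<lambda>a. a *\<^sub>R v)) (at 0)"
    by (auto intro!: derivative_eq_intros)
  have "(\<theta> has_derivative (\<lambda>a. G y \<bullet> (a *\<^sub>R v))) (at 0)"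
    using has_derivative_compose[OF l d[of "y + 0 *\<^sub>R v"]] unfolding \<theta>_def by simp
  moreover have "(\<lambda>a. G y \<bullet> (a *\<^sub>R v)) = (*) (G y \<bullet> v)" by (rule ext) simp
  ultimately have "(\<theta> has_field_derivative (G y \<bullet> v)) (at 0)"
    unfolding has_field_derivative_def by simp
  then have "((\<lambda>a. (\<theta> a - \<theta> 0) / (a - 0)) \<longlongrightarrow> G y \<bullet> v) (at 0)"
    by (simp add: has_field_derivative_iff)
  then have lim: "((\<lambda>a. (\<theta> a - \<theta> 0) / (a - 0)) \<longlongrightarrow> G y \<bullet> v) (at_right 0)"
    by (rule tendsto_mono[OF at_le[OF subset_UNIV]])
  have ev: "eventually (\<lambda>a. (\<theta> a - \<theta> 0) / (a - 0) \<le> f z - f y) (at_right (0::real))"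
    using eventually_at_right_real[OF zero_less_one]
  proof eventually_elim
    case (elim a)
    then have a: "0 < a" "a < 1" by auto
    have "y + a *\<^sub>R v = (1 - a) *\<^sub>R y + a *\<^sub>R z" by (simp add: v_def algebra_simps)
    then have "\<theta> a \<le> (1 - a) * f y + a * f z"
      using convex_onD[OF cvx, of a y z] a unfolding \<theta>_def by simp
    then have "\<theta> a - \<theta> 0 \<le> a * (f z - f y)" unfolding \<theta>_def by (simp add: algebra_simps)
    then show ?case using a by (simp add: divide_simps mult.commute)
  qed
  have "G y \<bullet> v \<le> f z - f y"
    by (rule tendsto_le[OF trivial_limit_at_right_real tendsto_const lim ev])
  then show ?thesis unfolding v_def by simp
qed
lemma descent_lemma:
  fixes f :: "'a::real_inner \<Rightarrow> real"
  assumes d: "\<And>y. (f has_derivative (\<lambda>d. G y \<bullet> d)) (at y)"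
    and lip: "\<And>y z. norm (G y - G z) \<le> L * norm (y - z)"
  shows "f z \<le> f y + G y \<bullet> (z - y) + L / 2 * (norm (z - y))\<^sup>2"
proof -
  define v where "v = z - y"
  define \<theta> where "\<theta> = (\<lambda>s::real. f (y + s *\<^sub>R v) - s * (G y \<bullet> v) - L / 2 * s\<^sup>2 * (norm v)\<^sup>2)"
  have der: "(\<theta> has_real_derivative ((G (y + s *\<^sub>R v) - G y) \<bullet> v - L * s * (norm v)\<^sup>2)) (at s)" for s
  proof -
    have l: "((\<lambda>a. y + a *\<^sub>R v) has_derivative (\<lambda>a. a *\<^sub>R v)) (at s)"
      by (auto intro!: derivative_eq_intros)
    have c: "((\<lambda>a. f (y + a *\<^sub>R v)) has_derivative (\<lambda>a. G (y + s *\<^sub>R v) \<bullet> (a *\<^sub>R v))) (at s)"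
      using has_derivative_compose[OF l d] by simp
    moreover have "(\<lambda>a. G (y + s *\<^sub>R v) \<bullet> (a *\<^sub>R v)) = (*) (G (y + s *\<^sub>R v) \<bullet> v)" by (rule ext) simp
    ultimately have "((\<lambda>a. f (y + a *\<^sub>R v)) has_real_derivative (G (y + s *\<^sub>R v) \<bullet> v)) (at s)"
      unfolding has_field_derivative_def by simp
    then show ?thesis unfolding \<theta>_def
      by (auto intro!: derivative_eq_intros simp: inner_diff_left power2_eq_square)
  qed
  have nonpos: "(G (y + s *\<^sub>R v) - G y) \<bullet> v - L * s * (norm v)\<^sup>2 \<le> 0" if "0 \<le> s" for s
  proof -
    have "(G (y + s *\<^sub>R v) - G y) \<bullet> v \<le> norm (G (y + s *\<^sub>R v) - G y) * norm v"
      by (rule norm_cauchy_schwarz)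
    also have "\<dots> \<le> L * norm (s *\<^sub>R v) * norm v"
      using lip[of "y + s *\<^sub>R v" y] by (simp add: mult_right_mono)
    also have "\<dots> = L * s * (norm v)\<^sup>2" using that by (simp add: power2_eq_square)
    finally show ?thesis by simp
  qed
  have "\<theta> 1 \<le> \<theta> 0"
  proof (rule DERIV_nonpos_imp_nonincreasing[of 0 1 \<theta>])
    fix s :: real assume "0 \<le> s" "s \<le> 1"
    then show "\<exists>y. (\<theta> has_real_derivative y) (at s) \<and> y \<le> 0"
      using der[of s] nonpos[of s] by blast
  qed simp
  then show ?thesis unfolding \<theta>_def v_def by (simp add: algebra_simps)
qed


lemma grad_step_alg:
  fixes E D t ll \<gamma> \<mu> L :: real
  assumes E: "E \<ge> 0" and D: "D \<ge> 0"
    and coco: "\<And>s. s \<ge> 0 \<Longrightarrow> (2 * s - ll * s\<^sup>2) * D \<le> t"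
    and CS: "t\<^sup>2 \<le> E * D" and l: "ll = L - \<mu>" "ll \<ge> 0" and g: "\<gamma> > 0"
  shows "(1 - \<gamma> * \<mu>)\<^sup>2 * E - 2 * \<gamma> * (1 - \<gamma> * \<mu>) * t + \<gamma>\<^sup>2 * D
         \<le> max ((1 - \<gamma> * \<mu>)\<^sup>2) ((\<gamma> * L - 1)\<^sup>2) * E"
proof -
  have t0: "t \<ge> 0" using coco[of 0] by simp
  have Dl: "D \<le> ll * t"
  proof (cases "ll > 0")
    case True
    have "(2 * (1/ll) - ll * (1/ll)\<^sup>2) * D \<le> t" using coco[of "1/ll"] True by simp
    moreover have "2 * (1/ll) - ll * (1/ll)\<^sup>2 = 1 / ll" using True by (simp add: power2_eq_square field_simps)
    ultimately have "D / ll \<le> t" by simp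
    then show ?thesis using True by (simp add: field_simps)
  next
    case False
    then have l0: "ll = 0" using l by simp
    have "D = 0"
    proof (rule ccontr)
      assume "D \<noteq> 0" then have Dp: "D > 0" using D by simp
      have "(2 * ((t + 1) / (2 * D)) - ll * ((t + 1) / (2 * D))\<^sup>2) * D \<le> t"
        using coco[of "(t+1)/(2*D)"] t0 Dp by simp
      then have "t + 1 \<le> t" using Dp l0 by (simp add: field_simps)
      then show False by simp
    qed
    then show ?thesis using l0 by simp
  qed
  have tl: "t \<le> ll * E"
  proof (cases "t = 0")
    case True then show ?thesis using l E by simp
  next
    case False
    then have tp: "t > 0" using t0 by simp
    have "t * t \<le> E * (ll * t)" using CS Dl E by (simp add: power2_eq_square) (meson mult_left_mono order_trans)
    then have "t * t \<le> (ll * E) * t" by (simp add: algebra_simps)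
    then show ?thesis using tp by simp
  qed
  have base: "(1 - \<gamma> * \<mu>)\<^sup>2 * E - 2 * \<gamma> * (1 - \<gamma> * \<mu>) * t + \<gamma>\<^sup>2 * D
      \<le> (1 - \<gamma> * \<mu>)\<^sup>2 * E + \<gamma> * t * (\<gamma> * L + \<gamma> * \<mu> - 2)"
  proof -
    have "\<gamma>\<^sup>2 * D \<le> \<gamma>\<^sup>2 * (ll * t)" using Dl by (simp add: mult_left_mono)
    then show ?thesis using l by (simp add: algebra_simps power2_eq_square)
  qed
  show ?thesis
  proof (cases "\<gamma> * L + \<gamma> * \<mu> - 2 \<le> 0")
    case True
    have "\<gamma> * t * (\<gamma> * L + \<gamma> * \<mu> - 2) \<le> 0"
      using True t0 g by (simp add: mult_nonneg_nonpos)
    then have "(1 - \<gamma> * \<mu>)\<^sup>2 * E - 2 * \<gamma> * (1 - \<gamma> * \<mu>) * t + \<gamma>\<^sup>2 * D \<le> (1 - \<gamma> * \<mu>)\<^sup>2 * E"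
      using base by linarith
    also have "\<dots> \<le> max ((1 - \<gamma> * \<mu>)\<^sup>2) ((\<gamma> * L - 1)\<^sup>2) * E" using E by (simp add: mult_right_mono)
    finally show ?thesis .
  next
    case False
    have "\<gamma> * t * (\<gamma> * L + \<gamma> * \<mu> - 2) \<le> \<gamma> * (ll * E) * (\<gamma> * L + \<gamma> * \<mu> - 2)"
      using False tl g by (simp add: mult_right_mono)
    then have "(1 - \<gamma> * \<mu>)\<^sup>2 * E - 2 * \<gamma> * (1 - \<gamma> * \<mu>) * t + \<gamma>\<^sup>2 * D
        \<le> (1 - \<gamma> * \<mu>)\<^sup>2 * E + \<gamma> * (ll * E) * (\<gamma> * L + \<gamma> * \<mu> - 2)"
      using base by linarith
    also have "\<dots> = (\<gamma> * L - 1)\<^sup>2 * E" unfolding l(1) by (simp add: algebra_simps power2_eq_square)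
    also have "\<dots> \<le> max ((1 - \<gamma> * \<mu>)\<^sup>2) ((\<gamma> * L - 1)\<^sup>2) * E" using E by (simp add: mult_right_mono)
    finally show ?thesis .
  qed
qed

lemma coco_arith:
  fixes p1 p2 a1 a2 P Q M X Y LHS d :: real
  shows "p1 + (a1 - P) \<le> X \<Longrightarrow> X \<le> p2 + - Q + M / 2 \<Longrightarrow> p2 + (- a2 + Q) \<le> Y
    \<Longrightarrow> Y \<le> p1 + P + M / 2 \<Longrightarrow> LHS = 2 * (Q - P) - M \<Longrightarrow> d = a2 - a1 \<Longrightarrow> LHS \<le> d"
  by simp

lemma norm_sq_comb:
  fixes u v :: "'a::real_inner"
  shows "(norm (a *\<^sub>R u - b *\<^sub>R v))\<^sup>2 = a\<^sup>2 * (norm u)\<^sup>2 - 2 * b * a * (v \<bullet> u) + b\<^sup>2 * (norm v)\<^sup>2"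
  unfolding power2_norm_eq_inner by (simp add: inner_diff_left inner_diff_right inner_commute algebra_simps power2_eq_square)

lemma norm_sq_diff_expand:
  fixes y z :: "'a::real_inner"
  shows "(norm (z - y))\<^sup>2 = (norm z)\<^sup>2 - (norm y)\<^sup>2 - 2 * (y \<bullet> (z - y))"
  by (simp add: power2_norm_eq_inner inner_diff_left inner_diff_right inner_commute algebra_simps)

lemma grad_step:
  fixes f :: "'a::real_inner \<Rightarrow> real"
  assumes d: "\<And>y. (f has_derivative (\<lambda>d. G y \<bullet> d)) (at y)"
    and lip: "\<And>y z. norm (G y - G z) \<le> L * norm (y - z)"
    and sc: "convex_on UNIV (\<lambda>y. f y - \<mu> / 2 * (norm y)\<^sup>2)"
    and mu: "0 \<le> \<mu>" "\<mu> \<le> L" and g: "0 < \<gamma>"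
  shows "(norm ((x - \<gamma> *\<^sub>R G x) - (y - \<gamma> *\<^sub>R G y)))\<^sup>2
         \<le> max ((1 - \<gamma> * \<mu>)\<^sup>2) ((\<gamma> * L - 1)\<^sup>2) * (norm (x - y))\<^sup>2"
proof -
  define \<phi> where "\<phi> = (\<lambda>y. f y - \<mu> / 2 * (norm y)\<^sup>2)"
  define H where "H = (\<lambda>y. G y - \<mu> *\<^sub>R y)"
  define ll where "ll = L - \<mu>"
  have dq: "((\<lambda>y. \<mu> / 2 * (norm y)\<^sup>2) has_derivative (\<lambda>d. (\<mu> *\<^sub>R y) \<bullet> d)) (at y)" for y
  proof -
    have "((\<lambda>y. y \<bullet> y) has_derivative (\<lambda>d. y \<bullet> d + d \<bullet> y)) (at y)"
      by (rule has_derivative_inner[OF has_derivative_ident has_derivative_ident])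
    then have "((\<lambda>y. \<mu> / 2 * (y \<bullet> y)) has_derivative (\<lambda>d. \<mu> / 2 * (y \<bullet> d + d \<bullet> y))) (at y)"
      by (rule has_derivative_mult_right)
    moreover have "(\<lambda>d. \<mu> / 2 * (y \<bullet> d + d \<bullet> y)) = (\<lambda>d. (\<mu> *\<^sub>R y) \<bullet> d)"
      by (rule ext) (simp add: inner_commute algebra_simps)
    ultimately show ?thesis by (simp add: power2_norm_eq_inner)
  qed
  have dphi: "(\<phi> has_derivative (\<lambda>d. H y \<bullet> d)) (at y)" for y
  proof -
    have "(\<phi> has_derivative (\<lambda>d. G y \<bullet> d - (\<mu> *\<^sub>R y) \<bullet> d)) (at y)"
      unfolding \<phi>_def by (intro has_derivative_diff d dq)
    moreover have "(\<lambda>d. G y \<bullet> d - (\<mu> *\<^sub>R y) \<bullet> d) = (\<lambda>d. H y \<bullet> d)"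
      by (rule ext) (simp add: H_def inner_diff_left)
    ultimately show ?thesis by simp
  qed
  have low: "\<phi> y + H y \<bullet> (z - y) \<le> \<phi> z" for y z
    using grad_ineq[OF sc[folded \<phi>_def] dphi] .
  have up: "\<phi> z \<le> \<phi> y + H y \<bullet> (z - y) + ll / 2 * (norm (z - y))\<^sup>2" for y z
  proof -
    have 1: "f z \<le> f y + G y \<bullet> (z - y) + L / 2 * (norm (z - y))\<^sup>2"
      by (rule descent_lemma[OF d lip])
    have 2: "H y \<bullet> (z - y) = G y \<bullet> (z - y) - \<mu> * (y \<bullet> (z - y))"
      by (simp only: H_def inner_diff_left inner_scaleR_left)
    have 3: "\<mu> / 2 * (norm (z - y))\<^sup>2 = \<mu> / 2 * (norm z)\<^sup>2 - \<mu> / 2 * (norm y)\<^sup>2 - \<mu> * (y \<bullet> (z - y))"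
      by (subst norm_sq_diff_expand) (simp add: right_diff_distrib)
    have 4: "ll / 2 * (norm (z - y))\<^sup>2 = L / 2 * (norm (z - y))\<^sup>2 - \<mu> / 2 * (norm (z - y))\<^sup>2"
      unfolding ll_def by (simp add: left_diff_distrib diff_divide_distrib)
    show ?thesis unfolding \<phi>_def using 1 2 3 4 by linarith
  qed
  define \<delta> where "\<delta> = H x - H y"
  have coco: "(2 * s - ll * s\<^sup>2) * (norm \<delta>)\<^sup>2 \<le> \<delta> \<bullet> (x - y)" if "s \<ge> 0" for s
  proof -
    have A: "\<phi> y + H y \<bullet> ((x - s *\<^sub>R \<delta>) - y) \<le> \<phi> (x - s *\<^sub>R \<delta>)" by (rule low)
    have B: "\<phi> (x - s *\<^sub>R \<delta>) \<le> \<phi> x + H x \<bullet> ((x - s *\<^sub>R \<delta>) - x) + ll / 2 * (norm ((x - s *\<^sub>R \<delta>) - x))\<^sup>2"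
      by (rule up)
    have C: "\<phi> x + H x \<bullet> ((y + s *\<^sub>R \<delta>) - x) \<le> \<phi> (y + s *\<^sub>R \<delta>)" by (rule low)
    have D: "\<phi> (y + s *\<^sub>R \<delta>) \<le> \<phi> y + H y \<bullet> ((y + s *\<^sub>R \<delta>) - y) + ll / 2 * (norm ((y + s *\<^sub>R \<delta>) - y))\<^sup>2"
      by (rule up)
    have e1: "H y \<bullet> ((x - s *\<^sub>R \<delta>) - y) = H y \<bullet> (x - y) - s * (H y \<bullet> \<delta>)"
      by (simp add: inner_diff_right algebra_simps)
    have e2: "H x \<bullet> ((x - s *\<^sub>R \<delta>) - x) = - (s * (H x \<bullet> \<delta>))" by simp
    have e3: "H x \<bullet> ((y + s *\<^sub>R \<delta>) - x) = - (H x \<bullet> (x - y)) + s * (H x \<bullet> \<delta>)"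
      by (simp add: inner_diff_right inner_add_right algebra_simps)
    have e4: "H y \<bullet> ((y + s *\<^sub>R \<delta>) - y) = s * (H y \<bullet> \<delta>)" by simp
    have n1: "ll / 2 * (norm ((x - s *\<^sub>R \<delta>) - x))\<^sup>2 = (ll * (s\<^sup>2 * (norm \<delta>)\<^sup>2)) / 2" using that
      by (simp add: power_mult_distrib)
    have n2: "ll / 2 * (norm ((y + s *\<^sub>R \<delta>) - y))\<^sup>2 = (ll * (s\<^sup>2 * (norm \<delta>)\<^sup>2)) / 2" using that
      by (simp add: power_mult_distrib)
    have i1: "\<delta> \<bullet> (x - y) = H x \<bullet> (x - y) - H y \<bullet> (x - y)" by (simp add: \<delta>_def inner_diff_left)
    have i2: "(norm \<delta>)\<^sup>2 = H x \<bullet> \<delta> - H y \<bullet> \<delta>"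
      by (simp add: power2_norm_eq_inner) (simp add: \<delta>_def inner_diff_left)
    have key: "(2 * s - ll * s\<^sup>2) * (norm \<delta>)\<^sup>2 = 2 * (s * (H x \<bullet> \<delta>) - s * (H y \<bullet> \<delta>)) - ll * (s\<^sup>2 * (norm \<delta>)\<^sup>2)"
      by (simp add: i2 algebra_simps)
    show ?thesis by (rule coco_arith[OF A[unfolded e1] B[unfolded e2 n1] C[unfolded e3] D[unfolded e4 n2] key i1])
  qed
  have CS: "(\<delta> \<bullet> (x - y))\<^sup>2 \<le> (norm (x - y))\<^sup>2 * (norm \<delta>)\<^sup>2"
  proof -
    have "\<bar>\<delta> \<bullet> (x - y)\<bar> \<le> norm \<delta> * norm (x - y)" by (rule Cauchy_Schwarz_ineq2)
    then have "\<bar>\<delta> \<bullet> (x - y)\<bar>\<^sup>2 \<le> (norm \<delta> * norm (x - y))\<^sup>2"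
      by (rule power_mono) simp
    then show ?thesis by (simp add: power_mult_distrib mult.commute)
  qed
  have w: "(x - \<gamma> *\<^sub>R G x) - (y - \<gamma> *\<^sub>R G y) = (1 - \<gamma> * \<mu>) *\<^sub>R (x - y) - \<gamma> *\<^sub>R \<delta>"
    by (simp add: \<delta>_def H_def algebra_simps)
  have "(norm ((1 - \<gamma> * \<mu>) *\<^sub>R (x - y) - \<gamma> *\<^sub>R \<delta>))\<^sup>2
      = (1 - \<gamma> * \<mu>)\<^sup>2 * (norm (x - y))\<^sup>2 - 2 * \<gamma> * (1 - \<gamma> * \<mu>) * (\<delta> \<bullet> (x - y)) + \<gamma>\<^sup>2 * (norm \<delta>)\<^sup>2"
    by (rule norm_sq_comb)
  also have "\<dots> \<le> max ((1 - \<gamma> * \<mu>)\<^sup>2) ((\<gamma> * L - 1)\<^sup>2) * (norm (x - y))\<^sup>2"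
    by (rule grad_step_alg[OF _ _ coco CS ll_def]) (use mu g ll_def in auto)
  finally show ?thesis using w by simp
qed


lemma sq_identity:
  fixes x y :: "'a::real_inner"
  shows "(1 - a) * (norm x)\<^sup>2 + a * (norm y)\<^sup>2 - (norm ((1 - a) *\<^sub>R x + a *\<^sub>R y))\<^sup>2
         = a * (1 - a) * (norm (x - y))\<^sup>2"
  unfolding power2_norm_eq_inner
  by (simp add: inner_add_left inner_add_right inner_diff_left inner_diff_right inner_commute
      algebra_simps power2_eq_square)

lemma sq_identity_shift:
  fixes x y c :: "'a::real_inner"
  shows "(1 - a) * (norm (x - c))\<^sup>2 + a * (norm (y - c))\<^sup>2 - (norm ((1 - a) *\<^sub>R x + a *\<^sub>R y - c))\<^sup>2
         = a * (1 - a) * (norm (x - y))\<^sup>2"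
proof -
  have "(1 - a) *\<^sub>R x + a *\<^sub>R y - c = (1 - a) *\<^sub>R (x - c) + a *\<^sub>R (y - c)"
    by (simp add: algebra_simps)
  moreover have "x - y = (x - c) - (y - c)" by simp
  ultimately show ?thesis using sq_identity[of a "x - c" "y - c"] by simp
qed

lemma ereal_fin:
  assumes "(e::ereal) \<noteq> \<infinity>" "e \<noteq> -\<infinity>"
  shows "e = ereal (real_of_ereal e)"
  using assms by (cases e) auto

lemma sc_real:
  fixes \<phi> :: "'a::real_inner \<Rightarrow> ereal"
  assumes sc: "strongly_convex_fun \<mu> \<phi>" and nm: "\<And>x. \<phi> x \<noteq> -\<infinity>"
    and fx: "\<phi> x = ereal vx" and fy: "\<phi> y = ereal vy" and a: "0 < a" "a < 1"
  shows "\<exists>vz. \<phi> ((1 - a) *\<^sub>R x + a *\<^sub>R y) = ereal vz \<and>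
           vz \<le> (1 - a) * vx + a * vy - \<mu> / 2 * (a * (1 - a) * (norm (x - y))\<^sup>2)"
proof -
  define z where "z = (1 - a) *\<^sub>R x + a *\<^sub>R y"
  define q where "q = (\<lambda>x::'a. \<mu> / 2 * (norm x)\<^sup>2)"
  have "\<phi> z - ereal (q z) \<le> ereal (1 - a) * (\<phi> x - ereal (q x)) + ereal a * (\<phi> y - ereal (q y))"
    using sc a unfolding strongly_convex_fun_def convex_fun_def z_def q_def by blast
  also have "\<dots> = ereal ((1 - a) * (vx - q x) + a * (vy - q y))" by (simp add: fx fy)
  finally have le: "\<phi> z - ereal (q z) \<le> ereal ((1 - a) * (vx - q x) + a * (vy - q y))" .
  obtain vz where vz: "\<phi> z = ereal vz"
  proof (cases "\<phi> z")
    case (real r) then show ?thesis using that by blast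
  next
    case PInf then show ?thesis using le by simp
  next
    case MInf then show ?thesis using nm by simp
  qed
  have "vz - q z \<le> (1 - a) * (vx - q x) + a * (vy - q y)" using le vz by simp
  moreover have "(1 - a) * q x + a * q y - q z = \<mu> / 2 * (a * (1 - a) * (norm (x - y))\<^sup>2)"
  proof -
    have "(1 - a) * q x + a * q y - q z = \<mu> / 2 * ((1 - a) * (norm x)\<^sup>2 + a * (norm y)\<^sup>2 - (norm z)\<^sup>2)"
      by (simp add: q_def field_simps)
    then show ?thesis unfolding z_def sq_identity by simp
  qed
  ultimately show ?thesis using vz unfolding z_def by (intro exI[of _ vz]) (simp add: algebra_simps)
qed


locale proxfun =
  fixes \<phi> :: "'a::euclidean_space \<Rightarrow> ereal" and \<gamma> \<mu> :: real
  assumes proper: "proper_fun \<phi>" and clo: "closed_fun \<phi>" and sc: "strongly_convex_fun \<mu> \<phi>"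
    and mu: "\<mu> \<ge> 0" and gam: "\<gamma> > 0"
begin

lemma nm: "\<phi> x \<noteq> -\<infinity>" using proper unfolding proper_fun_def by blast

lemma dom_ne: "\<exists>y. \<phi> y \<noteq> \<infinity>" using proper unfolding proper_fun_def by blast

lemma fin: "\<phi> y \<noteq> \<infinity> \<Longrightarrow> \<phi> y = ereal (real_of_ereal (\<phi> y))"
  using ereal_fin nm by blast

definition Fr :: "'a \<Rightarrow> 'a \<Rightarrow> real" where
  "Fr x y = \<gamma> * real_of_ereal (\<phi> y) + (norm (y - x))\<^sup>2 / 2"

definition isMin :: "'a \<Rightarrow> 'a \<Rightarrow> bool" where
  "isMin x p \<longleftrightarrow> (\<forall>y. ereal \<gamma> * \<phi> p + ereal ((norm (p - x))\<^sup>2 / 2)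
                               \<le> ereal \<gamma> * \<phi> y + ereal ((norm (y - x))\<^sup>2 / 2))"

lemma Fr_sc:
  assumes "\<phi> y1 \<noteq> \<infinity>" "\<phi> y2 \<noteq> \<infinity>" "0 < a" "a < 1"
  shows "\<phi> ((1 - a) *\<^sub>R y1 + a *\<^sub>R y2) \<noteq> \<infinity> \<and>
    Fr x ((1 - a) *\<^sub>R y1 + a *\<^sub>R y2) \<le> (1 - a) * Fr x y1 + a * Fr x y2
       - (1 + \<gamma> * \<mu>) / 2 * (a * (1 - a) * (norm (y1 - y2))\<^sup>2)"
proof -
  obtain vz where vz: "\<phi> ((1 - a) *\<^sub>R y1 + a *\<^sub>R y2) = ereal vz"
    and le: "vz \<le> (1 - a) * real_of_ereal (\<phi> y1) + a * real_of_ereal (\<phi> y2)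
                 - \<mu> / 2 * (a * (1 - a) * (norm (y1 - y2))\<^sup>2)"
    using sc_real[OF sc nm fin[OF assms(1)] fin[OF assms(2)] assms(3,4)] by blast
  define N where "N = a * (1 - a) * (norm (y1 - y2))\<^sup>2"
  have q: "(1 - a) * ((norm (y1 - x))\<^sup>2 / 2) + a * ((norm (y2 - x))\<^sup>2 / 2)
           - (norm ((1 - a) *\<^sub>R y1 + a *\<^sub>R y2 - x))\<^sup>2 / 2 = N / 2"
    using sq_identity_shift[of a y1 x y2] unfolding N_def by (simp add: field_simps)
  have "\<gamma> * vz \<le> \<gamma> * ((1 - a) * real_of_ereal (\<phi> y1) + a * real_of_ereal (\<phi> y2) - \<mu> / 2 * N)"
    using le gam unfolding N_def by (simp add: mult_left_mono)
  then have "\<gamma> * vz \<le> (1 - a) * (\<gamma> * real_of_ereal (\<phi> y1)) + a * (\<gamma> * real_of_ereal (\<phi> y2)) - \<gamma> * \<mu> / 2 * N"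
    by (simp add: algebra_simps)
  then show ?thesis using vz q unfolding Fr_def N_def[symmetric]
    by (simp add: algebra_simps add_divide_distrib diff_divide_distrib)
qed

lemma eexpr: "\<phi> y \<noteq> \<infinity> \<Longrightarrow> ereal \<gamma> * \<phi> y + ereal c = ereal (\<gamma> * real_of_ereal (\<phi> y) + c)"
  by (subst fin) auto

lemma isMin_iff: "isMin x p \<longleftrightarrow> \<phi> p \<noteq> \<infinity> \<and> (\<forall>y. \<phi> y \<noteq> \<infinity> \<longrightarrow> Fr x p \<le> Fr x y)"
proof
  assume m: "isMin x p"
  obtain y0 where y0: "\<phi> y0 \<noteq> \<infinity>" using dom_ne by blast
  have pfin: "\<phi> p \<noteq> \<infinity>"
  proof
    assume "\<phi> p = \<infinity>"
    then have inf: "ereal \<gamma> * \<phi> p + ereal ((norm (p - x))\<^sup>2 / 2) = \<infinity>" using gam by simp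
    have "ereal \<gamma> * \<phi> p + ereal ((norm (p - x))\<^sup>2 / 2) \<le> ereal (\<gamma> * real_of_ereal (\<phi> y0) + (norm (y0 - x))\<^sup>2 / 2)"
      using m[unfolded isMin_def, rule_format, of y0] unfolding eexpr[OF y0] .
    then show False unfolding inf by simp
  qed
  moreover have "Fr x p \<le> Fr x y" if "\<phi> y \<noteq> \<infinity>" for y
  proof -
    have "ereal \<gamma> * \<phi> p + ereal ((norm (p - x))\<^sup>2 / 2) \<le> ereal \<gamma> * \<phi> y + ereal ((norm (y - x))\<^sup>2 / 2)"
      using m unfolding isMin_def by blast
    then show ?thesis unfolding Fr_def eexpr[OF pfin] eexpr[OF that] by simp
  qed
  ultimately show "\<phi> p \<noteq> \<infinity> \<and> (\<forall>y. \<phi> y \<noteq> \<infinity> \<longrightarrow> Fr x p \<le> Fr x y)" by blast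
next
  assume a: "\<phi> p \<noteq> \<infinity> \<and> (\<forall>y. \<phi> y \<noteq> \<infinity> \<longrightarrow> Fr x p \<le> Fr x y)"
  show "isMin x p" unfolding isMin_def
  proof
    fix y
    show "ereal \<gamma> * \<phi> p + ereal ((norm (p - x))\<^sup>2 / 2) \<le> ereal \<gamma> * \<phi> y + ereal ((norm (y - x))\<^sup>2 / 2)"
    proof (cases "\<phi> y = \<infinity>")
      case True then show ?thesis using gam by simp
    next
      case False
      then have "Fr x p \<le> Fr x y" using a by blast
      then show ?thesis unfolding Fr_def eexpr[OF False] using eexpr a by simp
    qed
  qed
qed

lemma sub_closed: "closed {y. \<phi> y \<noteq> \<infinity> \<and> Fr x y \<le> c}"
proof -
  have eq: "{y. \<phi> y \<noteq> \<infinity> \<and> Fr x y \<le> c}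
      = (\<lambda>y. (y, (c - (norm (y - x))\<^sup>2 / 2) / \<gamma>)) -` {(y, t::real). \<phi> y \<le> ereal t}"
  proof (rule set_eqI)
    fix y
    show "y \<in> {y. \<phi> y \<noteq> \<infinity> \<and> Fr x y \<le> c} \<longleftrightarrow>
          y \<in> (\<lambda>y. (y, (c - (norm (y - x))\<^sup>2 / 2) / \<gamma>)) -` {(y, t::real). \<phi> y \<le> ereal t}"
    proof (cases "\<phi> y = \<infinity>")
      case True then show ?thesis by simp
    next
      case False
      have "\<phi> y \<le> ereal ((c - (norm (y - x))\<^sup>2 / 2) / \<gamma>) \<longleftrightarrow>
            real_of_ereal (\<phi> y) \<le> (c - (norm (y - x))\<^sup>2 / 2) / \<gamma>"
        by (subst fin[OF False]) simp
      also have "\<dots> \<longleftrightarrow> Fr x y \<le> c" unfolding Fr_def using gam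
        by (simp add: pos_le_divide_eq algebra_simps)
      finally show ?thesis using False by simp
    qed
  qed
  have "closed {(y, t::real). \<phi> y \<le> ereal t}" using clo unfolding closed_fun_def .
  then show ?thesis unfolding eq
    by (rule continuous_closed_vimage) (use gam in \<open>auto intro!: continuous_intros\<close>)
qed

lemma exists_min: "\<exists>p. isMin x p"
proof -
  obtain y0 where y0: "\<phi> y0 \<noteq> \<infinity>" using dom_ne by blast
  define f0 where "f0 = Fr x y0"
  define S where "S = {y. \<phi> y \<noteq> \<infinity> \<and> Fr x y \<le> f0}"
  have y0S: "y0 \<in> S" unfolding S_def f0_def using y0 by simp
  have "open (- {y. \<phi> y \<noteq> \<infinity> \<and> Fr x y \<le> f0 - 1})" using sub_closed by (simp add: open_Compl)
  moreover have "y0 \<in> - {y. \<phi> y \<noteq> \<infinity> \<and> Fr x y \<le> f0 - 1}" unfolding f0_def by simp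
  ultimately obtain \<delta> where dpos: "\<delta> > 0" and dball: "ball y0 \<delta> \<subseteq> - {y. \<phi> y \<noteq> \<infinity> \<and> Fr x y \<le> f0 - 1}"
    by (meson open_contains_ball)
  have lowb: "f0 - 1 < Fr x z" if "\<phi> z \<noteq> \<infinity>" "dist y0 z < \<delta>" for z
    using dball that by auto
  have bnd: "norm (y - y0) \<le> \<delta> + 8 / \<delta>" if yS: "y \<in> S" for y
  proof (rule ccontr)
    define R where "R = norm (y - y0)"
    assume "\<not> norm (y - y0) \<le> \<delta> + 8 / \<delta>"
    then have RR: "R > \<delta> + 8 / \<delta>" unfolding R_def by simp
    have d8: "8 / \<delta> > 0" using dpos by simp
    have Rd: "R > \<delta>" using RR d8 by linarith
    then have Rpos: "R > 0" using dpos by simp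
    define a where "a = \<delta> / (2 * R)"
    have a0: "0 < a" unfolding a_def using dpos Rpos by simp
    have a1: "a < 1 / 2" unfolding a_def using Rd Rpos dpos by (simp add: field_simps)
    have aR: "a * R = \<delta> / 2" unfolding a_def using Rpos by simp
    have yfin: "\<phi> y \<noteq> \<infinity>" and yle: "Fr x y \<le> f0" using yS unfolding S_def by auto
    define z where "z = (1 - a) *\<^sub>R y0 + a *\<^sub>R y"
    have zz: "\<phi> z \<noteq> \<infinity> \<and> Fr x z \<le> (1 - a) * Fr x y0 + a * Fr x y
       - (1 + \<gamma> * \<mu>) / 2 * (a * (1 - a) * (norm (y0 - y))\<^sup>2)"
      unfolding z_def by (rule Fr_sc[OF y0 yfin a0]) (use a1 in simp)
    have "y0 - z = a *\<^sub>R (y0 - y)" unfolding z_def by (simp add: algebra_simps)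
    then have "dist y0 z = a * R" unfolding dist_norm R_def using a0 by (simp add: norm_minus_commute)
    then have "dist y0 z < \<delta>" using aR dpos by simp
    then have "f0 - 1 < Fr x z" using lowb zz by blast
    moreover have "(1 - a) * Fr x y0 + a * Fr x y \<le> f0"
    proof -
      have "a * Fr x y \<le> a * f0" using yle a0 by (simp add: mult_left_mono)
      then show ?thesis unfolding f0_def by (simp add: algebra_simps)
    qed
    ultimately have lt1: "(1 + \<gamma> * \<mu>) / 2 * (a * (1 - a) * R\<^sup>2) < 1"
      using zz unfolding R_def by (simp add: norm_minus_commute)
    have k1: "1 + \<gamma> * \<mu> \<ge> 1" using gam mu by simp
    have "a * (1 - a) * R\<^sup>2 = (a * R) * ((1 - a) * R)" by (simp add: power2_eq_square algebra_simps)
    also have "\<dots> \<ge> (\<delta> / 2) * (R / 2)"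
    proof -
      have "R * a \<le> R * (1/2)" using a1 Rpos by (intro mult_left_mono) auto
      then have "(1 - a) * R \<ge> R / 2" by (simp add: algebra_simps)
      then have "(\<delta> / 2) * (R / 2) \<le> (\<delta> / 2) * ((1 - a) * R)" using dpos by (intro mult_left_mono) auto
      then show ?thesis unfolding aR .
    qed
    finally have "a * (1 - a) * R\<^sup>2 \<ge> \<delta> * R / 4" by simp
    moreover have "\<delta> * R \<ge> 8"
    proof -
      have "R \<ge> 8 / \<delta>" using RR dpos by simp
      then show ?thesis using dpos by (simp add: field_simps)
    qed
    ultimately have "a * (1 - a) * R\<^sup>2 \<ge> 2" by simp
    then have "(1 + \<gamma> * \<mu>) / 2 * (a * (1 - a) * R\<^sup>2) \<ge> 1 / 2 * 2"
      using k1 by (intro mult_mono) auto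
    then show False using lt1 by simp
  qed
  have cS: "compact S"
  proof -
    have "bounded S" unfolding bounded_iff
      using bnd by (intro exI[of _ "norm y0 + \<delta> + 8 / \<delta>"]) (smt (verit) norm_triangle_sub)
    moreover have "closed S" unfolding S_def by (rule sub_closed)
    ultimately show ?thesis using compact_eq_bounded_closed by blast
  qed
  have "S \<inter> (\<Inter>z\<in>S. {y. \<phi> y \<noteq> \<infinity> \<and> Fr x y \<le> Fr x z}) \<noteq> {}"
  proof (rule compact_imp_fip_image[OF cS])
    show "closed {y. \<phi> y \<noteq> \<infinity> \<and> Fr x y \<le> Fr x z}" for z by (rule sub_closed)
  next
    fix I' assume fI: "finite I'" and IS: "I' \<subseteq> S"
    show "S \<inter> (\<Inter>z\<in>I'. {y. \<phi> y \<noteq> \<infinity> \<and> Fr x y \<le> Fr x z}) \<noteq> {}"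
    proof (cases "I' = {}")
      case True then show ?thesis using y0S by auto
    next
      case False
      have "Min (Fr x ` I') \<in> Fr x ` I'" using fI False by simp
      then obtain m where mI: "m \<in> I'" and mm: "Fr x m = Min (Fr x ` I')" by auto
      have "Fr x m \<le> Fr x z" if "z \<in> I'" for z using mm fI that by simp
      moreover have "m \<in> S" using mI IS by auto
      ultimately have "m \<in> S \<inter> (\<Inter>z\<in>I'. {y. \<phi> y \<noteq> \<infinity> \<and> Fr x y \<le> Fr x z})"
        unfolding S_def by auto
      then show ?thesis by blast
    qed
  qed
  then obtain p where pS: "p \<in> S" and pm: "\<And>z. z \<in> S \<Longrightarrow> Fr x p \<le> Fr x z" by blast
  have "isMin x p" unfolding isMin_iff
  proof (intro conjI allI impI)
    show "\<phi> p \<noteq> \<infinity>" using pS unfolding S_def by simp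
    fix y assume yf: "\<phi> y \<noteq> \<infinity>"
    show "Fr x p \<le> Fr x y"
    proof (cases "y \<in> S")
      case True then show ?thesis using pm by simp
    next
      case False then have "Fr x y > f0" using yf unfolding S_def by simp
      moreover have "Fr x p \<le> f0" using pS unfolding S_def by simp
      ultimately show ?thesis by simp
    qed
  qed
  then show ?thesis by blast
qed

lemma unique_min:
  assumes p: "isMin x p" and q: "isMin x q" shows "p = q"
proof (rule ccontr)
  assume ne: "p \<noteq> q"
  have pf: "\<phi> p \<noteq> \<infinity>" and pm: "\<And>y. \<phi> y \<noteq> \<infinity> \<Longrightarrow> Fr x p \<le> Fr x y" using p unfolding isMin_iff by auto
  have qf: "\<phi> q \<noteq> \<infinity>" and qm: "\<And>y. \<phi> y \<noteq> \<infinity> \<Longrightarrow> Fr x q \<le> Fr x y" using q unfolding isMin_iff by auto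
  have eq: "Fr x p = Fr x q" using pm[OF qf] qm[OF pf] by simp
  define z where "z = (1 - 1/2) *\<^sub>R p + (1/2::real) *\<^sub>R q"
  have zz: "\<phi> z \<noteq> \<infinity> \<and> Fr x z \<le> (1 - 1/2) * Fr x p + 1/2 * Fr x q
      - (1 + \<gamma> * \<mu>) / 2 * (1/2 * (1 - 1/2) * (norm (p - q))\<^sup>2)"
    unfolding z_def by (rule Fr_sc[OF pf qf]) auto
  have "(norm (p - q))\<^sup>2 > 0" using ne by simp
  moreover have "1 + \<gamma> * \<mu> > 0" using gam mu by (simp add: add_pos_nonneg)
  ultimately have "(1 + \<gamma> * \<mu>) / 2 * (1/2 * (1 - 1/2) * (norm (p - q))\<^sup>2) > 0" by simp
  then have "Fr x z < Fr x p" using zz eq by simp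
  moreover have "Fr x p \<le> Fr x z" using pm zz by blast
  ultimately show False by simp
qed

lemma prox_eq: "prox \<gamma> \<phi> x = (THE p. isMin x p)"
  unfolding prox_def isMin_def ..

lemma prox_isMin: "isMin x (prox \<gamma> \<phi> x)"
proof -
  have "\<exists>!p. isMin x p" using exists_min unique_min by blast
  then show ?thesis unfolding prox_eq by (rule theI')
qed

lemma prox_unique: "isMin x p \<Longrightarrow> prox \<gamma> \<phi> x = p"
  using unique_min prox_isMin by blast

end

lemma ident3:
  fixes p q x x' :: "'a::real_inner"
  shows "((norm (q - x))\<^sup>2 - (norm (p - x))\<^sup>2 + (norm (p - x'))\<^sup>2 - (norm (q - x'))\<^sup>2) / 2 = (p - q) \<bullet> (x - x')"
  unfolding power2_norm_eq_inner
  by (simp add: inner_diff_left inner_diff_right inner_commute field_simps)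

lemma ident4:
  fixes y p x :: "'a::real_inner"
  shows "((norm (p - x))\<^sup>2 + (norm (y - p))\<^sup>2 - (norm (y - x))\<^sup>2) / 2 = (x - p) \<bullet> (y - p)"
  unfolding power2_norm_eq_inner
  by (simp add: inner_diff_left inner_diff_right inner_commute field_simps)

lemma ident5:
  fixes y z s :: "'a::real_inner"
  shows "(norm (y - (z + g *\<^sub>R s)))\<^sup>2 = (norm (y - z))\<^sup>2 - 2 * g * (s \<bullet> (y - z)) + g\<^sup>2 * (norm s)\<^sup>2"
  unfolding power2_norm_eq_inner
  by (simp add: inner_diff_left inner_diff_right inner_add_left inner_add_right inner_commute algebra_simps power2_eq_square)

lemma ar2: fixes g A B C F1 F2 N S :: real
  shows "g*A + g*B \<le> g*C \<Longrightarrow> F1 = g*A + S/2 \<Longrightarrow> F2 = g*C + (N - 2*g*B + S)/2 \<Longrightarrow> 0 \<le> N \<Longrightarrow> F1 \<le> F2"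
  by (simp add: field_simps)

context proxfun begin

lemma kappa: "1 + \<gamma> * \<mu> \<ge> 1" using gam mu by simp

lemma growth:
  assumes p: "isMin x p" and yf: "\<phi> y \<noteq> \<infinity>"
  shows "Fr x p + (1 + \<gamma> * \<mu>) / 2 * (norm (y - p))\<^sup>2 \<le> Fr x y"
proof -
  have pf: "\<phi> p \<noteq> \<infinity>" and pm: "\<And>y. \<phi> y \<noteq> \<infinity> \<Longrightarrow> Fr x p \<le> Fr x y" using p unfolding isMin_iff by auto
  define c where "c = (1 + \<gamma> * \<mu>) / 2 * (norm (y - p))\<^sup>2"
  define G where "G = Fr x y - Fr x p"
  have G0: "G \<ge> 0" using pm[OF yf] unfolding G_def by simp
  have key: "(1 - a) * c \<le> G" if a: "0 < a" "a < 1" for a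
  proof -
    have zz: "\<phi> ((1 - a) *\<^sub>R p + a *\<^sub>R y) \<noteq> \<infinity> \<and> Fr x ((1 - a) *\<^sub>R p + a *\<^sub>R y) \<le> (1 - a) * Fr x p + a * Fr x y
       - (1 + \<gamma> * \<mu>) / 2 * (a * (1 - a) * (norm (p - y))\<^sup>2)"
      by (rule Fr_sc[OF pf yf a])
    then have "Fr x p \<le> (1 - a) * Fr x p + a * Fr x y - (1 + \<gamma> * \<mu>) / 2 * (a * (1 - a) * (norm (p - y))\<^sup>2)"
      using pm by (meson order_trans)
    moreover have "(1 + \<gamma> * \<mu>) / 2 * (a * (1 - a) * (norm (p - y))\<^sup>2) = a * ((1 - a) * c)"
      unfolding c_def by (simp add: norm_minus_commute field_simps)
    ultimately have "a * ((1 - a) * c) \<le> a * G" unfolding G_def by (simp add: algebra_simps)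
    then show ?thesis using a by simp
  qed
  have "c \<le> G"
  proof (rule ccontr)
    assume "\<not> c \<le> G"
    then have cG: "G < c" by simp
    then have cpos: "c > 0" using G0 by simp
    define a where "a = (c - G) / (2 * c)"
    have a0: "0 < a" unfolding a_def using cG cpos by simp
    have a1: "a < 1" unfolding a_def using cG cpos G0 by (simp add: field_simps)
    have "(1 - a) * c = (c + G) / 2" unfolding a_def using cpos by (simp add: field_simps)
    then have "(1 - a) * c > G" using cG by simp
    then show False using key[OF a0 a1] by simp
  qed
  then show ?thesis unfolding c_def G_def by simp
qed

lemma prox_subgrad: "(1 / \<gamma>) *\<^sub>R (x - prox \<gamma> \<phi> x) \<in> subdiff \<phi> (prox \<gamma> \<phi> x)"
proof -
  define p where "p = prox \<gamma> \<phi> x"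
  have pM: "isMin x p" unfolding p_def by (rule prox_isMin)
  have pf: "\<phi> p \<noteq> \<infinity>" using pM unfolding isMin_iff by auto
  have "\<phi> p + ereal (((1 / \<gamma>) *\<^sub>R (x - p)) \<bullet> (y - p)) \<le> \<phi> y" for y
  proof (cases "\<phi> y = \<infinity>")
    case True then show ?thesis by simp
  next
    case False
    have g: "Fr x p + (1 + \<gamma> * \<mu>) / 2 * (norm (y - p))\<^sup>2 \<le> Fr x y" by (rule growth[OF pM False])
    have "1 / 2 * (norm (y - p))\<^sup>2 \<le> (1 + \<gamma> * \<mu>) / 2 * (norm (y - p))\<^sup>2"
      using kappa by (intro mult_right_mono) auto
    with g have "Fr x p + 1 / 2 * (norm (y - p))\<^sup>2 \<le> Fr x y" by simp
    then have "\<gamma> * real_of_ereal (\<phi> p) + (x - p) \<bullet> (y - p) \<le> \<gamma> * real_of_ereal (\<phi> y)"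
      unfolding Fr_def using ident4[of p x y] by (simp add: algebra_simps add_divide_distrib diff_divide_distrib)
    then have "real_of_ereal (\<phi> p) + (1 / \<gamma>) * ((x - p) \<bullet> (y - p)) \<le> real_of_ereal (\<phi> y)"
      using gam by (simp add: field_simps)
    then show ?thesis by (subst fin[OF pf], subst fin[OF False]) simp
  qed
  then show ?thesis unfolding subdiff_def p_def[symmetric] using pf by (simp add: less_top)
qed

lemma prox_mono:
  "(1 + \<gamma> * \<mu>) * (norm (prox \<gamma> \<phi> x - prox \<gamma> \<phi> x'))\<^sup>2
     \<le> (prox \<gamma> \<phi> x - prox \<gamma> \<phi> x') \<bullet> (x - x')"
proof -
  define p where "p = prox \<gamma> \<phi> x"
  define q where "q = prox \<gamma> \<phi> x'"
  have pM: "isMin x p" unfolding p_def by (rule prox_isMin)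
  have qM: "isMin x' q" unfolding q_def by (rule prox_isMin)
  have pf: "\<phi> p \<noteq> \<infinity>" using pM unfolding isMin_iff by auto
  have qf: "\<phi> q \<noteq> \<infinity>" using qM unfolding isMin_iff by auto
  have 1: "Fr x p + (1 + \<gamma> * \<mu>) / 2 * (norm (q - p))\<^sup>2 \<le> Fr x q" by (rule growth[OF pM qf])
  have 2: "Fr x' q + (1 + \<gamma> * \<mu>) / 2 * (norm (p - q))\<^sup>2 \<le> Fr x' p" by (rule growth[OF qM pf])
  have "(1 + \<gamma> * \<mu>) * (norm (p - q))\<^sup>2
      \<le> ((norm (q - x))\<^sup>2 - (norm (p - x))\<^sup>2 + (norm (p - x'))\<^sup>2 - (norm (q - x'))\<^sup>2) / 2"
    using 1 2 unfolding Fr_def by (simp add: norm_minus_commute[of q p] field_simps)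
  then show ?thesis unfolding ident3 p_def q_def .
qed

lemma prox_lip: "norm (prox \<gamma> \<phi> x - prox \<gamma> \<phi> x') \<le> norm (x - x')"
proof -
  define d where "d = prox \<gamma> \<phi> x - prox \<gamma> \<phi> x'"
  have "1 * (norm d)\<^sup>2 \<le> (1 + \<gamma> * \<mu>) * (norm d)\<^sup>2" by (rule mult_right_mono[OF kappa]) simp
  then have "(norm d)\<^sup>2 \<le> (1 + \<gamma> * \<mu>) * (norm d)\<^sup>2" by simp
  also have "\<dots> \<le> d \<bullet> (x - x')" unfolding d_def by (rule prox_mono)
  also have "\<dots> \<le> norm d * norm (x - x')" by (rule norm_cauchy_schwarz)
  finally have "norm d * norm d \<le> norm d * norm (x - x')" by (simp add: power2_eq_square)
  then show ?thesis unfolding d_def[symmetric]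
    by (cases "norm d = 0") (simp_all)
qed

lemma prox_cont: "continuous_on UNIV (prox \<gamma> \<phi>)"
  unfolding continuous_on_iff
proof (intro ballI allI impI)
  fix x and e :: real assume "e > 0"
  then show "\<exists>d>0. \<forall>x'\<in>UNIV. dist x' x < d \<longrightarrow> dist (prox \<gamma> \<phi> x') (prox \<gamma> \<phi> x) < e"
    by (intro exI[of _ e]) (auto simp: dist_norm intro: le_less_trans[OF prox_lip])
qed

lemma prox_of_subgrad:
  assumes s: "s \<in> subdiff \<phi> z"
  shows "prox \<gamma> \<phi> (z + \<gamma> *\<^sub>R s) = z"
proof (rule prox_unique)
  have zf: "\<phi> z \<noteq> \<infinity>" and sg: "\<And>y. \<phi> z + ereal (s \<bullet> (y - z)) \<le> \<phi> y"
    using s unfolding subdiff_def by auto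
  show "isMin (z + \<gamma> *\<^sub>R s) z" unfolding isMin_iff
  proof (intro conjI allI impI zf)
    fix y assume yf: "\<phi> y \<noteq> \<infinity>"
    have "real_of_ereal (\<phi> z) + s \<bullet> (y - z) \<le> real_of_ereal (\<phi> y)"
      using sg[of y] by (subst (asm) fin[OF zf], subst (asm) fin[OF yf]) simp
    then have "\<gamma> * real_of_ereal (\<phi> z) + \<gamma> * (s \<bullet> (y - z)) \<le> \<gamma> * real_of_ereal (\<phi> y)"
      using gam by (metis distrib_left mult_le_cancel_left_pos)
    moreover have e1: "Fr (z + \<gamma> *\<^sub>R s) z = \<gamma> * real_of_ereal (\<phi> z) + \<gamma>\<^sup>2 * (norm s)\<^sup>2 / 2"
      unfolding Fr_def by (simp add: power_mult_distrib)
    moreover have e2: "Fr (z + \<gamma> *\<^sub>R s) y = \<gamma> * real_of_ereal (\<phi> y)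
        + ((norm (y - z))\<^sup>2 - 2 * \<gamma> * (s \<bullet> (y - z)) + \<gamma>\<^sup>2 * (norm s)\<^sup>2) / 2"
      unfolding Fr_def ident5 ..
    moreover have "0 \<le> (norm (y - z))\<^sup>2" by simp
    ultimately show "Fr (z + \<gamma> *\<^sub>R s) z \<le> Fr (z + \<gamma> *\<^sub>R s) y"
      by (rule ar2)
  qed
qed

end

lemma conj_ge: "ereal (x \<bullet> y) - \<phi> x \<le> conjugate \<phi> y"
  unfolding conjugate_def by (rule SUP_upper) simp

lemma conj_nm:
  assumes "proper_fun \<phi>" shows "conjugate \<phi> y \<noteq> -\<infinity>"
proof -
  obtain x where x: "\<phi> x \<noteq> \<infinity>" using assms unfolding proper_fun_def by blast
  have "\<phi> x \<noteq> -\<infinity>" using assms unfolding proper_fun_def by blast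
  then have "ereal (x \<bullet> y) - \<phi> x \<noteq> -\<infinity>" using x by (cases "\<phi> x") auto
  moreover have "ereal (x \<bullet> y) - \<phi> x \<le> conjugate \<phi> y" by (rule conj_ge)
  ultimately show ?thesis by auto
qed

lemma conj_closed:
  fixes \<phi> :: "'a::euclidean_space \<Rightarrow> ereal"
  assumes "proper_fun \<phi>" shows "closed_fun (conjugate \<phi>)"
proof -
  have nm: "\<phi> x \<noteq> -\<infinity>" for x using assms unfolding proper_fun_def by blast
  have eq: "{(y, t::real). conjugate \<phi> y \<le> ereal t} = (\<Inter>x. {(y, t). ereal (x \<bullet> y) - \<phi> x \<le> ereal t})"
  proof (rule set_eqI)
    fix p :: "'a \<times> real"
    obtain y t where p: "p = (y, t)" by (cases p)
    show "p \<in> {(y, t::real). conjugate \<phi> y \<le> ereal t} \<longleftrightarrow> p \<in> (\<Inter>x. {(y, t). ereal (x \<bullet> y) - \<phi> x \<le> ereal t})"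
      unfolding p conjugate_def by (simp add: SUP_le_iff)
  qed
  have cl: "closed {(y, t::real). ereal (x \<bullet> y) - \<phi> x \<le> ereal t}" for x
  proof (cases "\<phi> x")
    case (real r)
    have "{(y, t::real). ereal (x \<bullet> y) - \<phi> x \<le> ereal t} = {p. (\<lambda>p. x \<bullet> fst p - r) p \<le> (\<lambda>p. snd p) p}"
      using real by auto
    also have "closed \<dots>"
      by (rule closed_Collect_le) (auto intro!: continuous_intros)
    finally show ?thesis .
  next
    case PInf then show ?thesis by simp
  next
    case MInf then show ?thesis using nm by simp
  qed
  show ?thesis unfolding closed_fun_def eq by (rule closed_INT) (use cl in auto)
qed

lemma conj_convex:
  fixes \<phi> :: "'a::real_inner \<Rightarrow> ereal"
  assumes nm: "\<And>x. \<phi> x \<noteq> -\<infinity>"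
  shows "convex_fun (conjugate \<phi>)"
  unfolding convex_fun_def
proof (intro allI impI)
  fix a b and t :: real assume t: "0 < t \<and> t < 1"
  show "conjugate \<phi> ((1 - t) *\<^sub>R a + t *\<^sub>R b) \<le> ereal (1 - t) * conjugate \<phi> a + ereal t * conjugate \<phi> b"
    unfolding conjugate_def[of \<phi> "(1 - t) *\<^sub>R a + t *\<^sub>R b"]
  proof (rule SUP_least)
    fix x
    show "ereal (x \<bullet> ((1 - t) *\<^sub>R a + t *\<^sub>R b)) - \<phi> x \<le> ereal (1 - t) * conjugate \<phi> a + ereal t * conjugate \<phi> b"
    proof (cases "\<phi> x")
      case (real r)
      have "ereal (x \<bullet> ((1 - t) *\<^sub>R a + t *\<^sub>R b)) - \<phi> x
          = ereal (1 - t) * (ereal (x \<bullet> a) - \<phi> x) + ereal t * (ereal (x \<bullet> b) - \<phi> x)"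
        using real by (simp add: inner_add_right algebra_simps)
      also have "\<dots> \<le> ereal (1 - t) * conjugate \<phi> a + ereal t * conjugate \<phi> b"
        using t by (intro add_mono ereal_mult_left_mono conj_ge) auto
      finally show ?thesis .
    next
      case PInf then show ?thesis by simp
    next
      case MInf then show ?thesis using nm by simp
    qed
  qed
qed

lemma fenchel_eq:
  assumes s: "s \<in> subdiff \<phi> x" and nm: "\<phi> x \<noteq> -\<infinity>"
  shows "conjugate \<phi> s = ereal (x \<bullet> s) - \<phi> x"
proof (rule antisym)
  have xf: "\<phi> x \<noteq> \<infinity>" and sg: "\<And>y. \<phi> x + ereal (s \<bullet> (y - x)) \<le> \<phi> y"
    using s unfolding subdiff_def by auto
  show "conjugate \<phi> s \<le> ereal (x \<bullet> s) - \<phi> x"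
    unfolding conjugate_def
  proof (rule SUP_least)
    fix y
    have "\<phi> x + ereal (s \<bullet> (y - x)) \<le> \<phi> y" by (rule sg)
    moreover have rx: "\<phi> x = ereal (real_of_ereal (\<phi> x))" using ereal_fin xf nm by blast
    ultimately show "ereal (y \<bullet> s) - \<phi> y \<le> ereal (x \<bullet> s) - \<phi> x"
    proof (cases "\<phi> y")
      case (real ry)
      have "real_of_ereal (\<phi> x) + s \<bullet> (y - x) \<le> ry"
        using \<open>\<phi> x + ereal (s \<bullet> (y - x)) \<le> \<phi> y\<close> real rx by (metis ereal_less_eq(3) plus_ereal.simps(1))
      then have "y \<bullet> s - ry \<le> x \<bullet> s - real_of_ereal (\<phi> x)"
        by (simp add: inner_diff_right inner_commute)
      then show ?thesis using real by (subst rx) simp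
    qed auto
  qed
  show "ereal (x \<bullet> s) - \<phi> x \<le> conjugate \<phi> s" by (rule conj_ge)
qed

lemma subdiff_mono:
  assumes a: "a \<in> subdiff \<phi> x" and b: "b \<in> subdiff \<phi> y" and nm: "\<And>z. \<phi> z \<noteq> -\<infinity>"
  shows "(a - b) \<bullet> (x - y) \<ge> 0"
proof -
  have xf: "\<phi> x \<noteq> \<infinity>" and sa: "\<phi> x + ereal (a \<bullet> (y - x)) \<le> \<phi> y" using a unfolding subdiff_def by auto
  have yf: "\<phi> y \<noteq> \<infinity>" and sb: "\<phi> y + ereal (b \<bullet> (x - y)) \<le> \<phi> x" using b unfolding subdiff_def by auto
  define rx where "rx = real_of_ereal (\<phi> x)"
  define ry where "ry = real_of_ereal (\<phi> y)"
  have rx: "\<phi> x = ereal rx" unfolding rx_def using ereal_fin xf nm by blast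
  have ry: "\<phi> y = ereal ry" unfolding ry_def using ereal_fin yf nm by blast
  have "rx + a \<bullet> (y - x) \<le> ry" "ry + b \<bullet> (x - y) \<le> rx" using sa sb rx ry by auto
  then have "a \<bullet> (y - x) + b \<bullet> (x - y) \<le> 0" by simp
  moreover have "(a - b) \<bullet> (x - y) = - (a \<bullet> (y - x) + b \<bullet> (x - y))"
    by (simp add: inner_diff_left inner_diff_right algebra_simps)
  ultimately show ?thesis by simp
qed

lemma sc0: "convex_fun \<phi> \<Longrightarrow> strongly_convex_fun 0 \<phi>"
  unfolding strongly_convex_fun_def by (simp add: zero_ereal_def[symmetric])

lemma subdiff_conj_inv:
  fixes h :: "'a::euclidean_space \<Rightarrow> ereal"
  assumes pr: "proper_fun h" and cl: "closed_fun h" and cv: "convex_fun h"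
    and z: "z \<in> subdiff (conjugate h) u"
  shows "u \<in> subdiff h z"
proof -
  interpret P: proxfun h 1 0 using pr cl sc0[OF cv] by unfold_locales auto
  define w where "w = z + u"
  define p where "p = prox 1 h w"
  define s where "s = w - p"
  have sp: "s \<in> subdiff h p" using P.prox_subgrad[of w] unfolding p_def s_def by simp
  have hpf: "h p \<noteq> \<infinity>" using sp unfolding subdiff_def by auto
  have cs: "conjugate h s = ereal (p \<bullet> s) - h p" by (rule fenchel_eq[OF sp P.nm])
  have ps: "p \<in> subdiff (conjugate h) s"
    unfolding subdiff_def
  proof (intro CollectI conjI allI)
    show "conjugate h s < \<infinity>" using cs hpf P.nm[of p] by (cases "h p") auto
    fix v
    have "ereal (p \<bullet> v) - h p \<le> conjugate h v" by (rule conj_ge)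
    moreover have "conjugate h s + ereal (p \<bullet> (v - s)) = ereal (p \<bullet> v) - h p"
      unfolding cs using hpf P.nm[of p] by (cases "h p") (auto simp: inner_diff_right)
    ultimately show "conjugate h s + ereal (p \<bullet> (v - s)) \<le> conjugate h v" by simp
  qed
  have "(z - p) \<bullet> (u - s) \<ge> 0"
    by (rule subdiff_mono[OF z ps conj_nm[OF pr]])
  moreover have "u - s = p - z" unfolding s_def w_def by simp
  ultimately have "(z - p) \<bullet> (p - z) \<ge> 0" by simp
  then have "z = p"
  proof -
    have "(z - p) \<bullet> (p - z) = - ((z - p) \<bullet> (z - p))" by (simp add: inner_diff_right inner_diff_left inner_commute)
    then have "(z - p) \<bullet> (z - p) \<le> 0" using \<open>(z - p) \<bullet> (p - z) \<ge> 0\<close> by simp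
    then have "(z - p) \<bullet> (z - p) = 0" using inner_ge_zero[of "z - p"] by simp
    then show ?thesis by simp
  qed
  then have "u = s" unfolding s_def w_def by simp
  then show ?thesis using sp \<open>z = p\<close> by simp
qed


lemma adj_swap:
  fixes K :: "'x::euclidean_space \<Rightarrow> 'u::euclidean_space"
  assumes "linear K"
  shows "z \<bullet> adjoint K v = K z \<bullet> v"
  using adjoint_works[OF assms] .

lemma ereal_not_inf_real:
  assumes "(e::ereal) \<noteq> \<infinity>" "e \<noteq> -\<infinity>"
  obtains r where "e = ereal r"
  using assms by (cases e) auto

lemma primal_min:
  fixes K :: "'x::euclidean_space \<Rightarrow> 'u::euclidean_space"
    and f :: "'x \<Rightarrow> real" and g :: "'x \<Rightarrow> ereal" and h :: "'u \<Rightarrow> ereal"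
  assumes lin: "linear K"
    and cf: "convex_on UNIV f" and df: "\<And>y. (f has_derivative (\<lambda>d. gradf y \<bullet> d)) (at y)"
    and gnm: "\<And>y. g y \<noteq> -\<infinity>" and hnm: "\<And>y. h y \<noteq> -\<infinity>"
    and k1: "- gradf xa - adjoint K ua \<in> subdiff g xa"
    and uh: "ua \<in> subdiff h (K xa)"
  shows "ereal (f xa) + g xa + h (K xa) \<le> ereal (f y) + g y + h (K y)"
proof -
  define sg where "sg = - gradf xa - adjoint K ua"
  have gxa: "g xa \<noteq> \<infinity>" and sgi: "\<And>y. g xa + ereal (sg \<bullet> (y - xa)) \<le> g y"
    using k1 unfolding subdiff_def sg_def by auto
  have hxa: "h (K xa) \<noteq> \<infinity>" and shi: "\<And>w. h (K xa) + ereal (ua \<bullet> (w - K xa)) \<le> h w"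
    using uh unfolding subdiff_def by auto
  obtain gx where gx: "g xa = ereal gx" using gxa gnm by (rule ereal_not_inf_real)
  obtain hx where hx: "h (K xa) = ereal hx" using hxa hnm by (rule ereal_not_inf_real)
  show ?thesis
  proof (cases "g y = \<infinity> \<or> h (K y) = \<infinity>")
    case True
    have inf: "ereal (f y) + g y + h (K y) = \<infinity>"
    proof (cases "g y = \<infinity>")
      case True then show ?thesis using hnm[of "K y"] by simp
    next
      case False
      then have "h (K y) = \<infinity>" using \<open>g y = \<infinity> \<or> h (K y) = \<infinity>\<close> by simp
      moreover obtain gy where "g y = ereal gy" using False gnm by (rule ereal_not_inf_real)
      ultimately show ?thesis by simp
    qed
    show ?thesis unfolding inf by simp
  next
    case False
    then have "g y \<noteq> \<infinity>" "h (K y) \<noteq> \<infinity>" by auto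
    obtain gy where gy: "g y = ereal gy" using \<open>g y \<noteq> \<infinity>\<close> gnm by (rule ereal_not_inf_real)
    obtain hy where hy: "h (K y) = ereal hy" using \<open>h (K y) \<noteq> \<infinity>\<close> hnm by (rule ereal_not_inf_real)
    have 1: "f xa + gradf xa \<bullet> (y - xa) \<le> f y" by (rule grad_ineq[OF cf df])
    have 2: "gx + sg \<bullet> (y - xa) \<le> gy" using sgi[of y] gx gy by simp
    have 3: "hx + ua \<bullet> (K y - K xa) \<le> hy" using shi[of "K y"] hx hy by simp
    have 4: "gradf xa \<bullet> (y - xa) + sg \<bullet> (y - xa) + ua \<bullet> (K y - K xa) = 0"
    proof -
      have "ua \<bullet> (K y - K xa) = (y - xa) \<bullet> adjoint K ua"
        using adj_swap[OF lin, of "y - xa" ua] linear_diff[OF lin] by (simp add: inner_commute)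
      then show ?thesis unfolding sg_def by (simp add: inner_diff_left inner_diff_right inner_commute algebra_simps)
    qed
    have "f xa + gx + hx \<le> f y + gy + hy" using 1 2 3 4 by linarith
    then show ?thesis using gx hx gy hy by simp
  qed
qed


lemma lin_comb:
  assumes "linear K" shows "K ((1 - a) *\<^sub>R x + a *\<^sub>R y) = (1 - a) *\<^sub>R K x + a *\<^sub>R K y"
  using assms by (simp add: linear_add linear_scale)

lemma ar_fm:
  fixes Fm q M a Fs S Fa A N :: real
  assumes H: "Fm - q * M \<le> (1 - a) * (Fs - q * S) + a * (Fa - q * A)"
    and E: "M = (1 - a) * S + a * A - N"
  shows "Fm \<le> (1 - a) * Fs + a * Fa - q * N"
proof -
  have "Fm \<le> (1 - a) * (Fs - q * S) + a * (Fa - q * A) + q * M" using H by simp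
  also have "\<dots> = (1 - a) * Fs + a * Fa - q * N" unfolding E by algebra
  finally show ?thesis .
qed

lemma primal_unique:
  fixes K :: "'x::euclidean_space \<Rightarrow> 'u::euclidean_space"
    and f :: "'x \<Rightarrow> real" and g :: "'x \<Rightarrow> ereal" and h :: "'u \<Rightarrow> ereal"
  assumes lin: "linear K"
    and cf: "convex_on UNIV f" and df: "\<And>y. (f has_derivative (\<lambda>d. gradf y \<bullet> d)) (at y)"
    and gnm: "\<And>y. g y \<noteq> -\<infinity>" and hnm: "\<And>y. h y \<noteq> -\<infinity>"
    and k1: "- gradf xa - adjoint K ua \<in> subdiff g xa"
    and uh: "ua \<in> subdiff h (K xa)"
    and scf: "convex_on UNIV (\<lambda>y. f y - \<mu>f / 2 * (norm y)\<^sup>2)"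
    and scg: "strongly_convex_fun \<mu>g g" and cvh: "convex_fun h"
    and mus: "\<mu>f \<ge> 0" "\<mu>g \<ge> 0" "\<mu>f > 0 \<or> \<mu>g > 0"
    and xsmin: "\<And>y. ereal (f xs) + g xs + h (K xs) \<le> ereal (f y) + g y + h (K y)"
  shows "xs = xa"
proof (rule ccontr)
  assume ne: "xs \<noteq> xa"
  define P where "P = (\<lambda>y. ereal (f y) + g y + h (K y))"
  have Pxa: "P xa \<le> P y" for y unfolding P_def by (rule primal_min[OF lin cf df gnm hnm k1 uh])
  have gxa: "g xa \<noteq> \<infinity>" using k1 unfolding subdiff_def by auto
  have hxa: "h (K xa) \<noteq> \<infinity>" using uh unfolding subdiff_def by auto
  obtain gx where gx: "g xa = ereal gx" using gxa gnm by (rule ereal_not_inf_real)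
  obtain hx where hx: "h (K xa) = ereal hx" using hxa hnm by (rule ereal_not_inf_real)
  have Peq: "P xs = P xa" using xsmin[of xa] Pxa[of xs] unfolding P_def by simp
  have gxs: "g xs \<noteq> \<infinity>"
  proof
    assume "g xs = \<infinity>"
    then have "P xs = \<infinity>" unfolding P_def using hnm[of "K xs"] by simp
    then show False using Peq gx hx unfolding P_def by simp
  qed
  obtain gs where gs: "g xs = ereal gs" using gxs gnm by (rule ereal_not_inf_real)
  have hxs: "h (K xs) \<noteq> \<infinity>"
  proof
    assume "h (K xs) = \<infinity>"
    then have "P xs = \<infinity>" unfolding P_def using gs by simp
    then show False using Peq gx hx unfolding P_def by simp
  qed
  obtain hs where hs: "h (K xs) = ereal hs" using hxs hnm by (rule ereal_not_inf_real)
  have Preal: "f xs + gs + hs = f xa + gx + hx" using Peq gs hs gx hx unfolding P_def by simp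
  define a :: real where "a = 1 / 2"
  have a: "0 < a" "a < 1" unfolding a_def by auto
  define m where "m = (1 - a) *\<^sub>R xs + a *\<^sub>R xa"
  define N where "N = a * (1 - a) * (norm (xs - xa))\<^sup>2"
  have Npos: "N > 0" unfolding N_def a_def using ne by simp
  have fm: "f m \<le> (1 - a) * f xs + a * f xa - \<mu>f / 2 * N"
  proof -
    have "f m - \<mu>f / 2 * (norm m)\<^sup>2 \<le> (1 - a) * (f xs - \<mu>f / 2 * (norm xs)\<^sup>2) + a * (f xa - \<mu>f / 2 * (norm xa)\<^sup>2)"
      using convex_onD[OF scf, of a xs xa] a unfolding m_def by simp
    moreover have "(1 - a) * (norm xs)\<^sup>2 + a * (norm xa)\<^sup>2 - (norm m)\<^sup>2 = N"
      unfolding m_def N_def by (rule sq_identity)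
    then have "(norm m)\<^sup>2 = (1 - a) * (norm xs)\<^sup>2 + a * (norm xa)\<^sup>2 - N" by simp
    ultimately show ?thesis by (rule ar_fm)
  qed
  obtain vg where vg: "g m = ereal vg" and vgle: "vg \<le> (1 - a) * gs + a * gx - \<mu>g / 2 * N"
    using sc_real[OF scg gnm gs gx a] unfolding m_def N_def by blast
  have Km: "K m = (1 - a) *\<^sub>R K xs + a *\<^sub>R K xa" unfolding m_def by (rule lin_comb[OF lin])
  obtain vh where vh: "h (K m) = ereal vh" and vhle: "vh \<le> (1 - a) * hs + a * hx"
    using sc_real[OF sc0[OF cvh] hnm hs hx a] unfolding Km by auto
  have "f m + vg + vh \<le> (1 - a) * (f xs + gs + hs) + a * (f xa + gx + hx) - (\<mu>f + \<mu>g) / 2 * N"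
  proof -
    have "(1 - a) * (f xs + gs + hs) + a * (f xa + gx + hx) - (\<mu>f + \<mu>g) / 2 * N
      = ((1 - a) * f xs + a * f xa - \<mu>f / 2 * N) + ((1 - a) * gs + a * gx - \<mu>g / 2 * N) + ((1 - a) * hs + a * hx)"
      by algebra
    then show ?thesis using fm vgle vhle by linarith
  qed
  also have "\<dots> = f xa + gx + hx - (\<mu>f + \<mu>g) / 2 * N" unfolding Preal by (simp add: algebra_simps)
  also have "\<dots> < f xa + gx + hx"
  proof -
    have "\<mu>f + \<mu>g > 0" using mus by auto
    then show ?thesis using Npos by simp
  qed
  finally have "P m < P xa" unfolding P_def using vg vh gx hx by simp
  then show False using Pxa[of m] by simp
qed


lemma dual_unique:
  fixes K :: "'x::euclidean_space \<Rightarrow> 'u::euclidean_space"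
    and f :: "'x \<Rightarrow> real" and g :: "'x \<Rightarrow> ereal" and h :: "'u \<Rightarrow> ereal"
  assumes lin: "linear K"
    and cf: "convex_on UNIV f" and df: "\<And>y. (f has_derivative (\<lambda>d. gradf y \<bullet> d)) (at y)"
    and gnm: "\<And>y. g y \<noteq> -\<infinity>" and hpr: "proper_fun h"
    and k1: "- gradf xa - adjoint K ua \<in> subdiff g xa"
    and uh: "ua \<in> subdiff h (K xa)"
    and sch: "strongly_convex_fun \<mu>h (conjugate h)" and muh: "\<mu>h > 0"
    and usmin: "\<And>v. conjugate (\<lambda>y. ereal (f y) + g y) (- adjoint K us) + conjugate h us
             \<le> conjugate (\<lambda>y. ereal (f y) + g y) (- adjoint K v) + conjugate h v"
  shows "us = ua"
proof (rule ccontr)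
  assume ne: "us \<noteq> ua"
  define fg where "fg = (\<lambda>y. ereal (f y) + g y)"
  define Ks where "Ks = adjoint K"
  have linKs: "linear Ks" unfolding Ks_def by (rule adjoint_linear[OF lin])
  define Dl where "Dl = (\<lambda>v. conjugate fg (- Ks v) + conjugate h v)"
  have hnm: "\<And>y. h y \<noteq> -\<infinity>" using hpr unfolding proper_fun_def by blast
  have fgnm: "fg y \<noteq> -\<infinity>" for y unfolding fg_def using gnm[of y] by (cases "g y") auto
  have gxa: "g xa \<noteq> \<infinity>" and sgi: "\<And>y. g xa + ereal ((- gradf xa - adjoint K ua) \<bullet> (y - xa)) \<le> g y"
    using k1 unfolding subdiff_def by auto
  have hxa: "h (K xa) \<noteq> \<infinity>" using uh unfolding subdiff_def by auto
  obtain gx where gx: "g xa = ereal gx" using gxa gnm by (rule ereal_not_inf_real)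
  obtain hx where hx: "h (K xa) = ereal hx" using hxa hnm by (rule ereal_not_inf_real)
  have fgpr: "proper_fun fg" unfolding proper_fun_def
  proof (intro conjI allI exI)
    show "fg y \<noteq> -\<infinity>" for y by (rule fgnm)
    show "fg xa \<noteq> \<infinity>" unfolding fg_def using gx by simp
  qed
  have sfg: "- Ks ua \<in> subdiff fg xa"
    unfolding subdiff_def
  proof (intro CollectI conjI allI)
    show "fg xa < \<infinity>" unfolding fg_def using gx by simp
    fix y
    show "fg xa + ereal (- Ks ua \<bullet> (y - xa)) \<le> fg y"
    proof (cases "g y = \<infinity>")
      case True then show ?thesis unfolding fg_def using gx by simp
    next
      case False
      obtain gy where gy: "g y = ereal gy" using False gnm by (rule ereal_not_inf_real)
      have 1: "f xa + gradf xa \<bullet> (y - xa) \<le> f y" by (rule grad_ineq[OF cf df])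
      have 2: "gx + (- gradf xa - adjoint K ua) \<bullet> (y - xa) \<le> gy" using sgi[of y] gx gy by simp
      have 3: "gradf xa \<bullet> (y - xa) + (- gradf xa - adjoint K ua) \<bullet> (y - xa) = - Ks ua \<bullet> (y - xa)"
        unfolding Ks_def by (simp add: inner_diff_left)
      have "f xa + gx + - Ks ua \<bullet> (y - xa) \<le> f y + gy" using 1 2 3 by linarith
      then show ?thesis unfolding fg_def using gx gy by simp
    qed
  qed
  have c1: "conjugate fg (- Ks ua) = ereal (xa \<bullet> (- Ks ua)) - fg xa" by (rule fenchel_eq[OF sfg fgnm])
  have c2: "conjugate h ua = ereal (K xa \<bullet> ua) - h (K xa)" by (rule fenchel_eq[OF uh hnm])
  have c1r: "conjugate fg (- Ks ua) = ereal (xa \<bullet> (- Ks ua) - f xa - gx)"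
  proof -
    have "ereal (xa \<bullet> (- Ks ua)) - fg xa = ereal (xa \<bullet> (- Ks ua) - f xa - gx)" unfolding fg_def using gx by simp
    then show ?thesis using c1 by simp
  qed
  have c2r: "conjugate h ua = ereal (K xa \<bullet> ua - hx)"
  proof -
    have "ereal (K xa \<bullet> ua) - h (K xa) = ereal (K xa \<bullet> ua - hx)" using hx by simp
    then show ?thesis using c2 by simp
  qed
  have adj0: "xa \<bullet> (- Ks v) + K xa \<bullet> v = 0" for v
    unfolding Ks_def using adj_swap[OF lin, of xa v] by simp
  define m0 where "m0 = - (f xa + gx + hx)"
  have Dua: "Dl ua = ereal m0"
    unfolding Dl_def c1r c2r m0_def using adj0[of ua] by (simp add: algebra_simps)
  have lower: "ereal m0 \<le> Dl v" for v
  proof -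
    have "ereal (xa \<bullet> (- Ks v)) - fg xa \<le> conjugate fg (- Ks v)" by (rule conj_ge)
    moreover have "ereal (K xa \<bullet> v) - h (K xa) \<le> conjugate h v" by (rule conj_ge)
    ultimately have "(ereal (xa \<bullet> (- Ks v)) - fg xa) + (ereal (K xa \<bullet> v) - h (K xa)) \<le> Dl v"
      unfolding Dl_def by (rule add_mono)
    moreover have "(ereal (xa \<bullet> (- Ks v)) - fg xa) + (ereal (K xa \<bullet> v) - h (K xa)) = ereal m0"
      unfolding fg_def m0_def using gx hx adj0[of v] by (simp add: algebra_simps)
    ultimately show ?thesis by simp
  qed
  have Dus: "Dl us = ereal m0" using usmin[of ua, folded fg_def Ks_def, folded Dl_def] lower[of us] Dua
    unfolding Dl_def by simp
  have cfn: "conjugate fg (- Ks us) \<noteq> \<infinity>"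
  proof
    assume "conjugate fg (- Ks us) = \<infinity>"
    then have "Dl us = \<infinity>" unfolding Dl_def using conj_nm[OF hpr, of us] by simp
    then show False using Dus by simp
  qed
  obtain cs where cs: "conjugate fg (- Ks us) = ereal cs" using cfn conj_nm[OF fgpr] by (rule ereal_not_inf_real)
  have chn: "conjugate h us \<noteq> \<infinity>"
  proof
    assume "conjugate h us = \<infinity>"
    then have "Dl us = \<infinity>" unfolding Dl_def using cs by simp
    then show False using Dus by simp
  qed
  obtain hs where hs: "conjugate h us = ereal hs" using chn conj_nm[OF hpr] by (rule ereal_not_inf_real)
  have sum_s: "cs + hs = m0" using Dus cs hs unfolding Dl_def by simp
  have sum_a: "(xa \<bullet> (- Ks ua) - f xa - gx) + (K xa \<bullet> ua - hx) = m0"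
    using Dua c1r c2r unfolding Dl_def by simp
  define a :: real where "a = 1 / 2"
  have a: "0 < a" "a < 1" unfolding a_def by auto
  define m where "m = (1 - a) *\<^sub>R us + a *\<^sub>R ua"
  define N where "N = a * (1 - a) * (norm (us - ua))\<^sup>2"
  have Npos: "N > 0" unfolding N_def a_def using ne by simp
  have Ksm: "- Ks m = (1 - a) *\<^sub>R (- Ks us) + a *\<^sub>R (- Ks ua)"
    unfolding m_def using lin_comb[OF linKs, of a us ua] by (simp add: algebra_simps)
  obtain v1 where v1: "conjugate fg (- Ks m) = ereal v1"
      and v1le: "v1 \<le> (1 - a) * cs + a * (xa \<bullet> (- Ks ua) - f xa - gx)"
    using sc_real[OF sc0[OF conj_convex[OF fgnm]] conj_nm[OF fgpr] cs c1r a] unfolding Ksm[symmetric] by auto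
  obtain v2 where v2: "conjugate h m = ereal v2"
      and v2le: "v2 \<le> (1 - a) * hs + a * (K xa \<bullet> ua - hx) - \<mu>h / 2 * N"
    using sc_real[OF sch conj_nm[OF hpr] hs c2r a] unfolding m_def[symmetric] N_def by auto
  have "v1 + v2 \<le> (1 - a) * (cs + hs) + a * ((xa \<bullet> (- Ks ua) - f xa - gx) + (K xa \<bullet> ua - hx)) - \<mu>h / 2 * N"
    using v1le v2le by (simp add: algebra_simps)
  also have "\<dots> = m0 - \<mu>h / 2 * N" unfolding sum_s sum_a by (simp add: algebra_simps)
  also have "\<dots> < m0" using Npos muh by simp
  finally have "Dl m < ereal m0" unfolding Dl_def using v1 v2 by simp
  then show False using lower[of m] by simp
qed


lemma gen_id:
  fixes X Y Z T :: real
  shows "X \<noteq> 0 \<Longrightarrow> Y \<noteq> 0 \<Longrightarrow> T \<noteq> 0 \<Longrightarrow> (1 - Z / (X * Y)) * (X * (Y / T)) = X * (Y / T) - Z / T"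
  by (simp add: field_simps)

lemma step_scalar:
  fixes na nb nd ne nw nr nKr kad kab bd aw nA nB nK \<gamma> \<tau> \<omega> \<omega>r \<zeta> \<mu>g \<mu>h \<rho> c :: real
  assumes pos: "\<gamma> > 0" "\<tau> > 0" "\<omega> \<ge> 0" "\<omega>r \<ge> 0" "0 \<le> \<zeta>" "\<zeta> \<le> 1" "\<mu>g \<ge> 0" "\<mu>h \<ge> 0"
    and step: "\<gamma> * \<tau> * ((1 - \<zeta>) * nK\<^sup>2 + \<omega>r) \<le> 1"
    and nn: "na \<ge> 0" "nb \<ge> 0" "nd \<ge> 0" "ne \<ge> 0" "nw \<ge> 0" "nr \<ge> 0" "nKr \<ge> 0"
    and eA: "nA = na - 2 * \<gamma> * (kab - kad) + \<gamma>\<^sup>2 * nKr"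
    and eB: "(1 + \<omega>) * nB + \<omega> / (1 + \<omega>) * nr = \<omega> * nd + nb"
    and er: "nr = nb - 2 * bd + nd"
    and eK: "nKr \<le> nK\<^sup>2 * nr"
    and G: "(1 + \<gamma> * \<mu>g) * na \<le> aw - \<gamma> * kad"
    and H: "(1 + \<tau> * \<mu>h) * nb \<le> bd + \<tau> * kab"
    and AM: "2 * aw - (1 + 2 * \<gamma> * \<mu>g) * na \<le> nw / (1 + 2 * \<gamma> * \<mu>g)"
    and W: "nw \<le> \<rho> * ne" and rho: "\<rho> / (1 + \<gamma> * \<mu>g) \<le> c"
    and c3: "1 - 2 * \<tau> * \<mu>h / ((1 + \<omega>) * (1 + 2 * \<tau> * \<mu>h)) \<le> c"
  shows "(1 / \<gamma>) * nA + (1 + \<omega>) * (1 / \<tau> + 2 * \<mu>h) * nB + \<gamma> * (\<omega>r * nr - \<zeta> * nKr)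
           + (1 / \<tau> + 2 * \<mu>h) * \<omega> / (1 + \<omega>) * nr
         \<le> c * ((1 / \<gamma>) * ne + (1 + \<omega>) * (1 / \<tau> + 2 * \<mu>h) * nd)"
proof -
  define C where "C = 1 / \<tau> + 2 * \<mu>h"
  have Cpos: "C > 0" unfolding C_def using pos by (simp add: add_pos_nonneg)
  have S1: "\<gamma> * ((1 - \<zeta>) * nKr + \<omega>r * nr) \<le> (1 / \<tau>) * nr"
  proof -
    have "(1 - \<zeta>) * nKr \<le> (1 - \<zeta>) * (nK\<^sup>2 * nr)" using eK pos by (simp add: mult_left_mono)
    then have "(1 - \<zeta>) * nKr + \<omega>r * nr \<le> ((1 - \<zeta>) * nK\<^sup>2 + \<omega>r) * nr" by (simp add: algebra_simps)
    then have "\<gamma> * ((1 - \<zeta>) * nKr + \<omega>r * nr) \<le> \<gamma> * (((1 - \<zeta>) * nK\<^sup>2 + \<omega>r) * nr)"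
      using pos by (simp add: mult_left_mono)
    also have "\<dots> = (\<gamma> * ((1 - \<zeta>) * nK\<^sup>2 + \<omega>r)) * nr" by simp
    also have "\<dots> \<le> (1 / \<tau>) * nr"
    proof (rule mult_right_mono)
      show "\<gamma> * ((1 - \<zeta>) * nK\<^sup>2 + \<omega>r) \<le> 1 / \<tau>" using step pos by (simp add: field_simps)
    qed (use nn in auto)
    finally show ?thesis .
  qed
  have S2: "(1 / \<gamma>) * nA + \<gamma> * (\<omega>r * nr - \<zeta> * nKr)
      = (1 / \<gamma>) * na - 2 * (kab - kad) + \<gamma> * ((1 - \<zeta>) * nKr + \<omega>r * nr)"
    unfolding eA using pos by (simp add: field_simps power2_eq_square)
  have S3: "(1 + \<omega>) * C * nB + C * \<omega> / (1 + \<omega>) * nr = C * (\<omega> * nd + nb)"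
  proof -
    have "(1 + \<omega>) * C * nB + C * \<omega> / (1 + \<omega>) * nr = C * ((1 + \<omega>) * nB + \<omega> / (1 + \<omega>) * nr)"
      by (simp add: algebra_simps)
    then show ?thesis unfolding eB .
  qed
  have S4: "(1 / \<tau>) * nr \<le> (1 / \<tau>) * nd - (1 / \<tau>) * nb + 2 * kab - 2 * \<mu>h * nb"
  proof -
    have "(1 / \<tau>) * ((1 + \<tau> * \<mu>h) * nb) \<le> (1 / \<tau>) * (bd + \<tau> * kab)"
      by (rule mult_left_mono[OF H]) (use pos in simp)
    moreover have e1: "(1 / \<tau>) * ((1 + \<tau> * \<mu>h) * nb) = (1 / \<tau>) * nb + \<mu>h * nb" using pos by (simp add: field_simps)
    moreover have e2: "(1 / \<tau>) * (bd + \<tau> * kab) = (1 / \<tau>) * bd + kab" using pos by (simp add: field_simps)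
    moreover have e3: "(1 / \<tau>) * nr = (1 / \<tau>) * nb - 2 * ((1 / \<tau>) * bd) + (1 / \<tau>) * nd"
      unfolding er by (simp add: algebra_simps add_divide_distrib diff_divide_distrib)
    ultimately show ?thesis by linarith
  qed
  have S5: "(1 / \<gamma>) * na + 2 * kad \<le> (1 / \<gamma>) * (nw / (1 + 2 * \<gamma> * \<mu>g))"
  proof -
    have "\<gamma> * kad \<le> aw - (1 + \<gamma> * \<mu>g) * na" using G by simp
    then have "na + 2 * \<gamma> * kad \<le> 2 * aw - (1 + 2 * \<gamma> * \<mu>g) * na" by (simp add: algebra_simps)
    also have "\<dots> \<le> nw / (1 + 2 * \<gamma> * \<mu>g)" by (rule AM)
    finally have "na + 2 * \<gamma> * kad \<le> nw / (1 + 2 * \<gamma> * \<mu>g)" .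
    then have "(1 / \<gamma>) * (na + 2 * \<gamma> * kad) \<le> (1 / \<gamma>) * (nw / (1 + 2 * \<gamma> * \<mu>g))"
      by (rule mult_left_mono) (use pos in simp)
    moreover have "(1 / \<gamma>) * (na + 2 * \<gamma> * kad) = (1 / \<gamma>) * na + 2 * kad" using pos by (simp add: field_simps)
    ultimately show ?thesis by linarith
  qed
  have S6: "nw / (1 + 2 * \<gamma> * \<mu>g) \<le> c * ne"
  proof -
    have p1: "1 + \<gamma> * \<mu>g > 0" using pos by (simp add: add_pos_nonneg)
    have gm: "\<gamma> * \<mu>g \<ge> 0" using pos by simp
    have p2: "1 + 2 * \<gamma> * \<mu>g > 0" using gm by simp
    have "nw / (1 + 2 * \<gamma> * \<mu>g) \<le> nw / (1 + \<gamma> * \<mu>g)"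
      using nn p1 p2 gm by (intro divide_left_mono) auto
    also have "\<dots> \<le> \<rho> * ne / (1 + \<gamma> * \<mu>g)" using W p1 by (simp add: divide_right_mono)
    also have "\<dots> = (\<rho> / (1 + \<gamma> * \<mu>g)) * ne" by simp
    also have "\<dots> \<le> c * ne" by (rule mult_right_mono[OF rho]) (use nn in simp)
    finally show ?thesis .
  qed
  have S7: "(1 / \<tau> + C * \<omega>) * nd \<le> c * ((1 + \<omega>) * C * nd)"
  proof -
    have e: "(1 - 2 * \<tau> * \<mu>h / ((1 + \<omega>) * (1 + 2 * \<tau> * \<mu>h))) * ((1 + \<omega>) * C) = 1 / \<tau> + C * \<omega>"
    proof -
      have o1: "1 + \<omega> \<noteq> 0" using pos by simp
      have "\<tau> * \<mu>h \<ge> 0" using pos by simp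
      then have t1: "1 + 2 * \<tau> * \<mu>h \<noteq> 0" by simp
      have t2: "\<tau> \<noteq> 0" using pos by simp
      have Ceq: "C = (1 + 2 * \<tau> * \<mu>h) / \<tau>" unfolding C_def using t2 by (simp add: field_simps)
      have "(1 - 2 * \<tau> * \<mu>h / ((1 + \<omega>) * (1 + 2 * \<tau> * \<mu>h))) * ((1 + \<omega>) * ((1 + 2 * \<tau> * \<mu>h) / \<tau>))
          = (1 + \<omega>) * ((1 + 2 * \<tau> * \<mu>h) / \<tau>) - 2 * \<tau> * \<mu>h / \<tau>"
        by (rule gen_id[OF o1 t1 t2])
      also have "\<dots> = 1 / \<tau> + C * \<omega>" unfolding C_def using t2 by (simp add: field_simps)
      finally show ?thesis unfolding Ceq .
    qed
    have "(1 - 2 * \<tau> * \<mu>h / ((1 + \<omega>) * (1 + 2 * \<tau> * \<mu>h))) * ((1 + \<omega>) * C) \<le> c * ((1 + \<omega>) * C)"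
      using c3 Cpos pos by (intro mult_right_mono) auto
    then have "(1 / \<tau> + C * \<omega>) \<le> c * ((1 + \<omega>) * C)" unfolding e .
    then have "(1 / \<tau> + C * \<omega>) * nd \<le> c * ((1 + \<omega>) * C) * nd" using nn by (simp add: mult_right_mono)
    then show ?thesis by (simp add: algebra_simps)
  qed
  have "(1 / \<gamma>) * nA + (1 + \<omega>) * C * nB + \<gamma> * (\<omega>r * nr - \<zeta> * nKr) + C * \<omega> / (1 + \<omega>) * nr
      = ((1 / \<gamma>) * nA + \<gamma> * (\<omega>r * nr - \<zeta> * nKr)) + ((1 + \<omega>) * C * nB + C * \<omega> / (1 + \<omega>) * nr)"
    by simp
  also have "\<dots> \<le> (1 / \<gamma>) * na - 2 * (kab - kad) + (1 / \<tau>) * nr + C * (\<omega> * nd + nb)"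
    unfolding S2 S3 using S1 by simp
  also have "\<dots> \<le> (1 / \<gamma>) * na - 2 * (kab - kad) + ((1 / \<tau>) * nd - (1 / \<tau>) * nb + 2 * kab - 2 * \<mu>h * nb) + C * (\<omega> * nd + nb)"
    using S4 by simp
  also have "\<dots> = ((1 / \<gamma>) * na + 2 * kad) + (1 / \<tau> + C * \<omega>) * nd"
    unfolding C_def by (simp add: algebra_simps)
  also have "\<dots> \<le> (1 / \<gamma>) * (c * ne) + c * ((1 + \<omega>) * C * nd)"
  proof -
    have "(1 / \<gamma>) * (nw / (1 + 2 * \<gamma> * \<mu>g)) \<le> (1 / \<gamma>) * (c * ne)"
      by (rule mult_left_mono[OF S6]) (use pos in simp)
    then show ?thesis using S5 S7 by linarith
  qed
  also have "\<dots> = c * ((1 / \<gamma>) * ne + (1 + \<omega>) * C * nd)" by (simp add: algebra_simps)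
  finally show ?thesis unfolding C_def by (simp add: algebra_simps)
qed


lemma norm_sq_add_scaled:
  fixes d r :: "'a::real_inner"
  shows "(norm (d + t *\<^sub>R r))\<^sup>2 = (norm d)\<^sup>2 + 2 * t * (d \<bullet> r) + t\<^sup>2 * (norm r)\<^sup>2"
  unfolding power2_norm_eq_inner
  by (simp add: inner_add_left inner_add_right inner_commute algebra_simps power2_eq_square)

lemma eB_alg:
  fixes w D X R :: real
  assumes "1 + w \<noteq> 0"
  shows "(1 + w) * (D + 2 * (1 / (1 + w)) * X + (1 / (1 + w))\<^sup>2 * R) + w / (1 + w) * R = w * D + (D + 2 * X + R)"
proof -
  define t where "t = 1 / (1 + w)"
  have t1: "t * (1 + w) = 1" unfolding t_def using assms by simp
  have wt: "w / (1 + w) = w * t" unfolding t_def by simp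
  have "(1 + w) * (D + 2 * t * X + t\<^sup>2 * R) + w * t * R = w * D + (D + 2 * X + R)"
    using t1 by algebra
  then show ?thesis unfolding wt t_def .
qed

lemma det_step:
  fixes K :: "'x::euclidean_space \<Rightarrow> 'u::euclidean_space"
    and x xs xh gx gs :: 'x and u us up :: 'u
  assumes lin: "linear K"
    and pos: "\<gamma> > 0" "\<tau> > 0" "\<omega> \<ge> 0" "\<omega>r \<ge> 0" "0 \<le> \<zeta>" "\<zeta> \<le> 1" "\<mu>g \<ge> 0" "\<mu>h \<ge> 0"
    and step: "\<gamma> * \<tau> * ((1 - \<zeta>) * nK\<^sup>2 + \<omega>r) \<le> 1"
    and nK: "\<And>v. norm (adjoint K v) \<le> nK * norm v" and nK0: "nK \<ge> 0"
    and G: "(1 + \<gamma> * \<mu>g) * (norm (xh - xs))\<^sup>2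
            \<le> (xh - xs) \<bullet> ((x - \<gamma> *\<^sub>R gx - \<gamma> *\<^sub>R adjoint K u) - (xs - \<gamma> *\<^sub>R gs - \<gamma> *\<^sub>R adjoint K us))"
    and H: "(1 + \<tau> * \<mu>h) * (norm (up - us))\<^sup>2 \<le> (up - us) \<bullet> ((u + \<tau> *\<^sub>R K xh) - (us + \<tau> *\<^sub>R K xs))"
    and W: "(norm ((x - \<gamma> *\<^sub>R gx) - (xs - \<gamma> *\<^sub>R gs)))\<^sup>2 \<le> \<rho> * (norm (x - xs))\<^sup>2"
    and rho: "\<rho> / (1 + \<gamma> * \<mu>g) \<le> c"
    and c3: "1 - 2 * \<tau> * \<mu>h / ((1 + \<omega>) * (1 + 2 * \<tau> * \<mu>h)) \<le> c"
  shows "(1 / \<gamma>) * (norm (xh - \<gamma> *\<^sub>R adjoint K (up - u) - xs))\<^sup>2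
         + (1 + \<omega>) * (1 / \<tau> + 2 * \<mu>h) * (norm (u + (1 / (1 + \<omega>)) *\<^sub>R (up - u) - us))\<^sup>2
         + \<gamma> * (\<omega>r * (norm (up - u))\<^sup>2 - \<zeta> * (norm (adjoint K (up - u)))\<^sup>2)
         + (1 / \<tau> + 2 * \<mu>h) * \<omega> / (1 + \<omega>) * (norm (up - u))\<^sup>2
       \<le> c * ((1 / \<gamma>) * (norm (x - xs))\<^sup>2 + (1 + \<omega>) * (1 / \<tau> + 2 * \<mu>h) * (norm (u - us))\<^sup>2)"
proof -
  define a where "a = xh - xs"
  define b where "b = up - us"
  define d where "d = u - us"
  define r where "r = up - u"
  define w where "w = (x - \<gamma> *\<^sub>R gx) - (xs - \<gamma> *\<^sub>R gs)"
  define Ks where "Ks = adjoint K"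
  have rbd: "r = b - d" unfolding r_def b_def d_def by simp
  have adj: "z \<bullet> Ks v = K z \<bullet> v" for z v unfolding Ks_def by (rule adjoint_works[OF lin])
  have kappa: "1 + 2 * \<gamma> * \<mu>g > 0" using pos by (simp add: add_pos_nonneg)
  have eA: "(norm (xh - \<gamma> *\<^sub>R Ks r - xs))\<^sup>2 = (norm a)\<^sup>2 - 2 * \<gamma> * (K a \<bullet> b - K a \<bullet> d) + \<gamma>\<^sup>2 * (norm (Ks r))\<^sup>2"
  proof -
    have e: "xh - \<gamma> *\<^sub>R Ks r - xs = 1 *\<^sub>R a - \<gamma> *\<^sub>R Ks r" unfolding a_def by simp
    have "(norm (xh - \<gamma> *\<^sub>R Ks r - xs))\<^sup>2 = (norm a)\<^sup>2 - 2 * \<gamma> * (Ks r \<bullet> a) + \<gamma>\<^sup>2 * (norm (Ks r))\<^sup>2"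
      unfolding e norm_sq_comb by simp
    moreover have "Ks r \<bullet> a = K a \<bullet> b - K a \<bullet> d"
    proof -
      have "Ks r \<bullet> a = a \<bullet> Ks r" by (rule inner_commute)
      also have "\<dots> = K a \<bullet> r" by (rule adj)
      finally show ?thesis unfolding rbd by (simp add: inner_diff_right)
    qed
    ultimately show ?thesis by simp
  qed
  have eB: "(1 + \<omega>) * (norm (u + (1 / (1 + \<omega>)) *\<^sub>R r - us))\<^sup>2 + \<omega> / (1 + \<omega>) * (norm r)\<^sup>2
      = \<omega> * (norm d)\<^sup>2 + (norm b)\<^sup>2"
  proof -
    have o1: "1 + \<omega> \<noteq> 0" using pos by simp
    have "u + (1 / (1 + \<omega>)) *\<^sub>R r - us = d + (1 / (1 + \<omega>)) *\<^sub>R r" unfolding d_def by simp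
    then have 1: "(norm (u + (1 / (1 + \<omega>)) *\<^sub>R r - us))\<^sup>2
        = (norm d)\<^sup>2 + 2 * (1 / (1 + \<omega>)) * (d \<bullet> r) + (1 / (1 + \<omega>))\<^sup>2 * (norm r)\<^sup>2"
      using norm_sq_add_scaled by metis
    have "b = d + 1 *\<^sub>R r" unfolding rbd by simp
    then have 2: "(norm b)\<^sup>2 = (norm d)\<^sup>2 + 2 * (d \<bullet> r) + (norm r)\<^sup>2"
      using norm_sq_add_scaled[of d 1 r] by simp
    show ?thesis unfolding 1 2 by (rule eB_alg[OF o1])
  qed
  have er: "(norm r)\<^sup>2 = (norm b)\<^sup>2 - 2 * (b \<bullet> d) + (norm d)\<^sup>2"
    unfolding rbd power2_norm_eq_inner by (simp add: inner_diff_left inner_diff_right inner_commute)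
  have eK: "(norm (Ks r))\<^sup>2 \<le> nK\<^sup>2 * (norm r)\<^sup>2"
  proof -
    have "norm (Ks r) \<le> nK * norm r" unfolding Ks_def by (rule nK)
    then have "(norm (Ks r))\<^sup>2 \<le> (nK * norm r)\<^sup>2" by (rule power_mono) simp
    then show ?thesis by (simp add: power_mult_distrib)
  qed
  have G': "(1 + \<gamma> * \<mu>g) * (norm a)\<^sup>2 \<le> a \<bullet> w - \<gamma> * (K a \<bullet> d)"
  proof -
    have "(x - \<gamma> *\<^sub>R gx - \<gamma> *\<^sub>R adjoint K u) - (xs - \<gamma> *\<^sub>R gs - \<gamma> *\<^sub>R adjoint K us) = w - \<gamma> *\<^sub>R Ks d"
      unfolding w_def Ks_def d_def by (simp add: linear_diff[OF adjoint_linear[OF lin]] algebra_simps)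
    moreover have "a \<bullet> (w - \<gamma> *\<^sub>R Ks d) = a \<bullet> w - \<gamma> * (K a \<bullet> d)" by (simp add: inner_diff_right adj)
    ultimately show ?thesis using G unfolding a_def by simp
  qed
  have H': "(1 + \<tau> * \<mu>h) * (norm b)\<^sup>2 \<le> b \<bullet> d + \<tau> * (K a \<bullet> b)"
  proof -
    have "(u + \<tau> *\<^sub>R K xh) - (us + \<tau> *\<^sub>R K xs) = d + \<tau> *\<^sub>R K a"
      unfolding d_def a_def by (simp add: linear_diff[OF lin] algebra_simps)
    moreover have "b \<bullet> (d + \<tau> *\<^sub>R K a) = b \<bullet> d + \<tau> * (K a \<bullet> b)" by (simp add: inner_add_right inner_commute)
    ultimately show ?thesis using H unfolding b_def by simp
  qed
  have AM: "2 * (a \<bullet> w) - (1 + 2 * \<gamma> * \<mu>g) * (norm a)\<^sup>2 \<le> (norm w)\<^sup>2 / (1 + 2 * \<gamma> * \<mu>g)"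
  proof -
    define k where "k = 1 + 2 * \<gamma> * \<mu>g"
    have kp: "k > 0" unfolding k_def by (rule kappa)
    have "0 \<le> (norm (1 *\<^sub>R w - k *\<^sub>R a))\<^sup>2" by simp
    also have "\<dots> = (norm w)\<^sup>2 - 2 * k * (a \<bullet> w) + k\<^sup>2 * (norm a)\<^sup>2" using norm_sq_comb[of 1 w k a] by simp
    finally have "k * (2 * (a \<bullet> w) - k * (norm a)\<^sup>2) \<le> (norm w)\<^sup>2" by (simp add: algebra_simps power2_eq_square)
    then show ?thesis unfolding k_def[symmetric] using kp by (simp add: field_simps)
  qed
  have W': "(norm w)\<^sup>2 \<le> \<rho> * (norm (x - xs))\<^sup>2" unfolding w_def by (rule W)
  have main: "(1 / \<gamma>) * (norm (xh - \<gamma> *\<^sub>R Ks r - xs))\<^sup>2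
         + (1 + \<omega>) * (1 / \<tau> + 2 * \<mu>h) * (norm (u + (1 / (1 + \<omega>)) *\<^sub>R r - us))\<^sup>2
         + \<gamma> * (\<omega>r * (norm r)\<^sup>2 - \<zeta> * (norm (Ks r))\<^sup>2)
         + (1 / \<tau> + 2 * \<mu>h) * \<omega> / (1 + \<omega>) * (norm r)\<^sup>2
       \<le> c * ((1 / \<gamma>) * (norm (x - xs))\<^sup>2 + (1 + \<omega>) * (1 / \<tau> + 2 * \<mu>h) * (norm d)\<^sup>2)"
    by (rule step_scalar[OF pos step _ _ _ _ _ _ _ eA eB er eK G' H' AM W' rho c3]) auto
  then show ?thesis unfolding r_def Ks_def d_def .
qed


locale rp =
  fixes M :: "'s measure"
    and K :: "'x::euclidean_space \<Rightarrow> 'u::euclidean_space"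
    and f :: "'x \<Rightarrow> real" and gradf :: "'x \<Rightarrow> 'x"
    and g :: "'x \<Rightarrow> ereal" and h :: "'u \<Rightarrow> ereal"
    and Lf \<mu>f \<mu>g \<mu>h \<gamma> \<tau> \<omega> \<omega>r \<zeta> :: real
    and x0 :: 'x and u0 :: 'u
    and x xhat :: "nat \<Rightarrow> 's \<Rightarrow> 'x" and u R :: "nat \<Rightarrow> 's \<Rightarrow> 'u"
    and xs :: 'x and us :: 'u
  assumes prob: "prob_space M"
    and lin: "linear K" and Knz: "K \<noteq> (\<lambda>_. 0)"
    and cf: "convex_on UNIV f"
    and df: "\<And>y. (f has_derivative (\<lambda>d. gradf y \<bullet> d)) (at y)"
    and Lpos: "Lf > 0" and lip: "\<And>y z. norm (gradf y - gradf z) \<le> Lf * norm (y - z)"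
    and gpr: "proper_fun g" and gcl: "closed_fun g" and gcv: "convex_fun g"
    and hpr: "proper_fun h" and hcl: "closed_fun h" and hcv: "convex_fun h"
    and muf0: "\<mu>f \<ge> 0" and mug0: "\<mu>g \<ge> 0" and muh0: "\<mu>h \<ge> 0"
    and scf: "convex_on UNIV (\<lambda>y. f y - \<mu>f / 2 * (norm y)\<^sup>2)"
    and scg: "strongly_convex_fun \<mu>g g"
    and sch: "strongly_convex_fun \<mu>h (conjugate h)"
    and kkt: "\<exists>xa ua. - gradf xa - adjoint K ua \<in> subdiff g xa \<and> K xa \<in> subdiff (conjugate h) ua"
    and xsmin: "\<And>y. ereal (f xs) + g xs + h (K xs) \<le> ereal (f y) + g y + h (K y)"
    and usmin: "\<And>v. conjugate (\<lambda>y. ereal (f y) + g y) (- adjoint K us) + conjugate h us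
             \<le> conjugate (\<lambda>y. ereal (f y) + g y) (- adjoint K v) + conjugate h v"
    and om0: "\<omega> \<ge> 0" and omr0: "\<omega>r \<ge> 0" and ze0: "0 \<le> \<zeta>" and ze1: "\<zeta> \<le> 1"
    and mufg: "\<mu>f > 0 \<or> \<mu>g > 0" and muhp: "\<mu>h > 0"
    and gam: "0 < \<gamma>" and gamL: "\<gamma> < 2 / Lf" and tau: "\<tau> > 0"
    and stepc: "\<gamma> * \<tau> * ((1 - \<zeta>) * (onorm K)\<^sup>2 + \<omega>r) \<le> 1"
    and x0d: "x 0 = (\<lambda>s. x0)" and u0d: "u 0 = (\<lambda>s. u0)"
    and xhatd: "\<And>t s. xhat t s = prox \<gamma> g (x t s - \<gamma> *\<^sub>R gradf (x t s) - \<gamma> *\<^sub>R adjoint K (u t s))"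
    and ud: "\<And>t s. u (Suc t) s = u t s + (1 / (1 + \<omega>)) *\<^sub>R R t s"
    and xd: "\<And>t s. x (Suc t) s = xhat t s - (\<gamma> * (1 + \<omega>)) *\<^sub>R (adjoint K (u (Suc t) s) - adjoint K (u t s))"
    and Rmeas: "\<And>t. R t \<in> borel_measurable M"
    and condR: "\<And>t. cond_exp_vec_eq M (gen_filtration M (\<lambda>i s. (x i s, u i s)) t) (R t)
               (\<lambda>s. prox \<tau> (conjugate h) (u t s + \<tau> *\<^sub>R K (xhat t s)) - u t s)"
    and var1: "\<And>t. AE s in M.
           nn_cond_exp M (gen_filtration M (\<lambda>i s. (x i s, u i s)) t)
             (\<lambda>s. ennreal ((norm (R t s - (prox \<tau> (conjugate h) (u t s + \<tau> *\<^sub>R K (xhat t s)) - u t s)))\<^sup>2)) s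
           \<le> ennreal (\<omega> * (norm (prox \<tau> (conjugate h) (u t s + \<tau> *\<^sub>R K (xhat t s)) - u t s))\<^sup>2)"
    and var2: "\<And>t. AE s in M.
           nn_cond_exp M (gen_filtration M (\<lambda>i s. (x i s, u i s)) t)
             (\<lambda>s. ennreal ((norm (adjoint K (R t s - (prox \<tau> (conjugate h) (u t s + \<tau> *\<^sub>R K (xhat t s)) - u t s))))\<^sup>2)) s
           + ennreal (\<zeta> * (norm (adjoint K (prox \<tau> (conjugate h) (u t s + \<tau> *\<^sub>R K (xhat t s)) - u t s)))\<^sup>2)
           \<le> ennreal (\<omega>r * (norm (prox \<tau> (conjugate h) (u t s + \<tau> *\<^sub>R K (xhat t s)) - u t s))\<^sup>2)"
begin

abbreviation "Ks \<equiv> adjoint K"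
definition "C = 1 / \<tau> + 2 * \<mu>h"
definition "Psi x' u' = (1 / \<gamma>) * (norm (x' - xs))\<^sup>2 + (1 + \<omega>) * C * (norm (u' - us))\<^sup>2"
definition "cc = max (max ((1 - \<gamma> * \<mu>f)\<^sup>2 / (1 + \<gamma> * \<mu>g)) ((\<gamma> * Lf - 1)\<^sup>2 / (1 + \<gamma> * \<mu>g)))
                 (1 - 2 * \<tau> * \<mu>h / ((1 + \<omega>) * (1 + 2 * \<tau> * \<mu>h)))"
definition "XH x' u' = prox \<gamma> g (x' - \<gamma> *\<^sub>R gradf x' - \<gamma> *\<^sub>R Ks u')"
definition "UP x' u' = prox \<tau> (conjugate h) (u' + \<tau> *\<^sub>R K (XH x' u'))"
definition "RR x' u' = UP x' u' - u'"

lemma gnm: "g y \<noteq> -\<infinity>" using gpr unfolding proper_fun_def by blast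
lemma hnm: "h y \<noteq> -\<infinity>" using hpr unfolding proper_fun_def by blast

lemma Cpos: "C > 0" unfolding C_def using tau muh0 by (simp add: add_pos_nonneg)

lemma conjh_proper: "proper_fun (conjugate h)"
proof -
  obtain xa ua where "K xa \<in> subdiff (conjugate h) ua" using kkt by blast
  then have "conjugate h ua \<noteq> \<infinity>" unfolding subdiff_def by auto
  then show ?thesis unfolding proper_fun_def using conj_nm[OF hpr] by blast
qed

sublocale PG: proxfun g \<gamma> \<mu>g
  using gpr gcl scg mug0 gam by unfold_locales auto

sublocale PH: proxfun "conjugate h" \<tau> \<mu>h
  using conjh_proper conj_closed[OF hpr] sch muh0 tau by unfold_locales auto

lemma sol: "- gradf xs - Ks us \<in> subdiff g xs \<and> K xs \<in> subdiff (conjugate h) us"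
proof -
  obtain xa ua where k1: "- gradf xa - Ks ua \<in> subdiff g xa" and k2: "K xa \<in> subdiff (conjugate h) ua"
    using kkt by blast
  have uh: "ua \<in> subdiff h (K xa)" by (rule subdiff_conj_inv[OF hpr hcl hcv k2])
  have "xs = xa" by (rule primal_unique[OF lin cf df gnm hnm k1 uh scf scg hcv muf0 mug0 mufg xsmin])
  moreover have "us = ua" by (rule dual_unique[OF lin cf df gnm hpr k1 uh sch muhp usmin])
  ultimately show ?thesis using k1 k2 by simp
qed

lemma xs_fix: "XH xs us = xs"
proof -
  have "prox \<gamma> g (xs + \<gamma> *\<^sub>R (- gradf xs - Ks us)) = xs" by (rule PG.prox_of_subgrad) (use sol in blast)
  moreover have "xs + \<gamma> *\<^sub>R (- gradf xs - Ks us) = xs - \<gamma> *\<^sub>R gradf xs - \<gamma> *\<^sub>R Ks us"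
    by (simp add: algebra_simps)
  ultimately show ?thesis unfolding XH_def by simp
qed

lemma us_fix: "UP xs us = us"
  unfolding UP_def xs_fix by (rule PH.prox_of_subgrad) (use sol in blast)

end

context rp begin

lemma blK: "bounded_linear K" using lin by (simp add: linear_conv_bounded_linear)
lemma blKs: "bounded_linear Ks" using adjoint_linear[OF lin] by (simp add: linear_conv_bounded_linear)

lemma nK0: "onorm K \<ge> 0" using onorm_pos_le[OF blK] .

lemma Kbound: "norm (K v) \<le> onorm K * norm v" using onorm[OF blK] .

lemma Ksbound: "norm (Ks v) \<le> onorm K * norm v"
proof -
  have "(norm (Ks v))\<^sup>2 = K (Ks v) \<bullet> v"
    by (simp add: power2_norm_eq_inner adjoint_works[OF lin])
  also have "\<dots> \<le> norm (K (Ks v)) * norm v" by (rule norm_cauchy_schwarz)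
  also have "\<dots> \<le> onorm K * norm (Ks v) * norm v" using Kbound[of "Ks v"] by (simp add: mult_right_mono)
  finally have "norm (Ks v) * norm (Ks v) \<le> (onorm K * norm v) * norm (Ks v)"
    by (simp add: power2_eq_square algebra_simps)
  then show ?thesis by (cases "norm (Ks v) = 0") (auto simp: nK0)
qed

lemma muf_le_L: "\<mu>f \<le> Lf"
proof -
  obtain b :: 'x where b: "b \<in> Basis" using nonempty_Basis by blast
  then have bn: "norm b = 1" by simp
  define \<phi> where "\<phi> = (\<lambda>y. f y - \<mu>f / 2 * (norm y)\<^sup>2)"
  have "(gradf b - gradf 0) \<bullet> (b - 0) \<ge> \<mu>f * (norm (b - 0))\<^sup>2"
  proof -
    have l1: "f 0 + gradf 0 \<bullet> (b - 0) \<le> f b" by (rule grad_ineq[OF cf df])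
    have l2: "f b + gradf b \<bullet> (0 - b) \<le> f 0" by (rule grad_ineq[OF cf df])
    have dq: "((\<lambda>y. \<mu>f / 2 * (norm y)\<^sup>2) has_derivative (\<lambda>d. (\<mu>f *\<^sub>R y) \<bullet> d)) (at y)" for y
    proof -
      have "((\<lambda>y. y \<bullet> y) has_derivative (\<lambda>d. y \<bullet> d + d \<bullet> y)) (at y)"
        by (rule has_derivative_inner[OF has_derivative_ident has_derivative_ident])
      then have "((\<lambda>y. \<mu>f / 2 * (y \<bullet> y)) has_derivative (\<lambda>d. \<mu>f / 2 * (y \<bullet> d + d \<bullet> y))) (at y)"
        by (rule has_derivative_mult_right)
      moreover have "(\<lambda>d. \<mu>f / 2 * (y \<bullet> d + d \<bullet> y)) = (\<lambda>d. (\<mu>f *\<^sub>R y) \<bullet> d)"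
        by (rule ext) (simp add: inner_commute algebra_simps)
      ultimately show ?thesis by (simp add: power2_norm_eq_inner)
    qed
    have dphi: "(\<phi> has_derivative (\<lambda>d. (gradf y - \<mu>f *\<^sub>R y) \<bullet> d)) (at y)" for y
    proof -
      have "(\<phi> has_derivative (\<lambda>d. gradf y \<bullet> d - (\<mu>f *\<^sub>R y) \<bullet> d)) (at y)"
        unfolding \<phi>_def by (intro has_derivative_diff df dq)
      moreover have "(\<lambda>d. gradf y \<bullet> d - (\<mu>f *\<^sub>R y) \<bullet> d) = (\<lambda>d. (gradf y - \<mu>f *\<^sub>R y) \<bullet> d)"
        by (rule ext) (simp add: inner_diff_left)
      ultimately show ?thesis by simp
    qed
    have p1: "\<phi> 0 + (gradf 0 - \<mu>f *\<^sub>R 0) \<bullet> (b - 0) \<le> \<phi> b" by (rule grad_ineq[OF scf[folded \<phi>_def] dphi])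
    have p2: "\<phi> b + (gradf b - \<mu>f *\<^sub>R b) \<bullet> (0 - b) \<le> \<phi> 0" by (rule grad_ineq[OF scf[folded \<phi>_def] dphi])
    have "(gradf b - \<mu>f *\<^sub>R b - gradf 0) \<bullet> b \<ge> 0" using p1 p2 by (simp add: inner_diff_left)
    then show ?thesis by (simp add: inner_diff_left power2_norm_eq_inner)
  qed
  moreover have "(gradf b - gradf 0) \<bullet> (b - 0) \<le> Lf * (norm (b - 0))\<^sup>2"
  proof -
    have "(gradf b - gradf 0) \<bullet> (b - 0) \<le> norm (gradf b - gradf 0) * norm (b - 0)" by (rule norm_cauchy_schwarz)
    also have "\<dots> \<le> Lf * norm (b - 0) * norm (b - 0)" using lip[of b 0] by (simp add: mult_right_mono)
    finally show ?thesis by (simp add: power2_eq_square)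
  qed
  ultimately show ?thesis using bn by simp
qed

lemma Wbound: "(norm ((x' - \<gamma> *\<^sub>R gradf x') - (xs - \<gamma> *\<^sub>R gradf xs)))\<^sup>2
    \<le> max ((1 - \<gamma> * \<mu>f)\<^sup>2) ((\<gamma> * Lf - 1)\<^sup>2) * (norm (x' - xs))\<^sup>2"
  by (rule grad_step[OF df lip scf muf0 muf_le_L gam])

lemma cc_lt1: "cc < 1"
proof -
  have gL: "\<gamma> * Lf < 2" using gamL Lpos gam by (simp add: field_simps)
  have gL0: "\<gamma> * Lf > 0" using gam Lpos by simp
  have gm: "0 \<le> \<gamma> * \<mu>f" using gam muf0 by simp
  have gmL: "\<gamma> * \<mu>f \<le> \<gamma> * Lf" using muf_le_L gam by simp
  have gg: "\<gamma> * \<mu>g \<ge> 0" using gam mug0 by simp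
  have a1: "(\<gamma> * Lf - 1)\<^sup>2 < 1"
  proof -
    have "\<bar>\<gamma> * Lf - 1\<bar> < 1" using gL gL0 by linarith
    then have "\<bar>\<gamma> * Lf - 1\<bar>\<^sup>2 < 1\<^sup>2" by (intro power_strict_mono) auto
    then show ?thesis by simp
  qed
  have a0: "(1 - \<gamma> * \<mu>f)\<^sup>2 \<le> 1"
  proof -
    have "\<bar>1 - \<gamma> * \<mu>f\<bar> \<le> 1" using gm gmL gL by linarith
    then have "\<bar>1 - \<gamma> * \<mu>f\<bar>\<^sup>2 \<le> 1\<^sup>2" by (intro power_mono) auto
    then show ?thesis by simp
  qed
  have t1: "(1 - \<gamma> * \<mu>f)\<^sup>2 / (1 + \<gamma> * \<mu>g) < 1"
  proof (cases "\<mu>g > 0")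
    case True
    then have "1 + \<gamma> * \<mu>g > 1" using gam by simp
    then show ?thesis using a0 by (simp add: divide_less_eq)
  next
    case False
    then have mg: "\<mu>g = 0" using mug0 by simp
    then have "\<mu>f > 0" using mufg by simp
    then have "\<gamma> * \<mu>f > 0" using gam by simp
    then have "\<bar>1 - \<gamma> * \<mu>f\<bar> < 1" using gmL gL by linarith
    then have "\<bar>1 - \<gamma> * \<mu>f\<bar>\<^sup>2 < 1\<^sup>2" by (intro power_strict_mono) auto
    then show ?thesis using mg by simp
  qed
  have t2: "(\<gamma> * Lf - 1)\<^sup>2 / (1 + \<gamma> * \<mu>g) < 1"
  proof -
    have "(\<gamma> * Lf - 1)\<^sup>2 / (1 + \<gamma> * \<mu>g) \<le> (\<gamma> * Lf - 1)\<^sup>2 / 1"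
      using gg by (intro divide_left_mono) auto
    then show ?thesis using a1 by simp
  qed
  have t3: "1 - 2 * \<tau> * \<mu>h / ((1 + \<omega>) * (1 + 2 * \<tau> * \<mu>h)) < 1"
  proof -
    have "\<tau> * \<mu>h > 0" using tau muhp by simp
    moreover have "(1 + \<omega>) * (1 + 2 * \<tau> * \<mu>h) > 0" using om0 \<open>\<tau> * \<mu>h > 0\<close> by (simp add: add_pos_pos)
    ultimately have "2 * \<tau> * \<mu>h / ((1 + \<omega>) * (1 + 2 * \<tau> * \<mu>h)) > 0"
      by (intro divide_pos_pos) (auto simp: mult.commute)
    then show ?thesis by simp
  qed
  show ?thesis unfolding cc_def using t1 t2 t3 by simp
qed

lemma cc_pos: "cc > 0"
proof -
  have tm: "\<tau> * \<mu>h \<ge> 0" using tau muh0 by simp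
  have D: "(1 + \<omega>) * (1 + 2 * \<tau> * \<mu>h) > 0" using om0 tm by (simp add: add_pos_nonneg)
  have "2 * \<tau> * \<mu>h \<le> (1 + \<omega>) * (1 + 2 * \<tau> * \<mu>h) - 1"
  proof -
    have "(1 + \<omega>) * (1 + 2 * \<tau> * \<mu>h) = 1 + 2 * \<tau> * \<mu>h + \<omega> * (1 + 2 * \<tau> * \<mu>h)" by (simp add: algebra_simps)
    moreover have "\<omega> * (1 + 2 * \<tau> * \<mu>h) \<ge> 0" using om0 tm by simp
    ultimately show ?thesis by simp
  qed
  then have "2 * \<tau> * \<mu>h / ((1 + \<omega>) * (1 + 2 * \<tau> * \<mu>h)) < 1"
    using D by (simp add: divide_less_eq)
  then have "1 - 2 * \<tau> * \<mu>h / ((1 + \<omega>) * (1 + 2 * \<tau> * \<mu>h)) > 0" by simp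
  then show ?thesis unfolding cc_def by simp
qed

lemma Qbound:
  "(1 / \<gamma>) * (norm (XH x' u' - \<gamma> *\<^sub>R Ks (RR x' u') - xs))\<^sup>2
     + (1 + \<omega>) * C * (norm (u' + (1 / (1 + \<omega>)) *\<^sub>R RR x' u' - us))\<^sup>2
     + \<gamma> * (\<omega>r * (norm (RR x' u'))\<^sup>2 - \<zeta> * (norm (Ks (RR x' u')))\<^sup>2)
     + C * \<omega> / (1 + \<omega>) * (norm (RR x' u'))\<^sup>2
   \<le> cc * Psi x' u'"
proof -
  have G: "(1 + \<gamma> * \<mu>g) * (norm (XH x' u' - XH xs us))\<^sup>2
      \<le> (XH x' u' - XH xs us) \<bullet> ((x' - \<gamma> *\<^sub>R gradf x' - \<gamma> *\<^sub>R Ks u') - (xs - \<gamma> *\<^sub>R gradf xs - \<gamma> *\<^sub>R Ks us))"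
    unfolding XH_def by (rule PG.prox_mono)
  have H: "(1 + \<tau> * \<mu>h) * (norm (UP x' u' - UP xs us))\<^sup>2
      \<le> (UP x' u' - UP xs us) \<bullet> ((u' + \<tau> *\<^sub>R K (XH x' u')) - (us + \<tau> *\<^sub>R K (XH xs us)))"
    unfolding UP_def by (rule PH.prox_mono)
  have rho: "max ((1 - \<gamma> * \<mu>f)\<^sup>2) ((\<gamma> * Lf - 1)\<^sup>2) / (1 + \<gamma> * \<mu>g) \<le> cc"
  proof -
    have p: "1 + \<gamma> * \<mu>g > 0" using gam mug0 by (simp add: add_pos_nonneg)
    have "max ((1 - \<gamma> * \<mu>f)\<^sup>2) ((\<gamma> * Lf - 1)\<^sup>2) / (1 + \<gamma> * \<mu>g)
        = max ((1 - \<gamma> * \<mu>f)\<^sup>2 / (1 + \<gamma> * \<mu>g)) ((\<gamma> * Lf - 1)\<^sup>2 / (1 + \<gamma> * \<mu>g))"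
      using p by (simp add: max_divide_distrib_right)
    then show ?thesis unfolding cc_def by simp
  qed
  have c3: "1 - 2 * \<tau> * \<mu>h / ((1 + \<omega>) * (1 + 2 * \<tau> * \<mu>h)) \<le> cc" unfolding cc_def by simp
  have "(1 / \<gamma>) * (norm (XH x' u' - \<gamma> *\<^sub>R Ks (UP x' u' - u') - xs))\<^sup>2
         + (1 + \<omega>) * (1 / \<tau> + 2 * \<mu>h) * (norm (u' + (1 / (1 + \<omega>)) *\<^sub>R (UP x' u' - u') - us))\<^sup>2
         + \<gamma> * (\<omega>r * (norm (UP x' u' - u'))\<^sup>2 - \<zeta> * (norm (Ks (UP x' u' - u')))\<^sup>2)
         + (1 / \<tau> + 2 * \<mu>h) * \<omega> / (1 + \<omega>) * (norm (UP x' u' - u'))\<^sup>2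
       \<le> cc * ((1 / \<gamma>) * (norm (x' - xs))\<^sup>2 + (1 + \<omega>) * (1 / \<tau> + 2 * \<mu>h) * (norm (u' - us))\<^sup>2)"
    by (rule det_step[OF lin gam tau om0 omr0 ze0 ze1 mug0 muh0 stepc Ksbound nK0
          G[unfolded xs_fix] H[unfolded xs_fix us_fix] Wbound rho c3])
  then show ?thesis unfolding RR_def Psi_def C_def by (simp add: algebra_simps)
qed

end

lemma sq_lin:
  fixes v :: "'a::real_normed_vector"
  assumes "norm v \<le> \<alpha> * e + \<beta> * d" "\<alpha> \<ge> 0" "\<beta> \<ge> 0" "e \<ge> 0" "d \<ge> 0"
  shows "(norm v)\<^sup>2 \<le> 2 * \<alpha>\<^sup>2 * e\<^sup>2 + 2 * \<beta>\<^sup>2 * d\<^sup>2"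
proof -
  have "(norm v)\<^sup>2 \<le> (\<alpha> * e + \<beta> * d)\<^sup>2" using assms by (intro power_mono) auto
  also have "\<dots> \<le> 2 * \<alpha>\<^sup>2 * e\<^sup>2 + 2 * \<beta>\<^sup>2 * d\<^sup>2"
  proof -
    have "0 \<le> (\<alpha> * e - \<beta> * d)\<^sup>2" by simp
    then show ?thesis by (simp add: power2_eq_square algebra_simps)
  qed
  finally show ?thesis .
qed

context rp begin

lemma gradf_cont: "continuous_on UNIV gradf"
  unfolding continuous_on_iff
proof (intro ballI allI impI)
  fix y and e :: real assume e: "e > 0"
  show "\<exists>d>0. \<forall>y'\<in>UNIV. dist y' y < d \<longrightarrow> dist (gradf y') (gradf y) < e"
  proof (intro exI[of _ "e / Lf"] conjI ballI impI)
    show "e / Lf > 0" using e Lpos by simp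
    fix y' assume "dist y' y < e / Lf"
    then have "Lf * dist y' y < e" using Lpos by (simp add: field_simps)
    moreover have "dist (gradf y') (gradf y) \<le> Lf * dist y' y" using lip[of y' y] by (simp add: dist_norm)
    ultimately show "dist (gradf y') (gradf y) < e" by simp
  qed
qed

lemma XH_lip: "norm (XH x' u' - xs) \<le> (1 + \<gamma> * Lf) * norm (x' - xs) + \<gamma> * onorm K * norm (u' - us)"
proof -
  have "norm (XH x' u' - xs) = norm (XH x' u' - XH xs us)" by (simp add: xs_fix)
  also have "\<dots> \<le> norm ((x' - \<gamma> *\<^sub>R gradf x' - \<gamma> *\<^sub>R Ks u') - (xs - \<gamma> *\<^sub>R gradf xs - \<gamma> *\<^sub>R Ks us))"
    unfolding XH_def by (rule PG.prox_lip)
  also have "(x' - \<gamma> *\<^sub>R gradf x' - \<gamma> *\<^sub>R Ks u') - (xs - \<gamma> *\<^sub>R gradf xs - \<gamma> *\<^sub>R Ks us)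
      = (x' - xs) - \<gamma> *\<^sub>R (gradf x' - gradf xs) - \<gamma> *\<^sub>R Ks (u' - us)"
    by (simp add: linear_diff[OF adjoint_linear[OF lin]] algebra_simps)
  also have "norm \<dots> \<le> norm (x' - xs) + norm (\<gamma> *\<^sub>R (gradf x' - gradf xs)) + norm (\<gamma> *\<^sub>R Ks (u' - us))"
  proof -
    have "norm ((x' - xs) - \<gamma> *\<^sub>R (gradf x' - gradf xs) - \<gamma> *\<^sub>R Ks (u' - us))
        \<le> norm ((x' - xs) - \<gamma> *\<^sub>R (gradf x' - gradf xs)) + norm (\<gamma> *\<^sub>R Ks (u' - us))"
      by (rule norm_triangle_ineq4)
    also have "\<dots> \<le> norm (x' - xs) + norm (\<gamma> *\<^sub>R (gradf x' - gradf xs)) + norm (\<gamma> *\<^sub>R Ks (u' - us))"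
      using norm_triangle_ineq4[of "x' - xs" "\<gamma> *\<^sub>R (gradf x' - gradf xs)"] by simp
    finally show ?thesis .
  qed
  also have "\<dots> \<le> (1 + \<gamma> * Lf) * norm (x' - xs) + \<gamma> * onorm K * norm (u' - us)"
  proof -
    have "norm (\<gamma> *\<^sub>R (gradf x' - gradf xs)) \<le> \<gamma> * (Lf * norm (x' - xs))"
      using lip[of x' xs] gam by (simp add: mult_left_mono)
    moreover have "norm (\<gamma> *\<^sub>R Ks (u' - us)) \<le> \<gamma> * (onorm K * norm (u' - us))"
      using Ksbound[of "u' - us"] gam by (simp add: mult_left_mono)
    ultimately show ?thesis by (simp add: algebra_simps)
  qed
  finally show ?thesis .
qed

lemma UP_lip: "norm (UP x' u' - us) \<le> norm (u' - us) + \<tau> * onorm K * norm (XH x' u' - xs)"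
proof -
  have "norm (UP x' u' - us) = norm (UP x' u' - UP xs us)" by (simp add: us_fix)
  also have "\<dots> \<le> norm ((u' + \<tau> *\<^sub>R K (XH x' u')) - (us + \<tau> *\<^sub>R K (XH xs us)))"
    unfolding UP_def by (rule PH.prox_lip)
  also have "(u' + \<tau> *\<^sub>R K (XH x' u')) - (us + \<tau> *\<^sub>R K (XH xs us)) = (u' - us) + \<tau> *\<^sub>R K (XH x' u' - xs)"
    by (simp add: xs_fix linear_diff[OF lin] algebra_simps)
  also have "norm \<dots> \<le> norm (u' - us) + \<tau> * (onorm K * norm (XH x' u' - xs))"
  proof -
    have "norm ((u' - us) + \<tau> *\<^sub>R K (XH x' u' - xs)) \<le> norm (u' - us) + norm (\<tau> *\<^sub>R K (XH x' u' - xs))"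
      by (rule norm_triangle_ineq)
    also have "norm (\<tau> *\<^sub>R K (XH x' u' - xs)) = \<tau> * norm (K (XH x' u' - xs))" using tau by simp
    also have "\<dots> \<le> \<tau> * (onorm K * norm (XH x' u' - xs))" using Kbound tau by (simp add: mult_left_mono)
    finally show ?thesis by simp
  qed
  finally show ?thesis by (simp add: algebra_simps)
qed

lemma Psi_nonneg: "Psi x' u' \<ge> 0"
  unfolding Psi_def using gam om0 Cpos by (intro add_nonneg_nonneg mult_nonneg_nonneg) auto

lemma e_le: "(norm (x' - xs))\<^sup>2 \<le> \<gamma> * Psi x' u'"
proof -
  have "(1 + \<omega>) * C * (norm (u' - us))\<^sup>2 \<ge> 0" using om0 Cpos by simp
  then have "(1 / \<gamma>) * (norm (x' - xs))\<^sup>2 \<le> Psi x' u'" unfolding Psi_def by simp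
  then show ?thesis using gam by (simp add: field_simps)
qed

lemma d_le: "(norm (u' - us))\<^sup>2 \<le> (1 / ((1 + \<omega>) * C)) * Psi x' u'"
proof -
  have p: "(1 + \<omega>) * C > 0" using om0 Cpos by simp
  have "(1 / \<gamma>) * (norm (x' - xs))\<^sup>2 \<ge> 0" using gam by simp
  then have "(1 + \<omega>) * C * (norm (u' - us))\<^sup>2 \<le> Psi x' u'" unfolding Psi_def by simp
  then show ?thesis using p by (simp add: field_simps)
qed

lemma lin_to_psi:
  assumes "norm v \<le> \<alpha> * norm (x' - xs) + \<beta> * norm (u' - us)" "\<alpha> \<ge> 0" "\<beta> \<ge> 0"
  shows "(norm v)\<^sup>2 \<le> (2 * \<alpha>\<^sup>2 * \<gamma> + 2 * \<beta>\<^sup>2 * (1 / ((1 + \<omega>) * C))) * Psi x' u'"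
proof -
  have "(norm v)\<^sup>2 \<le> 2 * \<alpha>\<^sup>2 * (norm (x' - xs))\<^sup>2 + 2 * \<beta>\<^sup>2 * (norm (u' - us))\<^sup>2"
    by (rule sq_lin[OF assms]) auto
  also have "\<dots> \<le> 2 * \<alpha>\<^sup>2 * (\<gamma> * Psi x' u') + 2 * \<beta>\<^sup>2 * ((1 / ((1 + \<omega>) * C)) * Psi x' u')"
    using e_le[of x' u'] d_le[of u' x'] by (intro add_mono mult_left_mono) auto
  finally show ?thesis by (simp add: algebra_simps)
qed

definition "KR = 2 * (\<tau> * onorm K * (1 + \<gamma> * Lf))\<^sup>2 * \<gamma>
   + 2 * (2 + \<tau> * onorm K * (\<gamma> * onorm K))\<^sup>2 * (1 / ((1 + \<omega>) * C))"

lemma KR_nonneg: "KR \<ge> 0"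
  unfolding KR_def using gam om0 Cpos by (intro add_nonneg_nonneg mult_nonneg_nonneg) auto

lemma RR_bound: "(norm (RR x' u'))\<^sup>2 \<le> KR * Psi x' u'"
proof -
  have a0: "\<tau> * onorm K * (1 + \<gamma> * Lf) \<ge> 0" using tau nK0 gam Lpos by simp
  have b0: "2 + \<tau> * onorm K * (\<gamma> * onorm K) \<ge> 0" using tau nK0 gam by simp
  have "norm (RR x' u') \<le> norm (UP x' u' - us) + norm (u' - us)"
    unfolding RR_def using norm_triangle_ineq4[of "UP x' u' - us" "u' - us"] by simp
  also have "\<dots> \<le> 2 * norm (u' - us) + \<tau> * onorm K * norm (XH x' u' - xs)" using UP_lip by simp
  also have "\<dots> \<le> 2 * norm (u' - us) + \<tau> * onorm K * ((1 + \<gamma> * Lf) * norm (x' - xs) + \<gamma> * onorm K * norm (u' - us))"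
    using XH_lip tau nK0 by (simp add: mult_left_mono)
  also have "\<dots> = (\<tau> * onorm K * (1 + \<gamma> * Lf)) * norm (x' - xs) + (2 + \<tau> * onorm K * (\<gamma> * onorm K)) * norm (u' - us)"
    by (simp add: algebra_simps)
  finally have "norm (RR x' u') \<le> (\<tau> * onorm K * (1 + \<gamma> * Lf)) * norm (x' - xs) + (2 + \<tau> * onorm K * (\<gamma> * onorm K)) * norm (u' - us)" .
  from lin_to_psi[OF this a0 b0] show ?thesis unfolding KR_def .
qed

end

context rp begin

definition "Fl t = gen_filtration M (\<lambda>i s. (x i s, u i s)) t"

lemma xhat_eq: "xhat t s = XH (x t s) (u t s)"
  unfolding xhatd XH_def ..

lemma r_eq: "prox \<tau> (conjugate h) (u t s + \<tau> *\<^sub>R K (xhat t s)) - u t s = RR (x t s) (u t s)"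
  unfolding RR_def UP_def xhat_eq ..

lemma cont_XH: "continuous_on UNIV (\<lambda>p::'x \<times> 'u. XH (fst p) (snd p))"
proof -
  have c1: "continuous_on UNIV (\<lambda>p::'x \<times> 'u. fst p - \<gamma> *\<^sub>R gradf (fst p) - \<gamma> *\<^sub>R Ks (snd p))"
    by (intro continuous_intros continuous_on_compose2[OF gradf_cont] continuous_on_compose2[OF linear_continuous_on[OF blKs]]) auto
  show ?thesis unfolding XH_def by (rule continuous_on_compose2[OF PG.prox_cont c1]) auto
qed

lemma cont_RR: "continuous_on UNIV (\<lambda>p::'x \<times> 'u. RR (fst p) (snd p))"
proof -
  have c1: "continuous_on UNIV (\<lambda>p::'x \<times> 'u. snd p + \<tau> *\<^sub>R K (XH (fst p) (snd p)))"
    by (intro continuous_intros continuous_on_compose2[OF linear_continuous_on[OF blK] cont_XH]) auto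
  have "continuous_on UNIV (\<lambda>p::'x \<times> 'u. UP (fst p) (snd p))"
    unfolding UP_def by (rule continuous_on_compose2[OF PH.prox_cont c1]) auto
  then show ?thesis unfolding RR_def by (intro continuous_intros) auto
qed

lemma meas_M: "x t \<in> borel_measurable M \<and> u t \<in> borel_measurable M"
proof (induction t)
  case 0 then show ?case by (simp add: x0d u0d)
next
  case (Suc t)
  then have [measurable]: "x t \<in> borel_measurable M" "u t \<in> borel_measurable M" by auto
  have [measurable]: "R t \<in> borel_measurable M" by (rule Rmeas)
  have pm: "(\<lambda>s. (x t s, u t s)) \<in> borel_measurable M" by measurable
  have xh: "xhat t \<in> borel_measurable M"
    using borel_measurable_continuous_on[OF cont_XH pm] unfolding xhat_eq[abs_def] by simp
  have um: "u (Suc t) \<in> borel_measurable M" unfolding ud[abs_def] by measurable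
  have "(\<lambda>s. Ks (u (Suc t) s) - Ks (u t s)) \<in> borel_measurable M"
    using borel_measurable_continuous_on[OF linear_continuous_on[OF blKs] um]
          borel_measurable_continuous_on[OF linear_continuous_on[OF blKs] \<open>u t \<in> borel_measurable M\<close>]
    by measurable
  then have "x (Suc t) \<in> borel_measurable M" unfolding xd[abs_def] using xh by measurable
  then show ?case using um by simp
qed

lemma Z_meas: "(\<lambda>s. (x i s, u i s)) \<in> borel_measurable M"
proof -
  have [measurable]: "x i \<in> borel_measurable M" "u i \<in> borel_measurable M" using meas_M[of i] by auto
  show ?thesis by measurable
qed

lemma Fl_space: "space (Fl t) = space M"
  unfolding Fl_def gen_filtration_def by (simp add: space_measure_of_conv)

lemma Fl_gen_sub: "(\<Union>i\<in>{..t}. {(\<lambda>s. (x i s, u i s)) -` B \<inter> space M | B. B \<in> sets borel}) \<subseteq> sets M"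
  using Z_meas measurable_sets by blast

lemma Fl_sets: "sets (Fl t) = sigma_sets (space M)
   (\<Union>i\<in>{..t}. {(\<lambda>s. (x i s, u i s)) -` B \<inter> space M | B. B \<in> sets borel})"
  unfolding Fl_def gen_filtration_def
  by (rule sets_measure_of) (use Fl_gen_sub sets.sets_into_space in blast)

lemma Fl_subalg: "subalgebra M (Fl t)"
  unfolding subalgebra_def Fl_space Fl_sets
  using sets.sigma_sets_subset[OF Fl_gen_sub] by simp

lemma Fl_sf: "sigma_finite_subalgebra M (Fl t)"
proof -
  interpret prob_space M by (rule prob)
  have "finite_measure_subalgebra M (Fl t)"
    by (intro finite_measure_subalgebra.intro finite_measure_subalgebra_axioms.intro Fl_subalg)
       (simp add: finite_measure_axioms)
  then show ?thesis by (rule finite_measure_subalgebra_is_sigma_finite)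
qed

lemma Z_meas_F: "(\<lambda>s. (x t s, u t s)) \<in> borel_measurable (Fl t)"
proof (rule measurableI)
  fix s assume "s \<in> space (Fl t)" then show "(x t s, u t s) \<in> space borel" by simp
next
  fix B :: "('x \<times> 'u) set" assume "B \<in> sets borel"
  then have "(\<lambda>s. (x t s, u t s)) -` B \<inter> space M \<in> (\<Union>i\<in>{..t}. {(\<lambda>s. (x i s, u i s)) -` B \<inter> space M | B. B \<in> sets borel})"
    by blast
  then show "(\<lambda>s. (x t s, u t s)) -` B \<inter> space (Fl t) \<in> sets (Fl t)"
    unfolding Fl_sets Fl_space by (rule sigma_sets.Basic)
qed

lemma RR_meas_F: "(\<lambda>s. RR (x t s) (u t s)) \<in> borel_measurable (Fl t)"
  using borel_measurable_continuous_on[OF cont_RR Z_meas_F] by simp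

lemma XH_meas_F: "(\<lambda>s. XH (x t s) (u t s)) \<in> borel_measurable (Fl t)"
  using borel_measurable_continuous_on[OF cont_XH Z_meas_F] by simp

lemma x_meas_F: "x t \<in> borel_measurable (Fl t)"
  using borel_measurable_continuous_on[OF continuous_on_fst[OF continuous_on_id] Z_meas_F] by simp

lemma u_meas_F: "u t \<in> borel_measurable (Fl t)"
  using borel_measurable_continuous_on[OF continuous_on_snd[OF continuous_on_id] Z_meas_F] by simp

end

lemma decomp_alg:
  fixes w g C a k n b bn nn :: real
  assumes o1: "1 + w \<noteq> 0" and g1: "g \<noteq> 0"
  shows "(1 / g) * (a - 2 * g * k + g\<^sup>2 * n) + (1 + w) * C * (b + 2 * (1 / (1 + w)) * bn + (1 / (1 + w))\<^sup>2 * nn)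
    = (1 / g) * a + (1 + w) * C * b + (2 * C * bn - 2 * k) + g * n + C / (1 + w) * nn"
proof -
  define t where "t = 1 / (1 + w)"
  define ig where "ig = 1 / g"
  have t1: "t * (1 + w) = 1" unfolding t_def using o1 by simp
  have i1: "ig * g = 1" unfolding ig_def using g1 by simp
  have ct: "C / (1 + w) = C * t" unfolding t_def by simp
  have "ig * (a - 2 * g * k + g\<^sup>2 * n) + (1 + w) * C * (b + 2 * t * bn + t\<^sup>2 * nn)
    = ig * a + (1 + w) * C * b + (2 * C * bn - 2 * k) + g * n + C * t * nn"
    using t1 i1 by algebra
  then show ?thesis unfolding ct t_def ig_def .
qed

context rp begin

definition "AA x' u' = XH x' u' - \<gamma> *\<^sub>R Ks (RR x' u') - xs"
definition "BB x' u' = u' + (1 / (1 + \<omega>)) *\<^sub>R RR x' u' - us"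
definition "D0 x' u' = (1 / \<gamma>) * (norm (AA x' u'))\<^sup>2 + (1 + \<omega>) * C * (norm (BB x' u'))\<^sup>2"
definition "VV x' u' = (2 * C) *\<^sub>R BB x' u' - 2 *\<^sub>R K (AA x' u')"

lemma psi_decomp:
  fixes A :: 'x and B N :: 'u
  shows "(1 / \<gamma>) * (norm (A - \<gamma> *\<^sub>R Ks N))\<^sup>2 + (1 + \<omega>) * C * (norm (B + (1 / (1 + \<omega>)) *\<^sub>R N))\<^sup>2
    = (1 / \<gamma>) * (norm A)\<^sup>2 + (1 + \<omega>) * C * (norm B)\<^sup>2 + ((2 * C) *\<^sub>R B - 2 *\<^sub>R K A) \<bullet> N
      + \<gamma> * (norm (Ks N))\<^sup>2 + C / (1 + \<omega>) * (norm N)\<^sup>2"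
proof -
  have o1: "1 + \<omega> \<noteq> 0" using om0 by simp
  have g1: "\<gamma> \<noteq> 0" using gam by simp
  have 1: "(norm (A - \<gamma> *\<^sub>R Ks N))\<^sup>2 = (norm A)\<^sup>2 - 2 * \<gamma> * (K A \<bullet> N) + \<gamma>\<^sup>2 * (norm (Ks N))\<^sup>2"
  proof -
    have "A - \<gamma> *\<^sub>R Ks N = 1 *\<^sub>R A - \<gamma> *\<^sub>R Ks N" by simp
    then have "(norm (A - \<gamma> *\<^sub>R Ks N))\<^sup>2 = (norm A)\<^sup>2 - 2 * \<gamma> * (Ks N \<bullet> A) + \<gamma>\<^sup>2 * (norm (Ks N))\<^sup>2"
      using norm_sq_comb[of 1 A \<gamma> "Ks N"] by simp
    moreover have "Ks N \<bullet> A = K A \<bullet> N" using adjoint_works[OF lin, of A N] by (simp add: inner_commute)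
    ultimately show ?thesis by simp
  qed
  have 2: "(norm (B + (1 / (1 + \<omega>)) *\<^sub>R N))\<^sup>2 = (norm B)\<^sup>2 + 2 * (1 / (1 + \<omega>)) * (B \<bullet> N) + (1 / (1 + \<omega>))\<^sup>2 * (norm N)\<^sup>2"
    by (rule norm_sq_add_scaled)
  have 3: "((2 * C) *\<^sub>R B - 2 *\<^sub>R K A) \<bullet> N = 2 * C * (B \<bullet> N) - 2 * (K A \<bullet> N)"
    by (simp add: inner_diff_left)
  show ?thesis unfolding 1 2 3 by (rule decomp_alg[OF o1 g1])
qed

lemma psi_next:
  "Psi (x (Suc t) s) (u (Suc t) s) = D0 (x t s) (u t s) + VV (x t s) (u t s) \<bullet> (R t s - RR (x t s) (u t s))
     + \<gamma> * (norm (Ks (R t s - RR (x t s) (u t s))))\<^sup>2 + C / (1 + \<omega>) * (norm (R t s - RR (x t s) (u t s)))\<^sup>2"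
proof -
  define N where "N = R t s - RR (x t s) (u t s)"
  have o1: "1 + \<omega> \<noteq> 0" using om0 by simp
  have lKs: "linear Ks" by (rule adjoint_linear[OF lin])
  have "Ks (u (Suc t) s) - Ks (u t s) = Ks (u (Suc t) s - u t s)" by (simp add: linear_diff[OF lKs])
  also have "u (Suc t) s - u t s = (1 / (1 + \<omega>)) *\<^sub>R R t s" by (simp add: ud)
  finally have "Ks (u (Suc t) s) - Ks (u t s) = (1 / (1 + \<omega>)) *\<^sub>R Ks (R t s)" by (simp add: linear_scale[OF lKs])
  then have "x (Suc t) s = xhat t s - \<gamma> *\<^sub>R Ks (R t s)" using o1 by (simp add: xd)
  then have xe: "x (Suc t) s - xs = AA (x t s) (u t s) - \<gamma> *\<^sub>R Ks N"
    unfolding AA_def N_def xhat_eq by (simp add: linear_diff[OF lKs] algebra_simps)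
  have ue: "u (Suc t) s - us = BB (x t s) (u t s) + (1 / (1 + \<omega>)) *\<^sub>R N"
    unfolding BB_def N_def ud by (simp add: algebra_simps)
  show ?thesis unfolding Psi_def xe ue psi_decomp D0_def VV_def N_def ..
qed

lemma D0_nonneg: "D0 x' u' \<ge> 0"
  unfolding D0_def using gam om0 Cpos by (intro add_nonneg_nonneg mult_nonneg_nonneg) auto

lemma D0_bound: "D0 x' u' \<le> cc * Psi x' u' + \<gamma> * (onorm K)\<^sup>2 * (norm (RR x' u'))\<^sup>2"
proof -
  have q: "D0 x' u' + \<gamma> * (\<omega>r * (norm (RR x' u'))\<^sup>2 - \<zeta> * (norm (Ks (RR x' u')))\<^sup>2)
     + C * \<omega> / (1 + \<omega>) * (norm (RR x' u'))\<^sup>2 \<le> cc * Psi x' u'"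
    using Qbound unfolding D0_def AA_def BB_def by simp
  have a: "C * \<omega> / (1 + \<omega>) * (norm (RR x' u'))\<^sup>2 \<ge> 0" using Cpos om0 by simp
  have b: "\<gamma> * (\<omega>r * (norm (RR x' u'))\<^sup>2) \<ge> 0" using gam omr0 by simp
  have kk: "(norm (Ks (RR x' u')))\<^sup>2 \<le> (onorm K)\<^sup>2 * (norm (RR x' u'))\<^sup>2"
  proof -
    have "(norm (Ks (RR x' u')))\<^sup>2 \<le> (onorm K * norm (RR x' u'))\<^sup>2" using Ksbound by (intro power_mono) auto
    then show ?thesis by (simp add: power_mult_distrib)
  qed
  have "\<zeta> * (norm (Ks (RR x' u')))\<^sup>2 \<le> 1 * ((onorm K)\<^sup>2 * (norm (RR x' u'))\<^sup>2)"
    using kk ze0 ze1 by (intro mult_mono) auto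
  then have c: "\<gamma> * (\<zeta> * (norm (Ks (RR x' u')))\<^sup>2) \<le> \<gamma> * (onorm K)\<^sup>2 * (norm (RR x' u'))\<^sup>2"
    using gam by (simp add: mult_left_mono mult.assoc)
  have "\<gamma> * (\<omega>r * (norm (RR x' u'))\<^sup>2 - \<zeta> * (norm (Ks (RR x' u')))\<^sup>2)
      = \<gamma> * (\<omega>r * (norm (RR x' u'))\<^sup>2) - \<gamma> * (\<zeta> * (norm (Ks (RR x' u')))\<^sup>2)" by (simp add: algebra_simps)
  then show ?thesis using q a b c by linarith
qed

lemma VV_bound: "(norm (VV x' u'))\<^sup>2 \<le> (8 * C\<^sup>2 / ((1 + \<omega>) * C) + 8 * (onorm K)\<^sup>2 * \<gamma>) * D0 x' u'"
proof -
  have "norm (VV x' u') \<le> norm ((2 * C) *\<^sub>R BB x' u') + norm (2 *\<^sub>R K (AA x' u'))"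
    unfolding VV_def by (rule norm_triangle_ineq4)
  also have "\<dots> \<le> (2 * C) * norm (BB x' u') + 2 * (onorm K * norm (AA x' u'))"
    using Cpos Kbound[of "AA x' u'"] by simp
  finally have nv: "norm (VV x' u') \<le> (2 * C) * norm (BB x' u') + (2 * onorm K) * norm (AA x' u')" by simp
  have "(norm (VV x' u'))\<^sup>2 \<le> 2 * (2 * C)\<^sup>2 * (norm (BB x' u'))\<^sup>2 + 2 * (2 * onorm K)\<^sup>2 * (norm (AA x' u'))\<^sup>2"
    by (rule sq_lin[OF nv]) (use Cpos nK0 in auto)
  also have "\<dots> = 8 * C\<^sup>2 * (norm (BB x' u'))\<^sup>2 + 8 * (onorm K)\<^sup>2 * (norm (AA x' u'))\<^sup>2"
    by (simp add: power_mult_distrib)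
  also have "\<dots> \<le> 8 * C\<^sup>2 * ((1 / ((1 + \<omega>) * C)) * D0 x' u') + 8 * (onorm K)\<^sup>2 * (\<gamma> * D0 x' u')"
  proof (intro add_mono mult_left_mono)
    have p: "(1 + \<omega>) * C > 0" using om0 Cpos by simp
    have "(1 / \<gamma>) * (norm (AA x' u'))\<^sup>2 \<ge> 0" using gam by simp
    then have "(1 + \<omega>) * C * (norm (BB x' u'))\<^sup>2 \<le> D0 x' u'" unfolding D0_def by simp
    then show "(norm (BB x' u'))\<^sup>2 \<le> (1 / ((1 + \<omega>) * C)) * D0 x' u'" using p by (simp add: field_simps)
    have "(1 + \<omega>) * C * (norm (BB x' u'))\<^sup>2 \<ge> 0" using om0 Cpos by simp
    then have "(1 / \<gamma>) * (norm (AA x' u'))\<^sup>2 \<le> D0 x' u'" unfolding D0_def by simp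
    then show "(norm (AA x' u'))\<^sup>2 \<le> \<gamma> * D0 x' u'" using gam by (simp add: field_simps)
  qed auto
  also have "\<dots> = (8 * C\<^sup>2 / ((1 + \<omega>) * C) + 8 * (onorm K)\<^sup>2 * \<gamma>) * D0 x' u'" by (simp add: algebra_simps)
  finally show ?thesis .
qed

end

context rp begin

lemma cont_AA: "continuous_on UNIV (\<lambda>p::'x \<times> 'u. AA (fst p) (snd p))"
  unfolding AA_def
  by (intro continuous_intros cont_XH continuous_on_compose2[OF linear_continuous_on[OF blKs] cont_RR]) auto

lemma cont_BB: "continuous_on UNIV (\<lambda>p::'x \<times> 'u. BB (fst p) (snd p))"
  unfolding BB_def by (intro continuous_intros cont_RR)

lemma cont_D0: "continuous_on UNIV (\<lambda>p::'x \<times> 'u. D0 (fst p) (snd p))"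
  unfolding D0_def by (intro continuous_intros cont_AA cont_BB)

lemma cont_VV: "continuous_on UNIV (\<lambda>p::'x \<times> 'u. VV (fst p) (snd p))"
  unfolding VV_def
  by (intro continuous_intros cont_BB continuous_on_compose2[OF linear_continuous_on[OF blK] cont_AA]) auto

lemma cont_Psi: "continuous_on UNIV (\<lambda>p::'x \<times> 'u. Psi (fst p) (snd p))"
  unfolding Psi_def by (intro continuous_intros)

lemma mF: "continuous_on UNIV (F :: 'x \<times> 'u \<Rightarrow> 'b::topological_space) \<Longrightarrow>
    (\<lambda>s. F (x t s, u t s)) \<in> borel_measurable (Fl t)"
  using borel_measurable_continuous_on[OF _ Z_meas_F] by blast

lemma mM: "continuous_on UNIV (F :: 'x \<times> 'u \<Rightarrow> 'b::topological_space) \<Longrightarrow>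
    (\<lambda>s. F (x t s, u t s)) \<in> borel_measurable M"
  using borel_measurable_continuous_on[OF _ Z_meas] by blast

end

lemma ennreal_ineq_real:
  assumes "ennreal a \<le> ennreal b" "0 \<le> a" "0 \<le> b" shows "a \<le> b"
  using assms by (simp add: ennreal_le_iff)

lemma basis_prod_bound:
  fixes v w :: "'a::euclidean_space"
  assumes b: "b \<in> Basis"
  shows "\<bar>(v \<bullet> b) * (w \<bullet> b)\<bar> \<le> (norm v)\<^sup>2 + (norm w)\<^sup>2"
proof -
  have 1: "\<bar>v \<bullet> b\<bar> \<le> norm v" using Cauchy_Schwarz_ineq2[of v b] b by simp
  have 2: "\<bar>w \<bullet> b\<bar> \<le> norm w" using Cauchy_Schwarz_ineq2[of w b] b by simp
  have "\<bar>(v \<bullet> b) * (w \<bullet> b)\<bar> = \<bar>v \<bullet> b\<bar> * \<bar>w \<bullet> b\<bar>" by (simp add: abs_mult)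
  also have "\<dots> \<le> norm v * norm w" using 1 2 by (intro mult_mono) auto
  also have "\<dots> \<le> (norm v)\<^sup>2 + (norm w)\<^sup>2"
  proof -
    have "0 \<le> (norm v - norm w)\<^sup>2" by simp
    then have "2 * (norm v * norm w) \<le> (norm v)\<^sup>2 + (norm w)\<^sup>2" by (simp add: power2_eq_square algebra_simps)
    moreover have "0 \<le> norm v * norm w" by simp
    ultimately show ?thesis by linarith
  qed
  finally show ?thesis .
qed

lemma sq_add_bound:
  fixes a c :: "'a::real_normed_vector"
  shows "(norm (a + c))\<^sup>2 \<le> 2 * (norm a)\<^sup>2 + 2 * (norm c)\<^sup>2"
  using sq_lin[of "a + c" 1 "norm a" 1 "norm c"] norm_triangle_ineq[of a c] by simp

context rp begin

lemma exp_step: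
  assumes fin: "(\<integral>\<^sup>+ s. ennreal (Psi (x t s) (u t s)) \<partial>M) < \<infinity>"
  shows "(\<integral>\<^sup>+ s. ennreal (Psi (x (Suc t) s) (u (Suc t) s)) \<partial>M)
         \<le> ennreal cc * (\<integral>\<^sup>+ s. ennreal (Psi (x t s) (u t s)) \<partial>M)"
proof -
  interpret P: prob_space M by (rule prob)
  interpret S: sigma_finite_subalgebra M "Fl t" by (rule Fl_sf)
  have [measurable]: "x t \<in> borel_measurable M" "u t \<in> borel_measurable M" using meas_M by auto
  have [measurable]: "R t \<in> borel_measurable M" by (rule Rmeas)
  define P where "P = (\<lambda>s. Psi (x t s) (u t s))"
  define r where "r = (\<lambda>s. RR (x t s) (u t s))"
  define N where "N = (\<lambda>s. R t s - r s)"
  define D where "D = (\<lambda>s. D0 (x t s) (u t s))"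
  define V where "V = (\<lambda>s. VV (x t s) (u t s))"
  have [measurable]: "P \<in> borel_measurable M" unfolding P_def using mM[OF cont_Psi] by simp
  have [measurable]: "r \<in> borel_measurable M" unfolding r_def using mM[OF cont_RR] by simp
  have [measurable]: "D \<in> borel_measurable M" unfolding D_def using mM[OF cont_D0] by simp
  have [measurable]: "V \<in> borel_measurable M" unfolding V_def using mM[OF cont_VV] by simp
  have [measurable]: "N \<in> borel_measurable M" unfolding N_def by measurable
  have VF: "V \<in> borel_measurable (Fl t)" unfolding V_def using mF[OF cont_VV] by simp
  have rF: "r \<in> borel_measurable (Fl t)" unfolding r_def using mF[OF cont_RR] by simp
  have mKs: "(\<lambda>s. Ks (f s)) \<in> borel_measurable M" if "f \<in> borel_measurable M" for f :: "'s \<Rightarrow> 'u"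
    using borel_measurable_continuous_on[OF linear_continuous_on[OF blKs] that] .
  have [measurable]: "(\<lambda>s. Ks (r s)) \<in> borel_measurable M" "(\<lambda>s. Ks (N s)) \<in> borel_measurable M"
    by (auto intro: mKs)
  have Pnn: "P s \<ge> 0" for s unfolding P_def by (rule Psi_nonneg)
  have iP: "integrable M P"
  proof (rule integrableI_bounded)
    show "P \<in> borel_measurable M" by measurable
    have "(\<integral>\<^sup>+ s. ennreal (norm (P s)) \<partial>M) = (\<integral>\<^sup>+ s. ennreal (P s) \<partial>M)" using Pnn by simp
    then show "(\<integral>\<^sup>+ s. ennreal (norm (P s)) \<partial>M) < \<infinity>" using fin unfolding P_def by simp
  qed
  have ir: "integrable M (\<lambda>s. (norm (r s))\<^sup>2)"
  proof (rule Bochner_Integration.integrable_bound[where f="\<lambda>s. KR * P s"])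
    show "integrable M (\<lambda>s. KR * P s)" using iP by simp
    show "AE s in M. norm ((norm (r s))\<^sup>2) \<le> norm (KR * P s)"
      using RR_bound KR_nonneg Pnn unfolding r_def P_def by (simp add: abs_mult)
  qed measurable
  have iKr: "integrable M (\<lambda>s. (norm (Ks (r s)))\<^sup>2)"
  proof (rule Bochner_Integration.integrable_bound[where f="\<lambda>s. (onorm K)\<^sup>2 * (norm (r s))\<^sup>2"])
    show "integrable M (\<lambda>s. (onorm K)\<^sup>2 * (norm (r s))\<^sup>2)" using ir by simp
    show "AE s in M. norm ((norm (Ks (r s)))\<^sup>2) \<le> norm ((onorm K)\<^sup>2 * (norm (r s))\<^sup>2)"
    proof (rule AE_I2)
      fix s
      have "(norm (Ks (r s)))\<^sup>2 \<le> (onorm K * norm (r s))\<^sup>2" using Ksbound by (intro power_mono) auto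
      then show "norm ((norm (Ks (r s)))\<^sup>2) \<le> norm ((onorm K)\<^sup>2 * (norm (r s))\<^sup>2)"
        by (simp add: power_mult_distrib)
    qed
  qed measurable
  have iD: "integrable M D"
  proof (rule Bochner_Integration.integrable_bound[where f="\<lambda>s. cc * P s + \<gamma> * (onorm K)\<^sup>2 * (norm (r s))\<^sup>2"])
    show "integrable M (\<lambda>s. cc * P s + \<gamma> * (onorm K)\<^sup>2 * (norm (r s))\<^sup>2)" using iP ir by simp
    show "AE s in M. norm (D s) \<le> norm (cc * P s + \<gamma> * (onorm K)\<^sup>2 * (norm (r s))\<^sup>2)"
    proof (rule AE_I2)
      fix s
      have "0 \<le> D s" unfolding D_def by (rule D0_nonneg)
      moreover have "D s \<le> cc * P s + \<gamma> * (onorm K)\<^sup>2 * (norm (r s))\<^sup>2"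
        unfolding D_def P_def r_def by (rule D0_bound)
      ultimately show "norm (D s) \<le> norm (cc * P s + \<gamma> * (onorm K)\<^sup>2 * (norm (r s))\<^sup>2)" by simp
    qed
  qed measurable
  define kV where "kV = 8 * C\<^sup>2 / ((1 + \<omega>) * C) + 8 * (onorm K)\<^sup>2 * \<gamma>"
  have iV: "integrable M (\<lambda>s. (norm (V s))\<^sup>2)"
  proof (rule Bochner_Integration.integrable_bound[where f="\<lambda>s. kV * D s"])
    show "integrable M (\<lambda>s. kV * D s)" using iD by simp
    show "AE s in M. norm ((norm (V s))\<^sup>2) \<le> norm (kV * D s)"
    proof (rule AE_I2)
      fix s
      have "(norm (V s))\<^sup>2 \<le> kV * D s" unfolding V_def D_def kV_def by (rule VV_bound)
      then show "norm ((norm (V s))\<^sup>2) \<le> norm (kV * D s)" by simp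
    qed
  qed measurable
  have nn_int: "(\<integral>\<^sup>+ s. nn_cond_exp M (Fl t) f s \<partial>M) = (\<integral>\<^sup>+ s. f s \<partial>M)"
    if fm: "f \<in> borel_measurable M" for f
    using S.nn_cond_exp_intg[of "\<lambda>_. 1" f] fm by simp
  have var1': "AE s in M. nn_cond_exp M (Fl t) (\<lambda>s. ennreal ((norm (N s))\<^sup>2)) s \<le> ennreal (\<omega> * (norm (r s))\<^sup>2)"
    unfolding N_def r_def Fl_def using var1[of t] unfolding r_eq .
  have var2': "AE s in M. nn_cond_exp M (Fl t) (\<lambda>s. ennreal ((norm (Ks (N s)))\<^sup>2)) s
       + ennreal (\<zeta> * (norm (Ks (r s)))\<^sup>2) \<le> ennreal (\<omega>r * (norm (r s))\<^sup>2)"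
    unfolding N_def r_def Fl_def using var2[of t] unfolding r_eq .
  have er: "(\<integral>\<^sup>+ s. ennreal (\<omega> * (norm (r s))\<^sup>2) \<partial>M) = ennreal (\<integral> s. \<omega> * (norm (r s))\<^sup>2 \<partial>M)"
    by (rule nn_integral_eq_integral) (use ir om0 in auto)
  have er2: "(\<integral>\<^sup>+ s. ennreal (\<omega>r * (norm (r s))\<^sup>2) \<partial>M) = ennreal (\<integral> s. \<omega>r * (norm (r s))\<^sup>2 \<partial>M)"
    by (rule nn_integral_eq_integral) (use ir omr0 in auto)
  have n1: "(\<integral>\<^sup>+ s. ennreal ((norm (N s))\<^sup>2) \<partial>M) \<le> (\<integral>\<^sup>+ s. ennreal (\<omega> * (norm (r s))\<^sup>2) \<partial>M)"
  proof -
    have "(\<integral>\<^sup>+ s. ennreal ((norm (N s))\<^sup>2) \<partial>M) = (\<integral>\<^sup>+ s. nn_cond_exp M (Fl t) (\<lambda>s. ennreal ((norm (N s))\<^sup>2)) s \<partial>M)"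
      by (rule nn_int[symmetric]) measurable
    also have "\<dots> \<le> (\<integral>\<^sup>+ s. ennreal (\<omega> * (norm (r s))\<^sup>2) \<partial>M)"
      by (rule nn_integral_mono_AE[OF var1'])
    finally show ?thesis .
  qed
  have iN: "integrable M (\<lambda>s. (norm (N s))\<^sup>2)"
  proof (rule integrableI_bounded)
    show "(\<lambda>s. (norm (N s))\<^sup>2) \<in> borel_measurable M" by measurable
    have "(\<integral>\<^sup>+ s. ennreal (norm ((norm (N s))\<^sup>2)) \<partial>M) = (\<integral>\<^sup>+ s. ennreal ((norm (N s))\<^sup>2) \<partial>M)" by simp
    also have "\<dots> < \<infinity>" using n1 er by (simp add: le_less_trans)
    finally show "(\<integral>\<^sup>+ s. ennreal (norm ((norm (N s))\<^sup>2)) \<partial>M) < \<infinity>" .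
  qed
  have rN: "(\<integral> s. (norm (N s))\<^sup>2 \<partial>M) \<le> (\<integral> s. \<omega> * (norm (r s))\<^sup>2 \<partial>M)"
  proof (rule ennreal_ineq_real)
    have "(\<integral>\<^sup>+ s. ennreal ((norm (N s))\<^sup>2) \<partial>M) = ennreal (\<integral> s. (norm (N s))\<^sup>2 \<partial>M)"
      by (rule nn_integral_eq_integral) (use iN in auto)
    then show "ennreal (\<integral> s. (norm (N s))\<^sup>2 \<partial>M) \<le> ennreal (\<integral> s. \<omega> * (norm (r s))\<^sup>2 \<partial>M)"
      using n1 er by simp
    show "0 \<le> (\<integral> s. (norm (N s))\<^sup>2 \<partial>M)" by simp
    show "0 \<le> (\<integral> s. \<omega> * (norm (r s))\<^sup>2 \<partial>M)" using om0 by simp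
  qed
  have iKN: "integrable M (\<lambda>s. (norm (Ks (N s)))\<^sup>2)"
  proof (rule Bochner_Integration.integrable_bound[where f="\<lambda>s. (onorm K)\<^sup>2 * (norm (N s))\<^sup>2"])
    show "integrable M (\<lambda>s. (onorm K)\<^sup>2 * (norm (N s))\<^sup>2)" using iN by simp
    show "AE s in M. norm ((norm (Ks (N s)))\<^sup>2) \<le> norm ((onorm K)\<^sup>2 * (norm (N s))\<^sup>2)"
    proof (rule AE_I2)
      fix s
      have "(norm (Ks (N s)))\<^sup>2 \<le> (onorm K * norm (N s))\<^sup>2" using Ksbound by (intro power_mono) auto
      then show "norm ((norm (Ks (N s)))\<^sup>2) \<le> norm ((onorm K)\<^sup>2 * (norm (N s))\<^sup>2)"
        by (simp add: power_mult_distrib)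
    qed
  qed measurable
  have rKN: "(\<integral> s. (norm (Ks (N s)))\<^sup>2 \<partial>M) + (\<integral> s. \<zeta> * (norm (Ks (r s)))\<^sup>2 \<partial>M)
      \<le> (\<integral> s. \<omega>r * (norm (r s))\<^sup>2 \<partial>M)"
  proof (rule ennreal_ineq_real)
    have e1: "(\<integral>\<^sup>+ s. ennreal ((norm (Ks (N s)))\<^sup>2) \<partial>M) = ennreal (\<integral> s. (norm (Ks (N s)))\<^sup>2 \<partial>M)"
      by (rule nn_integral_eq_integral) (use iKN in auto)
    have e2: "(\<integral>\<^sup>+ s. ennreal (\<zeta> * (norm (Ks (r s)))\<^sup>2) \<partial>M) = ennreal (\<integral> s. \<zeta> * (norm (Ks (r s)))\<^sup>2 \<partial>M)"
      by (rule nn_integral_eq_integral) (use iKr ze0 in auto)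
    have "(\<integral>\<^sup>+ s. ennreal ((norm (Ks (N s)))\<^sup>2) \<partial>M) + (\<integral>\<^sup>+ s. ennreal (\<zeta> * (norm (Ks (r s)))\<^sup>2) \<partial>M)
        = (\<integral>\<^sup>+ s. nn_cond_exp M (Fl t) (\<lambda>s. ennreal ((norm (Ks (N s)))\<^sup>2)) s \<partial>M)
          + (\<integral>\<^sup>+ s. ennreal (\<zeta> * (norm (Ks (r s)))\<^sup>2) \<partial>M)"
    proof -
      have mKN: "(\<lambda>s. ennreal ((norm (Ks (N s)))\<^sup>2)) \<in> borel_measurable M" by measurable
      show ?thesis using nn_int[OF mKN] by simp
    qed
    also have "\<dots> = (\<integral>\<^sup>+ s. nn_cond_exp M (Fl t) (\<lambda>s. ennreal ((norm (Ks (N s)))\<^sup>2)) s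
          + ennreal (\<zeta> * (norm (Ks (r s)))\<^sup>2) \<partial>M)"
      by (rule nn_integral_add[symmetric]) measurable
    also have "\<dots> \<le> (\<integral>\<^sup>+ s. ennreal (\<omega>r * (norm (r s))\<^sup>2) \<partial>M)"
      by (rule nn_integral_mono_AE[OF var2'])
    finally have "ennreal (\<integral> s. (norm (Ks (N s)))\<^sup>2 \<partial>M) + ennreal (\<integral> s. \<zeta> * (norm (Ks (r s)))\<^sup>2 \<partial>M)
        \<le> ennreal (\<integral> s. \<omega>r * (norm (r s))\<^sup>2 \<partial>M)" unfolding e1 e2 er2 .
    moreover have "(\<integral> s. \<zeta> * (norm (Ks (r s)))\<^sup>2 \<partial>M) \<ge> 0" using ze0 by simp
    ultimately show "ennreal ((\<integral> s. (norm (Ks (N s)))\<^sup>2 \<partial>M) + (\<integral> s. \<zeta> * (norm (Ks (r s)))\<^sup>2 \<partial>M))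
        \<le> ennreal (\<integral> s. \<omega>r * (norm (r s))\<^sup>2 \<partial>M)" by (simp add: ennreal_plus)
    show "0 \<le> (\<integral> s. (norm (Ks (N s)))\<^sup>2 \<partial>M) + (\<integral> s. \<zeta> * (norm (Ks (r s)))\<^sup>2 \<partial>M)"
      using ze0 by simp
    show "0 \<le> (\<integral> s. \<omega>r * (norm (r s))\<^sup>2 \<partial>M)" using omr0 by simp
  qed
  have condR': "integrable M (R t) \<and> (\<forall>b\<in>Basis. AE s in M. real_cond_exp M (Fl t) (\<lambda>s. R t s \<bullet> b) s = r s \<bullet> b)"
    unfolding r_def Fl_def using condR[of t] unfolding cond_exp_vec_eq_def r_eq .
  have Rrn: "R t s = r s + N s" for s unfolding N_def by simp
  have cross_b: "integrable M (\<lambda>s. (V s \<bullet> b) * (N s \<bullet> b)) \<and> (\<integral> s. (V s \<bullet> b) * (N s \<bullet> b) \<partial>M) = 0"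
    if b: "b \<in> Basis" for b
  proof -
    have iVR: "integrable M (\<lambda>s. (V s \<bullet> b) * (R t s \<bullet> b))"
    proof (rule Bochner_Integration.integrable_bound[where f="\<lambda>s. (norm (V s))\<^sup>2 + (2 * (norm (r s))\<^sup>2 + 2 * (norm (N s))\<^sup>2)"])
      show "integrable M (\<lambda>s. (norm (V s))\<^sup>2 + (2 * (norm (r s))\<^sup>2 + 2 * (norm (N s))\<^sup>2))"
        using iV ir iN by simp
      show "AE s in M. norm ((V s \<bullet> b) * (R t s \<bullet> b)) \<le> norm ((norm (V s))\<^sup>2 + (2 * (norm (r s))\<^sup>2 + 2 * (norm (N s))\<^sup>2))"
      proof (rule AE_I2)
        fix s
        have "\<bar>(V s \<bullet> b) * (R t s \<bullet> b)\<bar> \<le> (norm (V s))\<^sup>2 + (norm (R t s))\<^sup>2" by (rule basis_prod_bound[OF b])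
        also have "(norm (R t s))\<^sup>2 \<le> 2 * (norm (r s))\<^sup>2 + 2 * (norm (N s))\<^sup>2" unfolding Rrn by (rule sq_add_bound)
        finally show "norm ((V s \<bullet> b) * (R t s \<bullet> b)) \<le> norm ((norm (V s))\<^sup>2 + (2 * (norm (r s))\<^sup>2 + 2 * (norm (N s))\<^sup>2))"
          by simp
      qed
    qed measurable
    have iVr: "integrable M (\<lambda>s. (V s \<bullet> b) * (r s \<bullet> b))"
    proof (rule Bochner_Integration.integrable_bound[where f="\<lambda>s. (norm (V s))\<^sup>2 + (norm (r s))\<^sup>2"])
      show "integrable M (\<lambda>s. (norm (V s))\<^sup>2 + (norm (r s))\<^sup>2)" using iV ir by simp
      show "AE s in M. norm ((V s \<bullet> b) * (r s \<bullet> b)) \<le> norm ((norm (V s))\<^sup>2 + (norm (r s))\<^sup>2)"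
        using basis_prod_bound[OF b] by simp
    qed measurable
    have VbF: "(\<lambda>s. V s \<bullet> b) \<in> borel_measurable (Fl t)" using VF by measurable
    have "(\<integral> s. (V s \<bullet> b) * real_cond_exp M (Fl t) (\<lambda>s. R t s \<bullet> b) s \<partial>M) = (\<integral> s. (V s \<bullet> b) * (R t s \<bullet> b) \<partial>M)"
      by (rule S.real_cond_exp_intg(2)[OF iVR VbF]) measurable
    moreover have "(\<integral> s. (V s \<bullet> b) * real_cond_exp M (Fl t) (\<lambda>s. R t s \<bullet> b) s \<partial>M) = (\<integral> s. (V s \<bullet> b) * (r s \<bullet> b) \<partial>M)"
    proof (rule integral_cong_AE)
      show "AE s in M. (V s \<bullet> b) * real_cond_exp M (Fl t) (\<lambda>s. R t s \<bullet> b) s = (V s \<bullet> b) * (r s \<bullet> b)"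
        using condR' b by auto
    qed measurable
    ultimately have eq: "(\<integral> s. (V s \<bullet> b) * (R t s \<bullet> b) \<partial>M) = (\<integral> s. (V s \<bullet> b) * (r s \<bullet> b) \<partial>M)" by simp
    have fe: "(\<lambda>s. (V s \<bullet> b) * (N s \<bullet> b)) = (\<lambda>s. (V s \<bullet> b) * (R t s \<bullet> b) - (V s \<bullet> b) * (r s \<bullet> b))"
      unfolding N_def by (simp add: inner_diff_left algebra_simps)
    show ?thesis unfolding fe using iVR iVr eq by simp
  qed
  have VNe: "(\<lambda>s. V s \<bullet> N s) = (\<lambda>s. \<Sum>b\<in>Basis. (V s \<bullet> b) * (N s \<bullet> b))"
    by (rule ext) (rule euclidean_inner)
  have iVN: "integrable M (\<lambda>s. V s \<bullet> N s)" unfolding VNe using cross_b by auto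
  have zVN: "(\<integral> s. V s \<bullet> N s \<partial>M) = 0"
  proof -
    have "(\<integral> s. (\<Sum>b\<in>Basis. (V s \<bullet> b) * (N s \<bullet> b)) \<partial>M) = (\<Sum>b\<in>Basis. \<integral> s. (V s \<bullet> b) * (N s \<bullet> b) \<partial>M)"
      by (rule Bochner_Integration.integral_sum) (use cross_b in auto)
    also have "\<dots> = 0" using cross_b by simp
    finally show ?thesis unfolding VNe .
  qed
  have pn: "Psi (x (Suc t) s) (u (Suc t) s)
      = D s + V s \<bullet> N s + \<gamma> * (norm (Ks (N s)))\<^sup>2 + C / (1 + \<omega>) * (norm (N s))\<^sup>2" for s
    unfolding D_def V_def N_def r_def by (rule psi_next)
  define a1 where "a1 = (\<integral> s. D s \<partial>M)"
  define a2 where "a2 = (\<integral> s. (norm (Ks (N s)))\<^sup>2 \<partial>M)"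
  define a3 where "a3 = (\<integral> s. (norm (N s))\<^sup>2 \<partial>M)"
  define b1 where "b1 = (\<integral> s. (norm (r s))\<^sup>2 \<partial>M)"
  define b2 where "b2 = (\<integral> s. (norm (Ks (r s)))\<^sup>2 \<partial>M)"
  have i1: "integrable M (\<lambda>s. D s + V s \<bullet> N s)" using iD iVN by simp
  have i2: "integrable M (\<lambda>s. D s + V s \<bullet> N s + \<gamma> * (norm (Ks (N s)))\<^sup>2)" using i1 iKN by simp
  have i3: "integrable M (\<lambda>s. D s + V s \<bullet> N s + \<gamma> * (norm (Ks (N s)))\<^sup>2 + C / (1 + \<omega>) * (norm (N s))\<^sup>2)"
    using i2 iN by simp
  have IP': "(\<integral> s. Psi (x (Suc t) s) (u (Suc t) s) \<partial>M) = a1 + \<gamma> * a2 + C / (1 + \<omega>) * a3"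
  proof -
    have "(\<integral> s. Psi (x (Suc t) s) (u (Suc t) s) \<partial>M)
        = (\<integral> s. D s + V s \<bullet> N s + \<gamma> * (norm (Ks (N s)))\<^sup>2 + C / (1 + \<omega>) * (norm (N s))\<^sup>2 \<partial>M)"
      unfolding pn ..
    also have "\<dots> = (\<integral> s. D s + V s \<bullet> N s + \<gamma> * (norm (Ks (N s)))\<^sup>2 \<partial>M) + (\<integral> s. C / (1 + \<omega>) * (norm (N s))\<^sup>2 \<partial>M)"
      by (rule Bochner_Integration.integral_add) (use i2 iN in auto)
    also have "(\<integral> s. D s + V s \<bullet> N s + \<gamma> * (norm (Ks (N s)))\<^sup>2 \<partial>M)
        = (\<integral> s. D s + V s \<bullet> N s \<partial>M) + (\<integral> s. \<gamma> * (norm (Ks (N s)))\<^sup>2 \<partial>M)"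
      by (rule Bochner_Integration.integral_add) (use i1 iKN in auto)
    also have "(\<integral> s. D s + V s \<bullet> N s \<partial>M) = a1 + (\<integral> s. V s \<bullet> N s \<partial>M)"
      unfolding a1_def by (rule Bochner_Integration.integral_add) (use iD iVN in auto)
    finally show ?thesis unfolding zVN a2_def a3_def by simp
  qed
  have rKN': "a2 + \<zeta> * b2 \<le> \<omega>r * b1" using rKN unfolding a2_def b1_def b2_def by simp
  have rN': "a3 \<le> \<omega> * b1" using rN unfolding a3_def b1_def by simp
  have iQ: "integrable M (\<lambda>s. D s + \<gamma> * (\<omega>r * (norm (r s))\<^sup>2 - \<zeta> * (norm (Ks (r s)))\<^sup>2) + C * \<omega> / (1 + \<omega>) * (norm (r s))\<^sup>2)"
    using iD ir iKr by simp
  have IQ: "(\<integral> s. D s + \<gamma> * (\<omega>r * (norm (r s))\<^sup>2 - \<zeta> * (norm (Ks (r s)))\<^sup>2) + C * \<omega> / (1 + \<omega>) * (norm (r s))\<^sup>2 \<partial>M)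
      = a1 + \<gamma> * (\<omega>r * b1 - \<zeta> * b2) + C * \<omega> / (1 + \<omega>) * b1"
    unfolding a1_def b1_def b2_def using iD ir iKr by (simp add: algebra_simps)
  have QP: "(\<integral> s. D s + \<gamma> * (\<omega>r * (norm (r s))\<^sup>2 - \<zeta> * (norm (Ks (r s)))\<^sup>2) + C * \<omega> / (1 + \<omega>) * (norm (r s))\<^sup>2 \<partial>M)
      \<le> (\<integral> s. cc * P s \<partial>M)"
  proof (rule integral_mono[OF iQ])
    show "integrable M (\<lambda>s. cc * P s)" using iP by simp
    fix s
    show "D s + \<gamma> * (\<omega>r * (norm (r s))\<^sup>2 - \<zeta> * (norm (Ks (r s)))\<^sup>2) + C * \<omega> / (1 + \<omega>) * (norm (r s))\<^sup>2 \<le> cc * P s"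
      using Qbound unfolding D_def r_def P_def D0_def AA_def BB_def by simp
  qed
  have main: "(\<integral> s. Psi (x (Suc t) s) (u (Suc t) s) \<partial>M) \<le> cc * (\<integral> s. P s \<partial>M)"
  proof -
    have "\<gamma> * a2 \<le> \<gamma> * (\<omega>r * b1 - \<zeta> * b2)" using rKN' gam by simp
    moreover have "C / (1 + \<omega>) * a3 \<le> C / (1 + \<omega>) * (\<omega> * b1)"
      using rN' Cpos om0 by (intro mult_left_mono) auto
    moreover have "C / (1 + \<omega>) * (\<omega> * b1) = C * \<omega> / (1 + \<omega>) * b1" by simp
    ultimately have "(\<integral> s. Psi (x (Suc t) s) (u (Suc t) s) \<partial>M) \<le> a1 + \<gamma> * (\<omega>r * b1 - \<zeta> * b2) + C * \<omega> / (1 + \<omega>) * b1"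
      unfolding IP' by linarith
    also have "\<dots> \<le> (\<integral> s. cc * P s \<partial>M)" using QP unfolding IQ .
    finally show ?thesis by simp
  qed
  have iP': "integrable M (\<lambda>s. Psi (x (Suc t) s) (u (Suc t) s))" unfolding pn using i3 .
  have "(\<integral>\<^sup>+ s. ennreal (Psi (x (Suc t) s) (u (Suc t) s)) \<partial>M) = ennreal (\<integral> s. Psi (x (Suc t) s) (u (Suc t) s) \<partial>M)"
    by (rule nn_integral_eq_integral[OF iP']) (simp add: Psi_nonneg)
  also have "\<dots> \<le> ennreal (cc * (\<integral> s. P s \<partial>M))" using main by (rule ennreal_leI)
  also have "\<dots> = ennreal cc * ennreal (\<integral> s. P s \<partial>M)"
  proof -
    have IPnn: "0 \<le> (\<integral> s. P s \<partial>M)" using Pnn by (intro integral_nonneg_AE) auto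
    show ?thesis by (rule ennreal_mult) (use cc_pos IPnn in auto)
  qed
  also have "ennreal (\<integral> s. P s \<partial>M) = (\<integral>\<^sup>+ s. ennreal (P s) \<partial>M)"
    by (rule nn_integral_eq_integral[OF iP, symmetric]) (simp add: Pnn)
  finally show ?thesis unfolding P_def .
qed

end

context rp begin

lemma exp_bound: "(\<integral>\<^sup>+ s. ennreal (Psi (x t s) (u t s)) \<partial>M) \<le> ennreal (cc ^ t * Psi x0 u0)"
proof (induction t)
  case 0
  interpret P: prob_space M by (rule prob)
  show ?case by (simp add: x0d u0d P.emeasure_space_1)
next
  case (Suc t)
  have fin: "(\<integral>\<^sup>+ s. ennreal (Psi (x t s) (u t s)) \<partial>M) < \<infinity>" using Suc.IH by (simp add: le_less_trans)
  have "(\<integral>\<^sup>+ s. ennreal (Psi (x (Suc t) s) (u (Suc t) s)) \<partial>M)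
        \<le> ennreal cc * (\<integral>\<^sup>+ s. ennreal (Psi (x t s) (u t s)) \<partial>M)" by (rule exp_step[OF fin])
  also have "\<dots> \<le> ennreal cc * ennreal (cc ^ t * Psi x0 u0)" by (rule mult_left_mono[OF Suc.IH]) simp
  also have "\<dots> = ennreal (cc ^ Suc t * Psi x0 u0)"
    using cc_pos Psi_nonneg[of x0 u0] by (simp add: ennreal_mult[symmetric] mult.assoc)
  finally show ?case .
qed

lemma Psi_AE: "AE s in M. (\<lambda>t. Psi (x t s) (u t s)) \<longlonglongrightarrow> 0"
proof -
  have [measurable]: "x t \<in> borel_measurable M" "u t \<in> borel_measurable M" for t using meas_M by auto
  have mP0: "(\<lambda>s. Psi (x t s) (u t s)) \<in> borel_measurable M" for t
    using mM[OF cont_Psi, of t] by simp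
  have mP: "(\<lambda>s. ennreal (Psi (x t s) (u t s))) \<in> borel_measurable M" for t
    using mP0[of t] by measurable
  have "(\<integral>\<^sup>+ s. (\<Sum>t. ennreal (Psi (x t s) (u t s))) \<partial>M) = (\<Sum>t. \<integral>\<^sup>+ s. ennreal (Psi (x t s) (u t s)) \<partial>M)"
    by (rule nn_integral_suminf) (use mP in auto)
  also have "\<dots> \<le> (\<Sum>t. ennreal (cc ^ t * Psi x0 u0))" by (intro suminf_le exp_bound) auto
  also have "\<dots> = ennreal (\<Sum>t. cc ^ t * Psi x0 u0)"
  proof (rule suminf_ennreal2)
    show "\<And>t. 0 \<le> cc ^ t * Psi x0 u0" using cc_pos Psi_nonneg by simp
    show "summable (\<lambda>t. cc ^ t * Psi x0 u0)"
      using cc_pos cc_lt1 by (intro summable_mult2 summable_geometric) simp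
  qed
  also have "\<dots> < \<infinity>" by simp
  finally have "(\<integral>\<^sup>+ s. (\<Sum>t. ennreal (Psi (x t s) (u t s))) \<partial>M) \<noteq> \<infinity>" by simp
  then have "AE s in M. (\<Sum>t. ennreal (Psi (x t s) (u t s))) \<noteq> \<infinity>"
    by (intro nn_integral_PInf_AE) (use mP in measurable)
  then show ?thesis
  proof (rule AE_mp, intro AE_I2 impI)
    fix s assume "(\<Sum>t. ennreal (Psi (x t s) (u t s))) \<noteq> \<infinity>"
    then have "summable (\<lambda>t. Psi (x t s) (u t s))"
      using summable_suminf_not_top[of "\<lambda>t. Psi (x t s) (u t s)"] Psi_nonneg by auto
    then show "(\<lambda>t. Psi (x t s) (u t s)) \<longlonglongrightarrow> 0" by (rule summable_LIMSEQ_zero)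
  qed
qed

lemma conv_from_sq:
  fixes v :: "nat \<Rightarrow> 'a::real_normed_vector"
  assumes le: "\<And>t. (norm (v t - l))\<^sup>2 \<le> k * p t" and p: "p \<longlonglongrightarrow> 0" and k: "k \<ge> 0"
  shows "v \<longlonglongrightarrow> l"
proof -
  have "(\<lambda>t. sqrt (k * p t)) \<longlonglongrightarrow> sqrt (k * 0)" by (intro tendsto_intros p)
  then have s0: "(\<lambda>t. sqrt (k * p t)) \<longlonglongrightarrow> 0" by simp
  have "(\<lambda>t. norm (v t - l)) \<longlonglongrightarrow> 0"
  proof (rule tendsto_sandwich[OF _ _ tendsto_const s0])
    show "\<forall>\<^sub>F t in sequentially. 0 \<le> norm (v t - l)" by simp
    show "\<forall>\<^sub>F t in sequentially. norm (v t - l) \<le> sqrt (k * p t)"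
    proof (intro always_eventually allI)
      fix t
      have "sqrt ((norm (v t - l))\<^sup>2) \<le> sqrt (k * p t)" using le[of t] by (rule real_sqrt_le_mono)
      then show "norm (v t - l) \<le> sqrt (k * p t)" by simp
    qed
  qed
  then show ?thesis using LIM_zero_iff tendsto_norm_zero_iff by blast
qed

lemma conv_AE: "AE s in M. (\<lambda>t. x t s) \<longlonglongrightarrow> xs \<and> (\<lambda>t. xhat t s) \<longlonglongrightarrow> xs \<and> (\<lambda>t. u t s) \<longlonglongrightarrow> us"
  using Psi_AE
proof (rule AE_mp, intro AE_I2 impI)
  fix s assume p: "(\<lambda>t. Psi (x t s) (u t s)) \<longlonglongrightarrow> 0"
  have xc: "(\<lambda>t. x t s) \<longlonglongrightarrow> xs"
    by (rule conv_from_sq[OF e_le p]) (use gam in simp)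
  have uc: "(\<lambda>t. u t s) \<longlonglongrightarrow> us"
    by (rule conv_from_sq[OF d_le p]) (use om0 Cpos in simp)
  have "(\<lambda>t. x (Suc t) s + (\<gamma> * (1 + \<omega>)) *\<^sub>R (Ks (u (Suc t) s) - Ks (u t s)))
      \<longlonglongrightarrow> xs + (\<gamma> * (1 + \<omega>)) *\<^sub>R (Ks us - Ks us)"
  proof (intro tendsto_intros)
    show "(\<lambda>t. x (Suc t) s) \<longlonglongrightarrow> xs" using xc by (rule LIMSEQ_Suc)
    have cKs: "isCont Ks v" for v using linear_continuous_at[OF blKs] .
    show "(\<lambda>t. Ks (u (Suc t) s)) \<longlonglongrightarrow> Ks us"
      by (rule isCont_tendsto_compose[OF cKs LIMSEQ_Suc[OF uc]])
    show "(\<lambda>t. Ks (u t s)) \<longlonglongrightarrow> Ks us" by (rule isCont_tendsto_compose[OF cKs uc])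
  qed
  moreover have "x (Suc t) s + (\<gamma> * (1 + \<omega>)) *\<^sub>R (Ks (u (Suc t) s) - Ks (u t s)) = xhat t s" for t
    by (simp add: xd)
  ultimately have "(\<lambda>t. xhat t s) \<longlonglongrightarrow> xs" by simp
  then show "(\<lambda>t. x t s) \<longlonglongrightarrow> xs \<and> (\<lambda>t. xhat t s) \<longlonglongrightarrow> xs \<and> (\<lambda>t. u t s) \<longlonglongrightarrow> us"
    using xc uc by simp
qed

end


theorem theorem1:
  fixes M :: "'s measure"
    and K :: "'x::euclidean_space \<Rightarrow> 'u::euclidean_space"
    and f :: "'x \<Rightarrow> real" and gradf :: "'x \<Rightarrow> 'x"
    and g :: "'x \<Rightarrow> ereal" and h :: "'u \<Rightarrow> ereal"
    and L\<^sub>f \<mu>\<^sub>f \<mu>\<^sub>g \<mu>\<^sub>h \<gamma> \<tau> \<omega> \<omega>\<^sub>r\<^sub>a\<^sub>n \<zeta> :: real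
    and x0 :: 'x and u0 :: 'u
    and x xhat :: "nat \<Rightarrow> 's \<Rightarrow> 'x" and u R :: "nat \<Rightarrow> 's \<Rightarrow> 'u"
    and xs :: 'x and us :: 'u
  assumes "prob_space M"
    and "linear K" and "K \<noteq> (\<lambda>_. 0)"
    and "convex_on UNIV f"
    and "\<And>y. (f has_derivative (\<lambda>d. gradf y \<bullet> d)) (at y)"
    and "L\<^sub>f > 0" and "\<And>y z. norm (gradf y - gradf z) \<le> L\<^sub>f * norm (y - z)"
    and "proper_fun g" "closed_fun g" "convex_fun g"
    and "proper_fun h" "closed_fun h" "convex_fun h"
    and "\<mu>\<^sub>f \<ge> 0" "\<mu>\<^sub>g \<ge> 0" "\<mu>\<^sub>h \<ge> 0"
    and "convex_on UNIV (\<lambda>y. f y - \<mu>\<^sub>f / 2 * (norm y)\<^sup>2)"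
    and "strongly_convex_fun \<mu>\<^sub>g g"
    and "strongly_convex_fun \<mu>\<^sub>h (conjugate h)"
    \<comment> \<open>standing assumption: existence of a primal-dual (KKT) pair\<close>
    and "\<exists>xa ua. - gradf xa - adjoint K ua \<in> subdiff g xa \<and> K xa \<in> subdiff (conjugate h) ua"
    \<comment> \<open>xs solves the primal problem, us solves the dual problem\<close>
    and "\<And>y. ereal (f xs) + g xs + h (K xs) \<le> ereal (f y) + g y + h (K y)"
    and "\<And>v. conjugate (\<lambda>y. ereal (f y) + g y) (- adjoint K us) + conjugate h us
             \<le> conjugate (\<lambda>y. ereal (f y) + g y) (- adjoint K v) + conjugate h v"
    and "\<omega> \<ge> 0" "\<omega>\<^sub>r\<^sub>a\<^sub>n \<ge> 0" "0 \<le> \<zeta>" "\<zeta> \<le> 1"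
    and "\<mu>\<^sub>f > 0 \<or> \<mu>\<^sub>g > 0" and "\<mu>\<^sub>h > 0"
    and "0 < \<gamma>" "\<gamma> < 2 / L\<^sub>f" "\<tau> > 0"
    and "\<gamma> * \<tau> * ((1 - \<zeta>) * (onorm K)\<^sup>2 + \<omega>\<^sub>r\<^sub>a\<^sub>n) \<le> 1"
    \<comment> \<open>the iteration RandProx (with v^t = K^* u^t)\<close>
    and "x 0 = (\<lambda>s. x0)" "u 0 = (\<lambda>s. u0)"
    and "\<And>t s. xhat t s = prox \<gamma> g (x t s - \<gamma> *\<^sub>R gradf (x t s) - \<gamma> *\<^sub>R adjoint K (u t s))"
    and "\<And>t s. u (Suc t) s = u t s + (1 / (1 + \<omega>)) *\<^sub>R R t s"
    and "\<And>t s. x (Suc t) s = xhat t s - (\<gamma> * (1 + \<omega>)) *\<^sub>R (adjoint K (u (Suc t) s) - adjoint K (u t s))"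
    and "\<And>t. R t \<in> borel_measurable M"
    \<comment> \<open>properties of the stochastic estimates R t = R^t(r^t), conditioned on F_t\<close>
    and "\<And>t. cond_exp_vec_eq M (gen_filtration M (\<lambda>i s. (x i s, u i s)) t) (R t)
               (\<lambda>s. prox \<tau> (conjugate h) (u t s + \<tau> *\<^sub>R K (xhat t s)) - u t s)"
    and "\<And>t. AE s in M.
           nn_cond_exp M (gen_filtration M (\<lambda>i s. (x i s, u i s)) t)
             (\<lambda>s. ennreal ((norm (R t s - (prox \<tau> (conjugate h) (u t s + \<tau> *\<^sub>R K (xhat t s)) - u t s)))\<^sup>2)) s
           \<le> ennreal (\<omega> * (norm (prox \<tau> (conjugate h) (u t s + \<tau> *\<^sub>R K (xhat t s)) - u t s))\<^sup>2)"
    and "\<And>t. AE s in M.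
           nn_cond_exp M (gen_filtration M (\<lambda>i s. (x i s, u i s)) t)
             (\<lambda>s. ennreal ((norm (adjoint K (R t s - (prox \<tau> (conjugate h) (u t s + \<tau> *\<^sub>R K (xhat t s)) - u t s))))\<^sup>2)) s
           + ennreal (\<zeta> * (norm (adjoint K (prox \<tau> (conjugate h) (u t s + \<tau> *\<^sub>R K (xhat t s)) - u t s)))\<^sup>2)
           \<le> ennreal (\<omega>\<^sub>r\<^sub>a\<^sub>n * (norm (prox \<tau> (conjugate h) (u t s + \<tau> *\<^sub>R K (xhat t s)) - u t s))\<^sup>2)"
  defines "\<Psi> \<equiv> \<lambda>t s. (1 / \<gamma>) * (norm (x t s - xs))\<^sup>2 + (1 + \<omega>) * (1 / \<tau> + 2 * \<mu>\<^sub>h) * (norm (u t s - us))\<^sup>2"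
    and "\<Psi>0 \<equiv> (1 / \<gamma>) * (norm (x0 - xs))\<^sup>2 + (1 + \<omega>) * (1 / \<tau> + 2 * \<mu>\<^sub>h) * (norm (u0 - us))\<^sup>2"
    and "c \<equiv> max (max ((1 - \<gamma> * \<mu>\<^sub>f)\<^sup>2 / (1 + \<gamma> * \<mu>\<^sub>g)) ((\<gamma> * L\<^sub>f - 1)\<^sup>2 / (1 + \<gamma> * \<mu>\<^sub>g)))
                 (1 - 2 * \<tau> * \<mu>\<^sub>h / ((1 + \<omega>) * (1 + 2 * \<tau> * \<mu>\<^sub>h)))"
  shows "c < 1
    \<and> (\<forall>t. (\<integral>\<^sup>+ s. ennreal (\<Psi> t s) \<partial>M) \<le> ennreal (c ^ t * \<Psi>0))
    \<and> (AE s in M. (\<lambda>t. x t s) \<longlonglongrightarrow> xs \<and> (\<lambda>t. xhat t s) \<longlonglongrightarrow> xs \<and> (\<lambda>t. u t s) \<longlonglongrightarrow> us)"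
proof -
  interpret R: rp M K f gradf g h "L\<^sub>f" "\<mu>\<^sub>f" "\<mu>\<^sub>g" "\<mu>\<^sub>h" \<gamma> \<tau> \<omega> "\<omega>\<^sub>r\<^sub>a\<^sub>n" \<zeta> x0 u0 x xhat u R xs us
    by (rule rp.intro) (rule assms)+
  have cc: "c = R.cc" unfolding c_def R.cc_def ..
  have ps: "\<Psi> t s = R.Psi (x t s) (u t s)" for t s unfolding \<Psi>_def R.Psi_def R.C_def by simp
  have p0: "\<Psi>0 = R.Psi x0 u0" unfolding \<Psi>0_def R.Psi_def R.C_def by simp
  show ?thesis unfolding cc ps p0 using R.cc_lt1 R.exp_bound R.conv_AE by blast
qed

end
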